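(* Let $(\mathfrak H_{-,+},\mathfrak H,\Gamma_0,\Gamma_1)$ be an m-boundary tuple for $M^*$, let $V$ be a fixed linear homeomorphism from $\mathfrak H$ onto $\mathfrak H_{-,+}$, and let $V^\#:\mathfrak H_{+,-}\to\mathfrak H$ be its $\mathfrak H$-pairing-adjoint. (i) An extension $\widehat M$ of $M$ is an m-dissipative operator in $\mathfrak X^{2,S}$ if and only if it is the restriction of $M^*$ to the set of $\psi\in\mathrm{dom}M^*$ satisfying $$(K+I_{\mathfrak H})V^{-1}\Gamma_0\psi+\mathrm i(K-I_{\mathfrak H})V^\#\Gamma_1\psi=0$$ for some contraction $K$ on $\mathfrak H$. (ii) This establishes a one-to-one correspondence between contractions $K$ on $\mathfrak H$ and m-dissipative extensions $\widehat M$ of $M$; moreover $\widehat M$ is selfadjoint if and only if $K$ is unitary.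
   Context: $A$ is a closed densely defined symmetric operator in a Hilbert space $\mathfrak X$; $S$ is a bounded uniformly positive selfadjoint operator in $\mathfrak X^2=\mathfrak X\oplus\mathfrak X$; $\mathfrak X^{2,S}$ is $\mathfrak X^2$ with inner product $(S\cdot|\cdot)_{\mathfrak X^2}$. $M\{\psi_1,\psi_2\}=S^{-1}\{\mathrm iA\psi_2,-\mathrm iA\psi_1\}$ on $(\mathrm{dom}A)^2$; it is closed symmetric in $\mathfrak X^{2,S}$ with adjoint $M^*\{\psi_1,\psi_2\}=S^{-1}\{\mathrm iA^*\psi_2,-\mathrm iA^*\psi_1\}$ on $(\mathrm{dom}A^* )^2$. Mixed-order duality: given a Hilbert space $\mathfrak H$, a Hilbert space $\mathfrak H_{-,+}$ is an m-order space associated with $\mathfrak H$ if $\widetilde{\mathfrak H}_{-,+}:=\mathfrak H\cap\mathfrak H_{-,+}$ is dense in both and the quadratic form $\|h\|^2_{\mathfrak H_{-,+}}$, $h\in\widetilde{\mathfrak H}_{-,+}$, is closed in $\mathfrak H$. Two m-order spaces $\mathfrak H_{-,+},\mathfrak H_{+,-}$ are dual to each other w.r.t. $\mathfrak H$ if $\|h\|_{\mathfrak H_{\pm,\mp}}=\sup_{0\ne g\in\widetilde{\mathfrak H}_{\mp,\pm}}|(g|h)_{\mathfrak H}|/\|g\|_{\mathfrak H_{\mp,\pm}}$ for $h\in\widetilde{\mathfrak H}_{\pm,\mp}$. Then $(\cdot|\cdot)_{\mathfrak H}$ on $\widetilde{\mathfrak H}_{-,+}\times\widetilde{\mathfrak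 H}_{+,-}$ extends uniquely to a bounded sesquilinear form $\langle\cdot|\cdot\rangle_{\mathfrak H}$ on $\mathfrak H_{-,+}\times\mathfrak H_{+,-}$ (the $\mathfrak H$-pairing), and $\langle h_{+,-}|h_{-,+}\rangle_{\mathfrak H}:=\overline{\langle h_{-,+}|h_{+,-}\rangle_{\mathfrak H}}$; on $\mathfrak H\times\mathfrak H$ it denotes $(\cdot|\cdot)_{\mathfrak H}$. An m-boundary tuple for $M^*$ is $(\mathfrak H_{-,+},\mathfrak H,\Gamma_0,\Gamma_1)$ with $\mathfrak H_{\mp,\pm}$ dual m-order spaces w.r.t. $\mathfrak H$ and linear maps $\Gamma_0:\mathrm{dom}M^*\to\mathfrak H_{-,+}$, $\Gamma_1:\mathrm{dom}M^*\to\mathfrak H_{+,-}$ such that (M1) $f\mapsto\{\Gamma_0f,\Gamma_1f\}$ maps $\mathrm{dom}M^*$ onto $\mathfrak H_{-,+}\oplus\mathfrak H_{+,-}$, and (M2) $(M^*f|g)-(f|M^*g)=\langle\Gamma_1f|\Gamma_0g\rangle_{\mathfrak H}-\langle\Gamma_0f|\Gamma_1g\rangle_{\mathfrak H}$ for all $f,g\in\mathrm{dom}M^*$ (inner products in $\mathfrak X^{2,S}$). The $\mathfrak H$-pairing-adjoint of $V$ is the operator $V^\#:\mathfrak H_{+,-}\to\mathfrak H$ with $\langle Vf|g\rangle_{\mathfrak H}=(f|V^\#g)_{\mathfrak H}$ for all $f\in\mathfrak H$, $g\in\mathfrak H_{+,-}$. m-dissipative: upper half-plane in resolvent set, $\|(T-\lambda)^{-1}\|\le(\mathrm{Im}\lambda)^{-1}$;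 a contraction on $\mathfrak H$ is an everywhere defined operator of norm $\le1$. *)

theory Defs
  imports "HOL-Analysis.Analysis"
begin

class cvec = ab_group_add +
  fixes scaleC :: "complex \<Rightarrow> 'a \<Rightarrow> 'a" (infixr \<open>*\<^sub>C\<close> 75)
  assumes scaleC_add_right: "a *\<^sub>C (x + y) = a *\<^sub>C x + a *\<^sub>C y"
    and scaleC_add_left: "(a + b) *\<^sub>C x = a *\<^sub>C x + b *\<^sub>C x"
    and scaleC_scaleC: "a *\<^sub>C (b *\<^sub>C x) = (a * b) *\<^sub>C x"
    and scaleC_one: "1 *\<^sub>C x = x"

instantiation prod :: (cvec, cvec) cvec
begin
definition scaleC_prod_def: "c *\<^sub>C p = (c *\<^sub>C fst p, c *\<^sub>C snd p)"
instance
  by standard (auto simp: scaleC_prod_def scaleC_add_right scaleC_add_left scaleC_scaleC scaleC_one)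
end

definition subspaceC :: "'a::cvec set \<Rightarrow> bool" where
  "subspaceC D \<longleftrightarrow> 0 \<in> D \<and> (\<forall>x\<in>D. \<forall>y\<in>D. x + y \<in> D) \<and> (\<forall>c. \<forall>x\<in>D. c *\<^sub>C x \<in> D)"

text \<open>Linear map defined on a subspace \<open>D\<close> (values outside \<open>D\<close> are irrelevant).\<close>
definition linear_on :: "'a::cvec set \<Rightarrow> ('a \<Rightarrow> 'b::cvec) \<Rightarrow> bool" where
  "linear_on D f \<longleftrightarrow> subspaceC D \<and>
     (\<forall>x\<in>D. \<forall>y\<in>D. f (x + y) = f x + f y) \<and> (\<forall>c. \<forall>x\<in>D. f (c *\<^sub>C x) = c *\<^sub>C f x)"

text \<open>Inner products are linear in the first and conjugate linear in the second argument.\<close>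
definition inner_product_on :: "'a::cvec set \<Rightarrow> ('a \<Rightarrow> 'a \<Rightarrow> complex) \<Rightarrow> bool" where
  "inner_product_on H ip \<longleftrightarrow> subspaceC H \<and>
     (\<forall>x\<in>H. \<forall>y\<in>H. \<forall>z\<in>H. ip (x + y) z = ip x z + ip y z) \<and>
     (\<forall>c. \<forall>x\<in>H. \<forall>y\<in>H. ip (c *\<^sub>C x) y = c * ip x y) \<and>
     (\<forall>x\<in>H. \<forall>y\<in>H. ip y x = cnj (ip x y)) \<and>
     (\<forall>x\<in>H. Re (ip x x) \<ge> 0 \<and> Im (ip x x) = 0) \<and>
     (\<forall>x\<in>H. ip x x = 0 \<longrightarrow> x = 0)"

definition nrm :: "('a \<Rightarrow> 'a \<Rightarrow> complex) \<Rightarrow> 'a \<Rightarrow> real" where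
  "nrm ip x = sqrt (Re (ip x x))"

definition conv :: "('a::cvec \<Rightarrow> 'a \<Rightarrow> complex) \<Rightarrow> (nat \<Rightarrow> 'a) \<Rightarrow> 'a \<Rightarrow> bool" where
  "conv ip xs x \<longleftrightarrow> (\<lambda>n. nrm ip (xs n - x)) \<longlonglongrightarrow> 0"

definition cauchy :: "('a::cvec \<Rightarrow> 'a \<Rightarrow> complex) \<Rightarrow> (nat \<Rightarrow> 'a) \<Rightarrow> bool" where
  "cauchy ip xs \<longleftrightarrow> (\<forall>e>0. \<exists>N. \<forall>m\<ge>N. \<forall>n\<ge>N. nrm ip (xs m - xs n) < e)"

definition hilbert_on :: "'a::cvec set \<Rightarrow> ('a \<Rightarrow> 'a \<Rightarrow> complex) \<Rightarrow> bool" where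
  "hilbert_on H ip \<longleftrightarrow> inner_product_on H ip \<and>
     (\<forall>xs. (\<forall>n. xs n \<in> H) \<and> cauchy ip xs \<longrightarrow> (\<exists>x\<in>H. conv ip xs x))"

definition dense_in :: "('a::cvec \<Rightarrow> 'a \<Rightarrow> complex) \<Rightarrow> 'a set \<Rightarrow> 'a set \<Rightarrow> bool" where
  "dense_in ip D H \<longleftrightarrow> D \<subseteq> H \<and> (\<forall>x\<in>H. \<forall>e>0. \<exists>d\<in>D. nrm ip (x - d) < e)"

definition bounded_on :: "('a::cvec \<Rightarrow> 'a \<Rightarrow> complex) \<Rightarrow> ('b::cvec \<Rightarrow> 'b \<Rightarrow> complex) \<Rightarrow> 'a set \<Rightarrow> ('a \<Rightarrow> 'b) \<Rightarrow> bool" where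
  "bounded_on ip1 ip2 H f \<longleftrightarrow> (\<exists>C. \<forall>x\<in>H. nrm ip2 (f x) \<le> C * nrm ip1 x)"

section \<open>Unbounded operators in a Hilbert space \<open>(UNIV, ip)\<close>\<close>

text \<open>An operator is a pair (domain \<open>D\<close>, action \<open>T\<close> on \<open>D\<close>).\<close>

definition operator :: "'a::cvec set \<Rightarrow> ('a \<Rightarrow> 'a) \<Rightarrow> bool" where
  "operator D T \<longleftrightarrow> linear_on D T"

definition closed_op :: "('a::cvec \<Rightarrow> 'a \<Rightarrow> complex) \<Rightarrow> 'a set \<Rightarrow> ('a \<Rightarrow> 'a) \<Rightarrow> bool" where
  "closed_op ip D T \<longleftrightarrow> (\<forall>xs x y. (\<forall>n. xs n \<in> D) \<and> conv ip xs x \<and> conv ip (\<lambda>n. T (xs n)) y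
       \<longrightarrow> x \<in> D \<and> T x = y)"

definition symmetric_op :: "('a::cvec \<Rightarrow> 'a \<Rightarrow> complex) \<Rightarrow> 'a set \<Rightarrow> ('a \<Rightarrow> 'a) \<Rightarrow> bool" where
  "symmetric_op ip D T \<longleftrightarrow> dense_in ip D UNIV \<and> (\<forall>f\<in>D. \<forall>g\<in>D. ip (T f) g = ip f (T g))"

definition adj_dom :: "('a::cvec \<Rightarrow> 'a \<Rightarrow> complex) \<Rightarrow> 'a set \<Rightarrow> ('a \<Rightarrow> 'a) \<Rightarrow> 'a set" where
  "adj_dom ip D T = {g. \<exists>h. \<forall>f\<in>D. ip (T f) g = ip f h}"

definition adj :: "('a::cvec \<Rightarrow> 'a \<Rightarrow> complex) \<Rightarrow> 'a set \<Rightarrow> ('a \<Rightarrow> 'a) \<Rightarrow> 'a \<Rightarrow> 'a" where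
  "adj ip D T g = (SOME h. \<forall>f\<in>D. ip (T f) g = ip f h)"

text \<open>Selfadjoint: densely defined, \<open>T \<subseteq> T*\<close> and \<open>dom T* = dom T\<close>.\<close>
definition selfadjoint_op :: "('a::cvec \<Rightarrow> 'a \<Rightarrow> complex) \<Rightarrow> 'a set \<Rightarrow> ('a \<Rightarrow> 'a) \<Rightarrow> bool" where
  "selfadjoint_op ip D T \<longleftrightarrow> symmetric_op ip D T \<and> adj_dom ip D T = D"

definition in_resolvent :: "('a::cvec \<Rightarrow> 'a \<Rightarrow> complex) \<Rightarrow> 'a set \<Rightarrow> ('a \<Rightarrow> 'a) \<Rightarrow> complex \<Rightarrow> bool" where
  "in_resolvent ip D T l \<longleftrightarrow> bij_betw (\<lambda>x. T x - l *\<^sub>C x) D UNIV \<and>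
     (\<exists>C. \<forall>x\<in>D. nrm ip x \<le> C * nrm ip (T x - l *\<^sub>C x))"

definition m_dissipative :: "('a::cvec \<Rightarrow> 'a \<Rightarrow> complex) \<Rightarrow> 'a set \<Rightarrow> ('a \<Rightarrow> 'a) \<Rightarrow> bool" where
  "m_dissipative ip D T \<longleftrightarrow> operator D T \<and>
     (\<forall>l. Im l > 0 \<longrightarrow> in_resolvent ip D T l \<and>
        (\<forall>x\<in>D. nrm ip x \<le> nrm ip (T x - l *\<^sub>C x) / Im l))"

definition extends_op :: "'a set \<Rightarrow> ('a \<Rightarrow> 'a) \<Rightarrow> 'a set \<Rightarrow> ('a::cvec \<Rightarrow> 'a) \<Rightarrow> bool" where
  "extends_op D0 T0 D T \<longleftrightarrow> operator D T \<and> D0 \<subseteq> D \<and> (\<forall>x\<in>D0. T x = T0 x)"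

section \<open>The operators \<open>M\<close>, \<open>M*\<close> in \<open>\<XX>\<^sup>2\<close>\<close>

definition ip2 :: "('x::cvec \<Rightarrow> 'x \<Rightarrow> complex) \<Rightarrow> 'x \<times> 'x \<Rightarrow> 'x \<times> 'x \<Rightarrow> complex" where
  "ip2 ip f g = ip (fst f) (fst g) + ip (snd f) (snd g)"

definition ipS :: "('x::cvec \<Rightarrow> 'x \<Rightarrow> complex) \<Rightarrow> ('x \<times> 'x \<Rightarrow> 'x \<times> 'x) \<Rightarrow> 'x \<times> 'x \<Rightarrow> 'x \<times> 'x \<Rightarrow> complex" where
  "ipS ip S f g = ip2 ip (S f) g"

definition bounded_unif_pos_sa :: "('x::cvec \<Rightarrow> 'x \<Rightarrow> complex) \<Rightarrow> ('x \<times> 'x \<Rightarrow> 'x \<times> 'x) \<Rightarrow> bool" where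
  "bounded_unif_pos_sa ip S \<longleftrightarrow> linear_on UNIV S \<and> bounded_on (ip2 ip) (ip2 ip) UNIV S \<and>
     (\<forall>f g. ip2 ip (S f) g = ip2 ip f (S g)) \<and>
     (\<exists>c>0. \<forall>f. Re (ip2 ip (S f) f) \<ge> c * (nrm (ip2 ip) f)\<^sup>2)"

definition M_dom :: "'x set \<Rightarrow> ('x \<times> 'x) set" where
  "M_dom DA = DA \<times> DA"

definition M_op :: "('x \<times> 'x \<Rightarrow> 'x \<times> 'x) \<Rightarrow> ('x::cvec \<Rightarrow> 'x) \<Rightarrow> 'x \<times> 'x \<Rightarrow> 'x \<times> 'x" where
  "M_op S A p = inv S (\<i> *\<^sub>C A (snd p), - (\<i> *\<^sub>C A (fst p)))"

definition Mstar_dom :: "('x::cvec \<Rightarrow> 'x \<Rightarrow> complex) \<Rightarrow> 'x set \<Rightarrow> ('x \<Rightarrow> 'x) \<Rightarrow> ('x \<times> 'x) set" where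
  "Mstar_dom ip DA A = adj_dom ip DA A \<times> adj_dom ip DA A"

definition Mstar_op :: "('x::cvec \<Rightarrow> 'x \<Rightarrow> complex) \<Rightarrow> ('x \<times> 'x \<Rightarrow> 'x \<times> 'x) \<Rightarrow> 'x set \<Rightarrow> ('x \<Rightarrow> 'x) \<Rightarrow> 'x \<times> 'x \<Rightarrow> 'x \<times> 'x" where
  "Mstar_op ip S DA A p = M_op S (adj ip DA A) p"

section \<open>Mixed-order spaces and m-boundary tuples\<close>

text \<open>All spaces \<open>\<HH>\<close>, \<open>\<HH>\<^sub>-\<^sub>,\<^sub>+\<close>, \<open>\<HH>\<^sub>+\<^sub>,\<^sub>-\<close> are subspaces of one ambient complex vector
  space \<open>'h\<close>, each with its own Hilbert inner product, so that intersections make sense.\<close>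

definition m_order_space :: "'h::cvec set \<Rightarrow> ('h \<Rightarrow> 'h \<Rightarrow> complex) \<Rightarrow> 'h set \<Rightarrow> ('h \<Rightarrow> 'h \<Rightarrow> complex) \<Rightarrow> bool" where
  "m_order_space H ipH Hm ipm \<longleftrightarrow> hilbert_on H ipH \<and> hilbert_on Hm ipm \<and>
     dense_in ipH (H \<inter> Hm) H \<and> dense_in ipm (H \<inter> Hm) Hm \<and>
     \<comment> \<open>the form \<open>h \<mapsto> \<parallel>h\<parallel>\<^sup>2\<close> on \<open>H \<inter> Hm\<close> is closed in \<open>H\<close>\<close>
     (\<forall>hs h. (\<forall>n. hs n \<in> H \<inter> Hm) \<and> h \<in> H \<and> conv ipH hs h \<and> cauchy ipm hs
        \<longrightarrow> h \<in> H \<inter> Hm \<and> conv ipm hs h)"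

text \<open>\<open>\<parallel>h\<parallel>\<^sub>2 = sup {|(g|h)| / \<parallel>g\<parallel>\<^sub>1 : 0 \<noteq> g \<in> H \<inter> H\<^sub>1}\<close>, written as least upper bound.\<close>
definition dual_norm_formula :: "'h::cvec set \<Rightarrow> ('h \<Rightarrow> 'h \<Rightarrow> complex) \<Rightarrow> 'h set \<Rightarrow> ('h \<Rightarrow> 'h \<Rightarrow> complex) \<Rightarrow> 'h set \<Rightarrow> ('h \<Rightarrow> 'h \<Rightarrow> complex) \<Rightarrow> bool" where
  "dual_norm_formula H ipH H1 ip1 H2 ip2' \<longleftrightarrow>
     (\<forall>h\<in>H \<inter> H2. (\<forall>g\<in>H \<inter> H1. cmod (ipH g h) \<le> nrm ip2' h * nrm ip1 g) \<and>
        (\<forall>c\<ge>0. (\<forall>g\<in>H \<inter> H1. cmod (ipH g h) \<le> c * nrm ip1 g) \<longrightarrow> nrm ip2' h \<le> c))"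

definition dual_m_order :: "'h::cvec set \<Rightarrow> ('h \<Rightarrow> 'h \<Rightarrow> complex) \<Rightarrow> 'h set \<Rightarrow> ('h \<Rightarrow> 'h \<Rightarrow> complex) \<Rightarrow> 'h set \<Rightarrow> ('h \<Rightarrow> 'h \<Rightarrow> complex) \<Rightarrow> bool" where
  "dual_m_order H ipH Hm ipm Hp ipp \<longleftrightarrow> m_order_space H ipH Hm ipm \<and> m_order_space H ipH Hp ipp \<and>
     dual_norm_formula H ipH Hm ipm Hp ipp \<and> dual_norm_formula H ipH Hp ipp Hm ipm"

text \<open>\<open>pair\<close> is the \<open>\<HH>\<close>-pairing on \<open>Hm \<times> Hp\<close>: the (unique) bounded sesquilinear extension of
  \<open>(\<cdot>|\<cdot>)\<^sub>\<HH>\<close> from \<open>(H \<inter> Hm) \<times> (H \<inter> Hp)\<close>.\<close>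
definition is_pairing :: "'h::cvec set \<Rightarrow> ('h \<Rightarrow> 'h \<Rightarrow> complex) \<Rightarrow> 'h set \<Rightarrow> ('h \<Rightarrow> 'h \<Rightarrow> complex) \<Rightarrow> 'h set \<Rightarrow> ('h \<Rightarrow> 'h \<Rightarrow> complex) \<Rightarrow> ('h \<Rightarrow> 'h \<Rightarrow> complex) \<Rightarrow> bool" where
  "is_pairing H ipH Hm ipm Hp ipp pair \<longleftrightarrow>
     (\<forall>a\<in>Hm. \<forall>a'\<in>Hm. \<forall>b\<in>Hp. pair (a + a') b = pair a b + pair a' b) \<and>
     (\<forall>c. \<forall>a\<in>Hm. \<forall>b\<in>Hp. pair (c *\<^sub>C a) b = c * pair a b) \<and>
     (\<forall>a\<in>Hm. \<forall>b\<in>Hp. \<forall>b'\<in>Hp. pair a (b + b') = pair a b + pair a b') \<and>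
     (\<forall>c. \<forall>a\<in>Hm. \<forall>b\<in>Hp. pair a (c *\<^sub>C b) = cnj c * pair a b) \<and>
     (\<exists>C. \<forall>a\<in>Hm. \<forall>b\<in>Hp. cmod (pair a b) \<le> C * nrm ipm a * nrm ipp b) \<and>
     (\<forall>a\<in>H \<inter> Hm. \<forall>b\<in>H \<inter> Hp. pair a b = ipH a b)"

text \<open>m-boundary tuple \<open>(Hm, H, \<Gamma>\<^sub>0, \<Gamma>\<^sub>1)\<close> for the operator \<open>(DS, TS)\<close> (= \<open>M*\<close>) in the
  Hilbert space \<open>(UNIV, ipX)\<close>.  Here \<open>\<langle>\<Gamma>\<^sub>1 f|\<Gamma>\<^sub>0 g\<rangle> = cnj \<langle>\<Gamma>\<^sub>0 g|\<Gamma>\<^sub>1 f\<rangle>\<close>.\<close>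
definition m_boundary_tuple ::
  "('x::cvec \<Rightarrow> 'x \<Rightarrow> complex) \<Rightarrow> 'x set \<Rightarrow> ('x \<Rightarrow> 'x) \<Rightarrow>
   'h::cvec set \<Rightarrow> ('h \<Rightarrow> 'h \<Rightarrow> complex) \<Rightarrow> 'h set \<Rightarrow> ('h \<Rightarrow> 'h \<Rightarrow> complex) \<Rightarrow> 'h set \<Rightarrow> ('h \<Rightarrow> 'h \<Rightarrow> complex) \<Rightarrow>
   ('h \<Rightarrow> 'h \<Rightarrow> complex) \<Rightarrow> ('x \<Rightarrow> 'h) \<Rightarrow> ('x \<Rightarrow> 'h) \<Rightarrow> bool" where
  "m_boundary_tuple ipX DS TS H ipH Hm ipm Hp ipp pair G0 G1 \<longleftrightarrow>
     dual_m_order H ipH Hm ipm Hp ipp \<and> is_pairing H ipH Hm ipm Hp ipp pair \<and>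
     linear_on DS G0 \<and> linear_on DS G1 \<and>
     (\<lambda>f. (G0 f, G1 f)) ` DS = Hm \<times> Hp \<and>
     (\<forall>f\<in>DS. \<forall>g\<in>DS. ipX (TS f) g - ipX f (TS g) = cnj (pair (G0 g) (G1 f)) - pair (G0 f) (G1 g))"

definition contraction_on :: "'h::cvec set \<Rightarrow> ('h \<Rightarrow> 'h \<Rightarrow> complex) \<Rightarrow> ('h \<Rightarrow> 'h) \<Rightarrow> bool" where
  "contraction_on H ip K \<longleftrightarrow> linear_on H K \<and> K ` H \<subseteq> H \<and> (\<forall>h\<in>H. nrm ip (K h) \<le> nrm ip h)"

definition unitary_on :: "'h::cvec set \<Rightarrow> ('h \<Rightarrow> 'h \<Rightarrow> complex) \<Rightarrow> ('h \<Rightarrow> 'h) \<Rightarrow> bool" where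
  "unitary_on H ip K \<longleftrightarrow> linear_on H K \<and> bij_betw K H H \<and> (\<forall>f\<in>H. \<forall>g\<in>H. ip (K f) (K g) = ip f g)"

definition lin_homeo :: "'h::cvec set \<Rightarrow> ('h \<Rightarrow> 'h \<Rightarrow> complex) \<Rightarrow> 'h set \<Rightarrow> ('h \<Rightarrow> 'h \<Rightarrow> complex) \<Rightarrow> ('h \<Rightarrow> 'h) \<Rightarrow> bool" where
  "lin_homeo H ipH Hm ipm V \<longleftrightarrow> linear_on H V \<and> bij_betw V H Hm \<and>
     bounded_on ipH ipm H V \<and> bounded_on ipm ipH Hm (inv_into H V)"

definition pairing_adjoint :: "'h::cvec set \<Rightarrow> ('h \<Rightarrow> 'h \<Rightarrow> complex) \<Rightarrow> 'h set \<Rightarrow> ('h \<Rightarrow> 'h \<Rightarrow> complex) \<Rightarrow> ('h \<Rightarrow> 'h) \<Rightarrow> ('h \<Rightarrow> 'h) \<Rightarrow> bool" where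
  "pairing_adjoint H ipH Hp pair V Vs \<longleftrightarrow> Vs ` Hp \<subseteq> H \<and>
     (\<forall>f\<in>H. \<forall>g\<in>Hp. pair (V f) g = ipH f (Vs g))"

definition bc_dom :: "('x \<times> 'x) set \<Rightarrow> 'h set \<Rightarrow> ('h \<Rightarrow> 'h) \<Rightarrow> ('h \<Rightarrow> 'h) \<Rightarrow> ('x \<times> 'x \<Rightarrow> 'h) \<Rightarrow> ('x \<times> 'x \<Rightarrow> 'h) \<Rightarrow> ('h::cvec \<Rightarrow> 'h) \<Rightarrow> ('x \<times> 'x) set" where
  "bc_dom DS H V Vs G0 G1 K =
     {\<psi>\<in>DS. let a = inv_into H V (G0 \<psi>); b = Vs (G1 \<psi>) in
        (K a + a) + \<i> *\<^sub>C (K b - b) = 0}"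

end

theory Submission
  imports Defs
begin


lemma scaleC_zero_left[simp]: "0 *\<^sub>C (x::'a::cvec) = 0"
proof -
  have "0 *\<^sub>C x = (0 + 0) *\<^sub>C x" by simp
  also have "\<dots> = 0 *\<^sub>C x + 0 *\<^sub>C x" by (rule scaleC_add_left)
  finally show ?thesis by simp
qed

lemma scaleC_zero_right[simp]: "c *\<^sub>C (0::'a::cvec) = 0"
proof -
  have "c *\<^sub>C (0::'a) = c *\<^sub>C (0 + 0)" by simp
  also have "\<dots> = c *\<^sub>C 0 + c *\<^sub>C 0" by (rule scaleC_add_right)
  finally show ?thesis by simp
qed

lemma scaleC_minus_right: "c *\<^sub>C (- (x::'a::cvec)) = - (c *\<^sub>C x)"
proof -
  have "c *\<^sub>C (- x) + c *\<^sub>C x = 0" by (simp flip: scaleC_add_right)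
  then show ?thesis by (simp add: eq_neg_iff_add_eq_0)
qed

lemma scaleC_minus_left: "(- c) *\<^sub>C (x::'a::cvec) = - (c *\<^sub>C x)"
proof -
  have "(- c) *\<^sub>C x + c *\<^sub>C x = 0" by (simp flip: scaleC_add_left)
  then show ?thesis by (simp add: eq_neg_iff_add_eq_0)
qed

lemma scaleC_diff_right: "c *\<^sub>C ((x::'a::cvec) - y) = c *\<^sub>C x - c *\<^sub>C y"
  by (metis diff_conv_add_uminus scaleC_add_right scaleC_minus_right)

lemma scaleC_diff_left: "(c - d) *\<^sub>C (x::'a::cvec) = c *\<^sub>C x - d *\<^sub>C x"
  by (metis diff_conv_add_uminus scaleC_add_left scaleC_minus_left)

lemma scaleC_minus1: "(-1) *\<^sub>C (x::'a::cvec) = - x"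
  by (simp add: scaleC_minus_left scaleC_one)

lemma scaleC_eq0: "c \<noteq> 0 \<Longrightarrow> c *\<^sub>C (x::'a::cvec) = 0 \<Longrightarrow> x = 0"
proof -
  assume c: "c \<noteq> 0" and e: "c *\<^sub>C x = 0"
  have "x = (inverse c * c) *\<^sub>C x" using c by (simp add: scaleC_one)
  also have "\<dots> = inverse c *\<^sub>C (c *\<^sub>C x)" by (simp add: scaleC_scaleC)
  finally show ?thesis using e by simp
qed

lemmas scaleC_simps = scaleC_add_right scaleC_add_left scaleC_scaleC scaleC_one
  scaleC_minus_right scaleC_minus_left scaleC_diff_right scaleC_diff_left

lemma subspaceC_minus: "subspaceC D \<Longrightarrow> x \<in> D \<Longrightarrow> - x \<in> D"
  unfolding subspaceC_def by (metis scaleC_minus1)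

lemma subspaceC_diff: "subspaceC D \<Longrightarrow> x \<in> D \<Longrightarrow> y \<in> D \<Longrightarrow> x - y \<in> D"
  by (metis diff_conv_add_uminus subspaceC_def subspaceC_minus)

lemma subspaceC_add: "subspaceC D \<Longrightarrow> x \<in> D \<Longrightarrow> y \<in> D \<Longrightarrow> x + y \<in> D"
  unfolding subspaceC_def by blast

lemma subspaceC_scale: "subspaceC D \<Longrightarrow> x \<in> D \<Longrightarrow> c *\<^sub>C x \<in> D"
  unfolding subspaceC_def by blast

lemma subspaceC_zero: "subspaceC D \<Longrightarrow> 0 \<in> D"
  unfolding subspaceC_def by blast

lemma subspaceC_UNIV: "subspaceC UNIV"
  unfolding subspaceC_def by blast

lemma linear_on_sub: "linear_on D f \<Longrightarrow> subspaceC D"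
  unfolding linear_on_def by blast

lemma linear_on_add: "linear_on D f \<Longrightarrow> x \<in> D \<Longrightarrow> y \<in> D \<Longrightarrow> f (x + y) = f x + f y"
  unfolding linear_on_def by blast

lemma linear_on_scale: "linear_on D f \<Longrightarrow> x \<in> D \<Longrightarrow> f (c *\<^sub>C x) = c *\<^sub>C f x"
  unfolding linear_on_def by blast

lemma linear_on_zero: "linear_on D f \<Longrightarrow> f 0 = 0"
proof -
  assume l: "linear_on D f"
  then have "0 \<in> D" using linear_on_sub subspaceC_zero by blast
  then have "f (0 *\<^sub>C 0) = 0 *\<^sub>C f 0" using l linear_on_scale by blast
  then show ?thesis by simp
qed

lemma linear_on_minus: "linear_on D f \<Longrightarrow> x \<in> D \<Longrightarrow> f (- x) = - f x"
proof -
  assume l: "linear_on D f" and x: "x \<in> D"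
  have "f ((-1) *\<^sub>C x) = (-1) *\<^sub>C f x" using l x linear_on_scale by blast
  then show ?thesis by (simp only: scaleC_minus1)
qed

lemma linear_on_diff: "linear_on D f \<Longrightarrow> x \<in> D \<Longrightarrow> y \<in> D \<Longrightarrow> f (x - y) = f x - f y"
proof -
  assume l: "linear_on D f" and x: "x \<in> D" and y: "y \<in> D"
  have "- y \<in> D" using l y linear_on_sub subspaceC_minus by blast
  then have "f (x + - y) = f x + f (- y)" using l x linear_on_add by blast
  then show ?thesis using linear_on_minus[OF l y] by simp
qed

section \<open>Inner product spaces\<close>

locale ips =
  fixes H :: "'a::cvec set" and ip :: "'a \<Rightarrow> 'a \<Rightarrow> complex"
  assumes ipo: "inner_product_on H ip"
begin

lemma ipoD1: "subspaceC H"
  using ipo unfolding inner_product_on_def by (elim conjE) assumption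
lemma ipoD2: "\<forall>x\<in>H. \<forall>y\<in>H. \<forall>z\<in>H. ip (x + y) z = ip x z + ip y z"
  using ipo unfolding inner_product_on_def by (elim conjE) assumption
lemma ipoD3: "\<forall>c. \<forall>x\<in>H. \<forall>y\<in>H. ip (c *\<^sub>C x) y = c * ip x y"
  using ipo unfolding inner_product_on_def by (elim conjE) assumption
lemma ipoD4: "\<forall>x\<in>H. \<forall>y\<in>H. ip y x = cnj (ip x y)"
  using ipo unfolding inner_product_on_def by (elim conjE) assumption
lemma ipoD5: "\<forall>x\<in>H. Re (ip x x) \<ge> 0 \<and> Im (ip x x) = 0"
  using ipo unfolding inner_product_on_def by (elim conjE) assumption
lemma ipoD6: "\<forall>x\<in>H. ip x x = 0 \<longrightarrow> x = 0"
  using ipo unfolding inner_product_on_def by (elim conjE) assumption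

lemma sub: "subspaceC H" by (rule ipoD1)
lemma zero_in[simp]: "0 \<in> H" by (rule subspaceC_zero[OF sub])
lemma add_in[simp]: "x \<in> H \<Longrightarrow> y \<in> H \<Longrightarrow> x + y \<in> H" by (rule subspaceC_add[OF sub])
lemma diff_in[simp]: "x \<in> H \<Longrightarrow> y \<in> H \<Longrightarrow> x - y \<in> H" by (rule subspaceC_diff[OF sub])
lemma minus_in[simp]: "x \<in> H \<Longrightarrow> - x \<in> H" by (rule subspaceC_minus[OF sub])
lemma scale_in[simp]: "x \<in> H \<Longrightarrow> c *\<^sub>C x \<in> H" by (rule subspaceC_scale[OF sub])

lemma ip_addL: "x \<in> H \<Longrightarrow> y \<in> H \<Longrightarrow> z \<in> H \<Longrightarrow> ip (x + y) z = ip x z + ip y z"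
  using ipoD2 by blast
lemma ip_scaleL: "x \<in> H \<Longrightarrow> y \<in> H \<Longrightarrow> ip (c *\<^sub>C x) y = c * ip x y"
  using ipoD3 by blast
lemma ip_sym: "x \<in> H \<Longrightarrow> y \<in> H \<Longrightarrow> ip y x = cnj (ip x y)"
  using ipoD4 by blast
lemma ip_addR: "x \<in> H \<Longrightarrow> y \<in> H \<Longrightarrow> z \<in> H \<Longrightarrow> ip z (x + y) = ip z x + ip z y"
proof -
  assume x: "x \<in> H" and y: "y \<in> H" and z: "z \<in> H"
  have "ip z (x + y) = cnj (ip (x + y) z)" using x y z ip_sym[of "x+y" z] by simp
  also have "\<dots> = cnj (ip x z) + cnj (ip y z)" using x y z ip_addL by simp
  also have "\<dots> = ip z x + ip z y" using x y z ip_sym[of z x] ip_sym[of z y] by simp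
  finally show ?thesis .
qed
lemma ip_scaleR: "x \<in> H \<Longrightarrow> y \<in> H \<Longrightarrow> ip x (c *\<^sub>C y) = cnj c * ip x y"
proof -
  assume x: "x \<in> H" and y: "y \<in> H"
  have "ip x (c *\<^sub>C y) = cnj (ip (c *\<^sub>C y) x)" using x y ip_sym[of "c *\<^sub>C y" x] by simp
  also have "\<dots> = cnj c * cnj (ip y x)" using x y ip_scaleL by simp
  also have "\<dots> = cnj c * ip x y" using x y ip_sym[of x y] by simp
  finally show ?thesis .
qed
lemma ip_zeroL[simp]: "y \<in> H \<Longrightarrow> ip 0 y = 0"
  using ip_scaleL[of 0 y 0] by simp
lemma ip_zeroR[simp]: "y \<in> H \<Longrightarrow> ip y 0 = 0"
  using ip_scaleR[of y 0 0] by simp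
lemma ip_minusL: "x \<in> H \<Longrightarrow> y \<in> H \<Longrightarrow> ip (- x) y = - ip x y"
  using ip_scaleL[of x y "-1"] by (simp only: scaleC_minus1) simp
lemma ip_minusR: "x \<in> H \<Longrightarrow> y \<in> H \<Longrightarrow> ip y (- x) = - ip y x"
  using ip_scaleR[of y x "-1"] by (simp only: scaleC_minus1) simp
lemma ip_diffL: "x \<in> H \<Longrightarrow> y \<in> H \<Longrightarrow> z \<in> H \<Longrightarrow> ip (x - y) z = ip x z - ip y z"
  using ip_addL[of x "- y" z] ip_minusL[of y z] by simp
lemma ip_diffR: "x \<in> H \<Longrightarrow> y \<in> H \<Longrightarrow> z \<in> H \<Longrightarrow> ip z (x - y) = ip z x - ip z y"
  using ip_addR[of x "- y" z] ip_minusR[of y z] by simp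

lemma ip_self_Re: "x \<in> H \<Longrightarrow> Re (ip x x) \<ge> 0"
  using ipoD5 by blast
lemma ip_self_Im: "x \<in> H \<Longrightarrow> Im (ip x x) = 0"
  using ipoD5 by blast
lemma ip_self_zero: "x \<in> H \<Longrightarrow> ip x x = 0 \<Longrightarrow> x = 0"
  using ipoD6 by blast
abbreviation "nm \<equiv> nrm ip"

lemma nrm_ge0[simp]: "x \<in> H \<Longrightarrow> nm x \<ge> 0" unfolding nrm_def using ip_self_Re[of x] by simp
lemma nrm_sq: "x \<in> H \<Longrightarrow> (nm x)^2 = Re (ip x x)"
  unfolding nrm_def using ip_self_Re[of x] by simp
lemma ip_self: "x \<in> H \<Longrightarrow> ip x x = complex_of_real ((nm x)^2)"
  by (simp add: complex_eq_iff ip_self_Im nrm_sq)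
lemma nrm_zero[simp]: "nm 0 = 0"
  unfolding nrm_def by simp
lemma nrm_eq0: "x \<in> H \<Longrightarrow> nm x = 0 \<longleftrightarrow> x = 0"
  using ip_self[of x] ip_self_zero[of x] by auto
lemma nrm_scale: "x \<in> H \<Longrightarrow> nm (c *\<^sub>C x) = cmod c * nm x"
proof -
  assume x: "x \<in> H"
  have "ip (c *\<^sub>C x) (c *\<^sub>C x) = (c * cnj c) * ip x x"
    using x by (simp add: ip_scaleL ip_scaleR)
  also have "c * cnj c = complex_of_real ((cmod c)^2)" using complex_norm_square[of c] by simp
  finally have "Re (ip (c *\<^sub>C x) (c *\<^sub>C x)) = (cmod c)^2 * Re (ip x x)"
    using x ip_self by simp
  then show ?thesis unfolding nrm_def by (simp add: real_sqrt_mult)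
qed
lemma nrm_minus: "x \<in> H \<Longrightarrow> nm (- x) = nm x"
  using nrm_scale[of x "-1"] by (simp add: scaleC_minus1)
lemma nrm_commute: "x \<in> H \<Longrightarrow> y \<in> H \<Longrightarrow> nm (x - y) = nm (y - x)"
  using nrm_minus[of "y - x"] by simp

lemma nrm_add_sq: "x \<in> H \<Longrightarrow> y \<in> H \<Longrightarrow> (nm (x + y))^2 = (nm x)^2 + (nm y)^2 + 2 * Re (ip x y)"
proof -
  assume x: "x \<in> H" and y: "y \<in> H"
  have "ip (x+y) (x+y) = ip x x + ip y y + (ip x y + cnj (ip x y))"
    using x y by (simp add: ip_addL ip_addR ip_sym[of x y])
  then have "Re (ip (x+y) (x+y)) = Re (ip x x) + Re (ip y y) + 2 * Re (ip x y)" by simp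
  then show ?thesis using x y by (simp add: nrm_sq)
qed

lemma nrm_diff_sq: "x \<in> H \<Longrightarrow> y \<in> H \<Longrightarrow> (nm (x - y))^2 = (nm x)^2 + (nm y)^2 - 2 * Re (ip x y)"
  using nrm_add_sq[of x "- y"] by (simp add: nrm_minus ip_minusR)

lemma cauchy_schwarz: "x \<in> H \<Longrightarrow> y \<in> H \<Longrightarrow> cmod (ip x y) \<le> nm x * nm y"
proof -
  assume x: "x \<in> H" and y: "y \<in> H"
  show ?thesis
  proof (cases "y = 0")
    case True then show ?thesis using x by simp
  next
    case False
    then have ny: "nm y > 0" using y nrm_eq0[OF y] nrm_ge0[OF y] by linarith
    define r where "r = (nm y)^2"
    have r0: "r > 0" unfolding r_def using ny by simp
    define k where "k = cmod (ip x y)"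
    define t where "t = ip x y / complex_of_real r"
    have tyH: "t *\<^sub>C y \<in> H" using y by simp
    have e1: "(nm (x - t *\<^sub>C y))^2 = (nm x)^2 + (nm (t *\<^sub>C y))^2 - 2 * Re (ip x (t *\<^sub>C y))"
      by (rule nrm_diff_sq[OF x tyH])
    have e2: "nm (t *\<^sub>C y) = cmod t * nm y" by (rule nrm_scale[OF y])
    have e3: "ip x (t *\<^sub>C y) = cnj t * ip x y" by (rule ip_scaleR[OF x y])
    have e4: "cnj t * ip x y = complex_of_real (k^2 / r)"
    proof -
      have "cnj t * ip x y = (ip x y * cnj (ip x y)) / complex_of_real r"
        unfolding t_def by (simp add: mult.commute)
      also have "ip x y * cnj (ip x y) = complex_of_real (k^2)"
        unfolding k_def using complex_norm_square[of "ip x y"] by simp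
      finally show ?thesis by simp
    qed
    have e5: "cmod t = k / r" unfolding t_def k_def using r0 by (simp add: norm_divide)
    have "0 \<le> (nm (x - t *\<^sub>C y))^2" by (rule zero_le_power2)
    also have "\<dots> = (nm x)^2 + (k / r)^2 * r - 2 * (k^2 / r)"
      unfolding e1 e2 e3 e4 e5 Re_complex_of_real power_mult_distrib r_def by (rule refl)
    also have "\<dots> = (nm x)^2 - k^2 / r"
      using r0 by (simp add: power_divide power2_eq_square)
    finally have "k^2 / r \<le> (nm x)^2" by simp
    then have "k^2 \<le> (nm x)^2 * r"
      using pos_divide_le_eq[OF r0] by blast
    then have "k^2 \<le> (nm x * nm y)^2" unfolding r_def by (simp only: power_mult_distrib)
    then have "k \<le> nm x * nm y"
      by (rule power2_le_imp_le) (use nrm_ge0[OF x] nrm_ge0[OF y] in simp)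
    then show ?thesis unfolding k_def .
  qed
qed

lemma Re_ip_le: "x \<in> H \<Longrightarrow> y \<in> H \<Longrightarrow> Re (ip x y) \<le> nm x * nm y"
  using cauchy_schwarz[of x y] abs_Re_le_cmod[of "ip x y"] by linarith

lemma nrm_triangle: "x \<in> H \<Longrightarrow> y \<in> H \<Longrightarrow> nm (x + y) \<le> nm x + nm y"
proof -
  assume x: "x \<in> H" and y: "y \<in> H"
  have "(nm (x + y))^2 \<le> (nm x + nm y)^2"
    unfolding nrm_add_sq[OF x y] power2_sum using Re_ip_le[OF x y] by linarith
  then show ?thesis by (rule power2_le_imp_le) (use nrm_ge0[OF x] nrm_ge0[OF y] in simp)
qed

lemma nrm_triangle_diff: "x \<in> H \<Longrightarrow> y \<in> H \<Longrightarrow> nm (x - y) \<le> nm x + nm y"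
  using nrm_triangle[of x "- y"] nrm_minus[of y] by simp

lemma nrm_triangle3: "x \<in> H \<Longrightarrow> y \<in> H \<Longrightarrow> z \<in> H \<Longrightarrow> nm (x - z) \<le> nm (x - y) + nm (y - z)"
  using nrm_triangle[of "x - y" "y - z"] by simp

lemma nrm_rev_triangle: "x \<in> H \<Longrightarrow> y \<in> H \<Longrightarrow> \<bar>nm x - nm y\<bar> \<le> nm (x - y)"
proof -
  assume x: "x \<in> H" and y: "y \<in> H"
  have "nm x \<le> nm (x - y) + nm y" using nrm_triangle[of "x - y" y] x y by simp
  moreover have "nm y \<le> nm (x - y) + nm x" using nrm_triangle[of "y - x" x] x y nrm_commute by simp
  ultimately show ?thesis by linarith
qed

lemma ip_eq_zero_all: "x \<in> H \<Longrightarrow> (\<And>y. y \<in> H \<Longrightarrow> ip y x = 0) \<Longrightarrow> x = 0"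
  using ip_self_zero by blast

lemma ip_eq_zero_all': "x \<in> H \<Longrightarrow> (\<And>y. y \<in> H \<Longrightarrow> ip x y = 0) \<Longrightarrow> x = 0"
  using ip_self_zero by blast

lemma ip_ext: "x \<in> H \<Longrightarrow> x' \<in> H \<Longrightarrow> (\<And>y. y \<in> H \<Longrightarrow> ip y x = ip y x') \<Longrightarrow> x = x'"
proof -
  assume a: "x \<in> H" "x' \<in> H" "\<And>y. y \<in> H \<Longrightarrow> ip y x = ip y x'"
  have "x - x' = 0" by (rule ip_eq_zero_all) (use a in \<open>auto simp: ip_diffR\<close>)
  then show ?thesis by simp
qed

end


lemma le_lim0: "((f::nat \<Rightarrow> real) \<longlonglongrightarrow> 0) \<Longrightarrow> (\<And>n. a \<le> f n) \<Longrightarrow> a \<le> 0"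
  by (rule LIMSEQ_le_const) auto

lemma le_eps: "(\<And>e. e > 0 \<Longrightarrow> (a::real) \<le> b + e) \<Longrightarrow> a \<le> b"
  by (rule field_le_epsilon) auto

lemma two_scaleC: "(2::complex) *\<^sub>C (x::'a::cvec) = x + x"
  using scaleC_add_left[of 1 1 x] by (simp add: scaleC_one)

lemma null_cmp: "(\<And>n. \<bar>f n\<bar> \<le> g n) \<Longrightarrow> (g \<longlonglongrightarrow> 0) \<Longrightarrow> ((f::nat \<Rightarrow> real) \<longlonglongrightarrow> 0)"
proof -
  assume a: "\<And>n. \<bar>f n\<bar> \<le> g n" and g: "g \<longlonglongrightarrow> 0"
  show ?thesis
    by (rule Lim_null_comparison[OF always_eventually g]) (use a in simp)
qed

lemma null_cmpC: "(\<And>n. cmod (f n) \<le> g n) \<Longrightarrow> (g \<longlonglongrightarrow> 0) \<Longrightarrow> ((f::nat \<Rightarrow> complex) \<longlonglongrightarrow> 0)"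
proof -
  assume a: "\<And>n. cmod (f n) \<le> g n" and g: "g \<longlonglongrightarrow> 0"
  show ?thesis
    by (rule Lim_null_comparison[OF always_eventually g]) (use a in simp)
qed

context ips begin

lemma conv_unique: "(\<And>n. xs n \<in> H) \<Longrightarrow> x \<in> H \<Longrightarrow> y \<in> H \<Longrightarrow> conv ip xs x \<Longrightarrow> conv ip xs y \<Longrightarrow> x = y"
proof -
  assume xs: "\<And>n. xs n \<in> H" and x: "x \<in> H" and y: "y \<in> H" and cx: "conv ip xs x" and cy: "conv ip xs y"
  have "(\<lambda>n. nm (xs n - x) + nm (xs n - y)) \<longlonglongrightarrow> 0 + 0"
    using cx cy unfolding conv_def by (intro tendsto_add)
  moreover have "nm (x - y) \<le> nm (xs n - x) + nm (xs n - y)" for n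
    using nrm_triangle3[of x "xs n" y] nrm_commute[of x "xs n"] xs x y by simp
  ultimately have "nm (x - y) \<le> 0" using le_lim0 by simp
  then have "nm (x - y) = 0" using nrm_ge0[OF diff_in[OF x y]] by simp
  then show ?thesis using nrm_eq0[of "x - y"] x y by simp
qed

lemma conv_const: "conv ip (\<lambda>n. x) x"
  unfolding conv_def by simp

lemma conv_add: "(\<And>n. xs n \<in> H) \<Longrightarrow> (\<And>n. ys n \<in> H) \<Longrightarrow> x \<in> H \<Longrightarrow> y \<in> H \<Longrightarrow>
  conv ip xs x \<Longrightarrow> conv ip ys y \<Longrightarrow> conv ip (\<lambda>n. xs n + ys n) (x + y)"
proof -
  assume xs: "\<And>n. xs n \<in> H" and ys: "\<And>n. ys n \<in> H" and x: "x \<in> H" and y: "y \<in> H"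
    and cx: "conv ip xs x" and cy: "conv ip ys y"
  have L: "(\<lambda>n. nm (xs n - x) + nm (ys n - y)) \<longlonglongrightarrow> 0 + 0"
    using cx cy unfolding conv_def by (intro tendsto_add)
  have B: "\<bar>nm (xs n + ys n - (x + y))\<bar> \<le> nm (xs n - x) + nm (ys n - y)" for n
  proof -
    have eq: "xs n + ys n - (x + y) = (xs n - x) + (ys n - y)" by (simp add: algebra_simps)
    have "nm ((xs n - x) + (ys n - y)) \<le> nm (xs n - x) + nm (ys n - y)"
      by (rule nrm_triangle) (use xs ys x y in auto)
    then have "nm (xs n + ys n - (x + y)) \<le> nm (xs n - x) + nm (ys n - y)" by (simp only: eq)
    moreover have "nm (xs n + ys n - (x + y)) \<ge> 0" by (rule nrm_ge0) (use xs ys x y in auto)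
    ultimately show ?thesis by simp
  qed
  show ?thesis unfolding conv_def by (rule null_cmp[OF B]) (use L in simp)
qed

lemma conv_scale: "(\<And>n. xs n \<in> H) \<Longrightarrow> x \<in> H \<Longrightarrow> conv ip xs x \<Longrightarrow> conv ip (\<lambda>n. c *\<^sub>C xs n) (c *\<^sub>C x)"
proof -
  assume xs: "\<And>n. xs n \<in> H" and x: "x \<in> H" and cx: "conv ip xs x"
  have "nm (c *\<^sub>C xs n - c *\<^sub>C x) = cmod c * nm (xs n - x)" for n
    using xs x nrm_scale[of "xs n - x" c] by (simp add: scaleC_diff_right)
  moreover have "(\<lambda>n. cmod c * nm (xs n - x)) \<longlonglongrightarrow> cmod c * 0"
    using cx unfolding conv_def by (intro tendsto_mult) auto
  ultimately show ?thesis unfolding conv_def by simp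
qed

lemma conv_minus: "(\<And>n. xs n \<in> H) \<Longrightarrow> x \<in> H \<Longrightarrow> conv ip xs x \<Longrightarrow> conv ip (\<lambda>n. - xs n) (- x)"
  using conv_scale[of xs x "-1"] by (simp add: scaleC_minus1)

lemma conv_diff: "(\<And>n. xs n \<in> H) \<Longrightarrow> (\<And>n. ys n \<in> H) \<Longrightarrow> x \<in> H \<Longrightarrow> y \<in> H \<Longrightarrow>
  conv ip xs x \<Longrightarrow> conv ip ys y \<Longrightarrow> conv ip (\<lambda>n. xs n - ys n) (x - y)"
  using conv_add[of xs "\<lambda>n. - ys n" x "- y"] conv_minus[of ys y] by simp

lemma conv_ipL: "(\<And>n. xs n \<in> H) \<Longrightarrow> x \<in> H \<Longrightarrow> y \<in> H \<Longrightarrow> conv ip xs x \<Longrightarrow> (\<lambda>n. ip (xs n) y) \<longlonglongrightarrow> ip x y"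
proof -
  assume xs: "\<And>n. xs n \<in> H" and x: "x \<in> H" and y: "y \<in> H" and cx: "conv ip xs x"
  have "(\<lambda>n. nm (xs n - x) * nm y) \<longlonglongrightarrow> 0 * nm y"
    using cx unfolding conv_def by (intro tendsto_mult) auto
  moreover have "cmod (ip (xs n) y - ip x y) \<le> nm (xs n - x) * nm y" for n
    using cauchy_schwarz[of "xs n - x" y] xs x y by (simp add: ip_diffL)
  ultimately have "(\<lambda>n. ip (xs n) y - ip x y) \<longlonglongrightarrow> 0"
    by (intro null_cmpC) auto
  then show ?thesis by (simp add: LIM_zero_iff)
qed

lemma conv_ipR: "(\<And>n. xs n \<in> H) \<Longrightarrow> x \<in> H \<Longrightarrow> y \<in> H \<Longrightarrow> conv ip xs x \<Longrightarrow> (\<lambda>n. ip y (xs n)) \<longlonglongrightarrow> ip y x"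
proof -
  assume xs: "\<And>n. xs n \<in> H" and x: "x \<in> H" and y: "y \<in> H" and cx: "conv ip xs x"
  have "(\<lambda>n. cnj (ip (xs n) y)) \<longlonglongrightarrow> cnj (ip x y)"
    using conv_ipL[OF xs x y cx] by (rule tendsto_cnj)
  moreover have "cnj (ip (xs n) y) = ip y (xs n)" for n using ip_sym[of y "xs n"] xs y by simp
  moreover have "cnj (ip x y) = ip y x" using ip_sym[of y x] x y by simp
  ultimately show ?thesis by simp
qed

lemma conv_nrm: "(\<And>n. xs n \<in> H) \<Longrightarrow> x \<in> H \<Longrightarrow> conv ip xs x \<Longrightarrow> (\<lambda>n. nm (xs n)) \<longlonglongrightarrow> nm x"
proof -
  assume xs: "\<And>n. xs n \<in> H" and x: "x \<in> H" and cx: "conv ip xs x"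
  have "(\<lambda>n. nm (xs n) - nm x) \<longlonglongrightarrow> 0"
    by (rule null_cmp[of _ "\<lambda>n. nm (xs n - x)"]) (use cx nrm_rev_triangle xs x in \<open>auto simp: conv_def\<close>)
  then show ?thesis by (simp add: LIM_zero_iff)
qed

lemma conv_ev: "conv ip xs x \<Longrightarrow> e > 0 \<Longrightarrow> \<exists>N. \<forall>n\<ge>N. nm (xs n - x) < e"
proof -
  assume cx: "conv ip xs x" and e: "e > 0"
  have "\<exists>N. \<forall>n\<ge>N. dist (nm (xs n - x)) 0 < e" using cx e unfolding conv_def LIMSEQ_def by simp
  then show ?thesis unfolding dist_real_def by (metis abs_less_iff diff_zero)
qed

lemma conv_cauchy: "(\<And>n. xs n \<in> H) \<Longrightarrow> x \<in> H \<Longrightarrow> conv ip xs x \<Longrightarrow> cauchy ip xs"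
  unfolding cauchy_def
proof (intro allI impI)
  fix e :: real assume e: "e > 0"
  assume xs: "\<And>n. xs n \<in> H" and x: "x \<in> H" and cx: "conv ip xs x"
  obtain N where N: "\<And>n. n \<ge> N \<Longrightarrow> nm (xs n - x) < e/2"
    using conv_ev[OF cx, of "e/2"] e by auto
  show "\<exists>N. \<forall>m\<ge>N. \<forall>n\<ge>N. nm (xs m - xs n) < e"
  proof (intro exI allI impI)
    fix m n assume "m \<ge> N" "n \<ge> N"
    then have "nm (xs m - x) < e/2" "nm (xs n - x) < e/2" using N by auto
    then show "nm (xs m - xs n) < e"
      using nrm_triangle3[of "xs m" x "xs n"] nrm_commute[of x "xs n"] xs x by simp
  qed
qed

definition csub :: "'a set \<Rightarrow> bool" where
  "csub W \<longleftrightarrow> W \<subseteq> H \<and> subspaceC W \<and> (\<forall>xs x. (\<forall>n. xs n \<in> W) \<and> x \<in> H \<and> conv ip xs x \<longrightarrow> x \<in> W)"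

lemma dense_zero: "dense_in ip D H \<Longrightarrow> x \<in> H \<Longrightarrow> (\<And>d. d \<in> D \<Longrightarrow> ip d x = 0) \<Longrightarrow> x = 0"
proof -
  assume dn: "dense_in ip D H" and x: "x \<in> H" and z: "\<And>d. d \<in> D \<Longrightarrow> ip d x = 0"
  have nx: "nm x \<ge> 0" using nrm_ge0[OF x] .
  have "nm x \<le> 0 + e" if e: "e > 0" for e
  proof -
    obtain d where d: "d \<in> D" "nm (x - d) < e" using dn x e unfolding dense_in_def by blast
    have dH: "d \<in> H" using d dn unfolding dense_in_def by blast
    have "ip x x = ip (x - d) x" using z[OF d(1)] x dH by (simp add: ip_diffL)
    moreover have "cmod (ip x x) = (nm x)^2" using ip_self[OF x] by (simp add: norm_power)
    ultimately have "(nm x)^2 \<le> nm (x - d) * nm x"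
      using cauchy_schwarz[of "x - d" x] x dH by simp
    also have "\<dots> \<le> e * nm x" using d(2) nx by (simp add: mult_right_mono)
    finally have A: "nm x * nm x \<le> e * nm x" by (simp add: power2_eq_square)
    show ?thesis
    proof (cases "nm x = 0")
      case True then show ?thesis using e by simp
    next
      case False
      then have "nm x > 0" using nx by simp
      then show ?thesis using A by simp
    qed
  qed
  then have "nm x \<le> 0" by (rule le_eps)
  then have "nm x = 0" using nx by simp
  then show ?thesis using nrm_eq0 x by blast
qed

lemma dense_ext: "dense_in ip D H \<Longrightarrow> x \<in> H \<Longrightarrow> y \<in> H \<Longrightarrow> (\<And>d. d \<in> D \<Longrightarrow> ip d x = ip d y) \<Longrightarrow> x = y"
proof -
  assume dn: "dense_in ip D H" and x: "x \<in> H" and y: "y \<in> H" and e: "\<And>d. d \<in> D \<Longrightarrow> ip d x = ip d y"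
  have DH: "D \<subseteq> H" using dn unfolding dense_in_def by blast
  have "x - y = 0"
  proof (rule dense_zero[OF dn])
    show "x - y \<in> H" using x y by simp
    fix d assume d: "d \<in> D"
    then have "d \<in> H" using DH by blast
    then show "ip d (x - y) = 0" using e[OF d] x y by (simp add: ip_diffR)
  qed
  then show ?thesis by simp
qed

lemma parallelogram: "u \<in> H \<Longrightarrow> v \<in> H \<Longrightarrow> (nm (u + v))^2 + (nm (u - v))^2 = 2 * (nm u)^2 + 2 * (nm v)^2"
  by (simp add: nrm_add_sq nrm_diff_sq)

end

locale hs = ips +
  assumes complete: "\<And>xs. (\<And>n. xs n \<in> H) \<Longrightarrow> cauchy ip xs \<Longrightarrow> \<exists>x\<in>H. conv ip xs x"

lemma hilbert_hs: "hilbert_on H ip \<Longrightarrow> hs H ip"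
  unfolding hilbert_on_def hs_def hs_axioms_def ips_def by blast

context hs begin

lemma full:
  assumes W: "csub W" and perp: "\<And>v. v \<in> H \<Longrightarrow> (\<forall>w\<in>W. ip w v = 0) \<Longrightarrow> v = 0"
  shows "W = H"
proof
  show "W \<subseteq> H" using W unfolding csub_def by blast
next
  have WH: "W \<subseteq> H" and Ws: "subspaceC W"
    and Wc: "\<And>xs x. (\<forall>n. xs n \<in> W) \<Longrightarrow> x \<in> H \<Longrightarrow> conv ip xs x \<Longrightarrow> x \<in> W"
    using W unfolding csub_def by blast+
  have wH: "\<And>w. w \<in> W \<Longrightarrow> w \<in> H" using WH by blast
  show "H \<subseteq> W"
  proof
    fix x assume x: "x \<in> H"
    define N where "N = (\<lambda>w. nm (x - w)) ` W"
    define d where "d = Inf N"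
    have Nne: "N \<noteq> {}" using Ws subspaceC_zero unfolding N_def by blast
    have Nge: "\<And>y. y \<in> N \<Longrightarrow> 0 \<le> y" unfolding N_def using x wH by auto
    have Nbd: "bdd_below N" by (rule bdd_belowI[of _ 0]) (rule Nge)
    have dlow: "d \<le> nm (x - w)" if "w \<in> W" for w
      unfolding d_def by (rule cInf_lower) (use that Nbd N_def in auto)
    have d0: "d \<ge> 0" unfolding d_def by (rule cInf_greatest[OF Nne]) (rule Nge)
    define eps :: "nat \<Rightarrow> real" where "eps n = inverse (real (Suc n))" for n
    have eps_pos: "eps n > 0" for n unfolding eps_def by simp
    have eps_lim: "eps \<longlonglongrightarrow> 0" unfolding eps_def by (rule LIMSEQ_inverse_real_of_nat)
    have "\<exists>w. w \<in> W \<and> (nm (x - w))^2 < d^2 + eps n" for n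
    proof -
      have "sqrt (d^2) < sqrt (d^2 + eps n)"
        using eps_pos[of n] by (intro real_sqrt_less_mono) simp
      then have "Inf N < sqrt (d^2 + eps n)" unfolding d_def using d0 d_def by simp
      then obtain y where "y \<in> N" "y < sqrt (d^2 + eps n)" using cInf_less_iff[OF Nne Nbd] by blast
      then obtain w where w: "w \<in> W" "nm (x - w) < sqrt (d^2 + eps n)" unfolding N_def by blast
      have "(nm (x - w))^2 < (sqrt (d^2 + eps n))^2"
        by (rule power_strict_mono) (use w x wH nrm_ge0 in auto)
      then have "(nm (x - w))^2 < d^2 + eps n" using eps_pos[of n] by simp
      then show ?thesis using w by blast
    qed
    then obtain ws where ws: "\<And>n. ws n \<in> W" "\<And>n. (nm (x - ws n))^2 < d^2 + eps n" by metis
    have wsH: "ws n \<in> H" for n using ws wH by blast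
    have par: "(nm (ws m - ws n))^2 \<le> 2 * eps n + 2 * eps m" for m n
    proof -
      define mid where "mid = (1/2::complex) *\<^sub>C (ws n + ws m)"
      have midW: "mid \<in> W" unfolding mid_def using ws Ws subspaceC_add subspaceC_scale by blast
      have midH: "mid \<in> H" using midW wH by blast
      have "(2::complex) *\<^sub>C (x - mid) = (2::complex) *\<^sub>C x - (ws n + ws m)"
        unfolding mid_def by (simp add: scaleC_diff_right scaleC_scaleC scaleC_one)
      also have "\<dots> = (x - ws n) + (x - ws m)" by (simp add: two_scaleC algebra_simps)
      finally have eq: "(x - ws n) + (x - ws m) = (2::complex) *\<^sub>C (x - mid)" by simp
      have "nm ((x - ws n) + (x - ws m)) = 2 * nm (x - mid)"
        unfolding eq using x midH by (simp add: nrm_scale)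
      moreover have "d \<le> nm (x - mid)" using dlow midW by blast
      ultimately have A: "4 * d^2 \<le> (nm ((x - ws n) + (x - ws m)))^2"
        using d0 by (simp add: power_mult_distrib power_mono)
      have "(nm ((x - ws n) + (x - ws m)))^2 + (nm ((x - ws n) - (x - ws m)))^2
          = 2 * (nm (x - ws n))^2 + 2 * (nm (x - ws m))^2"
        by (rule parallelogram) (use x wsH in auto)
      moreover have "(x - ws n) - (x - ws m) = ws m - ws n" by simp
      ultimately have "(nm ((x - ws n) + (x - ws m)))^2 + (nm (ws m - ws n))^2
          = 2 * (nm (x - ws n))^2 + 2 * (nm (x - ws m))^2" by simp
      then show ?thesis using A ws(2)[of n] ws(2)[of m] by linarith
    qed
    have cs: "cauchy ip ws"
      unfolding cauchy_def
    proof (intro allI impI)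
      fix e :: real assume e: "e > 0"
      have "eventually (\<lambda>n. eps n < e^2 / 4) sequentially"
        using order_tendstoD(2)[OF eps_lim, of "e^2/4"] e by simp
      then obtain N where N: "\<And>n. n \<ge> N \<Longrightarrow> eps n < e^2 / 4"
        unfolding eventually_sequentially by blast
      show "\<exists>N. \<forall>m\<ge>N. \<forall>n\<ge>N. nm (ws m - ws n) < e"
      proof (intro exI allI impI)
        fix m n assume "m \<ge> N" "n \<ge> N"
        then have "(nm (ws m - ws n))^2 < e^2" using par[of m n] N[of m] N[of n] by linarith
        then show "nm (ws m - ws n) < e"
          by (rule power_less_imp_less_base) (use e in simp)
      qed
    qed
    obtain p where p: "p \<in> H" "conv ip ws p" using complete[OF wsH cs] by blast
    have pW: "p \<in> W" using Wc[of ws p] ws p by blast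
    have pmin: "nm (x - p) \<le> d"
    proof -
      have lim: "(\<lambda>n. sqrt (d^2 + eps n) + nm (ws n - p)) \<longlonglongrightarrow> sqrt (d^2 + 0) + 0"
        using eps_lim p(2) unfolding conv_def by (intro tendsto_intros)
      have bnd: "nm (x - p) \<le> sqrt (d^2 + eps n) + nm (ws n - p)" for n
      proof -
        have "nm (x - ws n) < sqrt (d^2 + eps n)"
          using ws(2)[of n] by (rule real_less_rsqrt)
        then show ?thesis using nrm_triangle3[of x "ws n" p] x wsH p by simp
      qed
      have "nm (x - p) \<le> sqrt (d^2 + 0) + 0"
        by (rule LIMSEQ_le_const[OF lim]) (use bnd in auto)
      then show ?thesis using d0 by simp
    qed
    define z where "z = x - p"
    have zH: "z \<in> H" unfolding z_def using x p by simp
    have orth: "ip w z = 0" if w: "w \<in> W" for w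
    proof -
      have wH': "w \<in> H" using w wH by blast
      define q where "q = ip z w"
      define W2 where "W2 = (nm w)^2"
      define Q where "Q = (cmod q)^2"
      define s :: real where "s = 1 / (W2 + 1)"
      have W20: "W2 \<ge> 0" unfolding W2_def by simp
      have s0: "s > 0" unfolding s_def using W20 by simp
      have sW: "s * W2 \<le> 1" unfolding s_def using W20 by simp
      have Q0: "Q \<ge> 0" unfolding Q_def by simp
      define t where "t = complex_of_real s * q"
      have twH: "t *\<^sub>C w \<in> H" using wH' by simp
      have "p + t *\<^sub>C w \<in> W" using pW w Ws subspaceC_add subspaceC_scale by blast
      then have "d \<le> nm (x - (p + t *\<^sub>C w))" using dlow by blast
      moreover have "x - (p + t *\<^sub>C w) = z - t *\<^sub>C w" unfolding z_def by simp
      ultimately have "nm z \<le> nm (z - t *\<^sub>C w)" using pmin z_def by simp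
      then have "(nm z)^2 \<le> (nm (z - t *\<^sub>C w))^2"
        by (rule power_mono) (use zH in simp)
      also have "\<dots> = (nm z)^2 + (nm (t *\<^sub>C w))^2 - 2 * Re (ip z (t *\<^sub>C w))"
        by (rule nrm_diff_sq[OF zH twH])
      also have "nm (t *\<^sub>C w) = cmod t * nm w" by (rule nrm_scale[OF wH'])
      also have "ip z (t *\<^sub>C w) = cnj t * q" unfolding q_def by (rule ip_scaleR[OF zH wH'])
      finally have A: "2 * Re (cnj t * q) \<le> (cmod t * nm w)^2" by simp
      have B: "cnj t * q = complex_of_real (s * Q)"
      proof -
        have "cnj t * q = complex_of_real s * (q * cnj q)" unfolding t_def by (simp add: mult.commute)
        also have "q * cnj q = complex_of_real Q" unfolding Q_def using complex_norm_square[of q] by simp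
        finally show ?thesis by simp
      qed
      have C: "(cmod t * nm w)^2 = s^2 * Q * W2"
        unfolding t_def Q_def W2_def using s0 by (simp add: norm_mult power_mult_distrib)
      have "2 * (s * Q) \<le> s^2 * Q * W2" using A B C by simp
      also have "s^2 * Q * W2 = (s * Q) * (s * W2)" by (simp add: power2_eq_square)
      also have "\<dots> \<le> (s * Q) * 1" by (rule mult_left_mono[OF sW]) (use s0 Q0 in simp)
      finally have "s * Q \<le> 0" by (simp add: mult.commute)
      then have "Q \<le> 0" using s0 by (simp add: mult_le_0_iff)
      then have "q = 0" unfolding Q_def by simp
      then show ?thesis using ip_sym[of z w] zH wH' q_def by simp
    qed
    have "z = 0" using perp[OF zH] orth by blast
    then show "x \<in> W" using pW z_def by simp
  qed
qed

lemma riesz: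
  assumes add: "\<And>x y. x \<in> H \<Longrightarrow> y \<in> H \<Longrightarrow> phi (x + y) = phi x + phi y"
    and scl: "\<And>c x. x \<in> H \<Longrightarrow> phi (c *\<^sub>C x) = c * phi x"
    and bd: "\<And>x. x \<in> H \<Longrightarrow> cmod (phi x) \<le> C * nm x"
  shows "\<exists>z\<in>H. \<forall>x\<in>H. phi x = ip x z"
proof -
  define N where "N = {x\<in>H. phi x = 0}"
  have phi0: "phi 0 = 0" using scl[of 0 0] by simp
  have Ns: "subspaceC N" unfolding N_def subspaceC_def using add scl phi0 by auto
  have Nc: "csub N" unfolding csub_def
  proof (intro conjI allI impI)
    show "N \<subseteq> H" "subspaceC N" using Ns unfolding N_def by auto
    fix xs x assume a: "(\<forall>n. xs n \<in> N) \<and> x \<in> H \<and> conv ip xs x"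
    have xsH: "xs n \<in> H" "phi (xs n) = 0" for n using a unfolding N_def by auto
    have bnd: "cmod (phi x) \<le> C * nm (xs n - x)" for n
    proof -
      have "phi (xs n - x) = phi (xs n) + phi ((-1) *\<^sub>C x)"
        using add[of "xs n" "(-1) *\<^sub>C x"] xsH a by (simp add: scaleC_minus1)
      then have "phi (xs n - x) = - phi x" using xsH scl a by simp
      then show ?thesis using bd[of "xs n - x"] xsH a by simp
    qed
    have lim: "(\<lambda>n. C * nm (xs n - x)) \<longlonglongrightarrow> C * 0"
      using a unfolding conv_def by (intro tendsto_mult) auto
    have "cmod (phi x) \<le> C * 0"
      by (rule LIMSEQ_le_const[OF lim]) (use bnd in auto)
    then show "x \<in> N" unfolding N_def using a by simp
  qed
  show ?thesis
  proof (cases "N = H")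
    case True
    then show ?thesis by (intro bexI[of _ 0]) (auto simp: N_def)
  next
    case False
    then obtain v where v: "v \<in> H" "\<forall>w\<in>N. ip w v = 0" "v \<noteq> 0" using full[OF Nc] by blast
    have pv: "phi v \<noteq> 0"
    proof
      assume "phi v = 0"
      then have "v \<in> N" using v unfolding N_def by simp
      then have "ip v v = 0" using v by blast
      then show False using v ip_self_zero by blast
    qed
    have vv: "ip v v \<noteq> 0" using v ip_self_zero by blast
    define z where "z = (cnj (phi v) / cnj (ip v v)) *\<^sub>C v"
    show ?thesis
    proof (intro bexI[of _ z] ballI)
      show "z \<in> H" unfolding z_def using v by simp
      fix x assume x: "x \<in> H"
      define y where "y = x - (phi x / phi v) *\<^sub>C v"
      have yH: "y \<in> H" unfolding y_def using x v by simp
      have "phi y = phi x + phi ((- (phi x / phi v)) *\<^sub>C v)"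
        unfolding y_def using add[of x "(- (phi x / phi v)) *\<^sub>C v"] x v
        by (simp add: scaleC_minus_left)
      then have "phi y = 0" using scl v pv by simp
      then have "ip y v = 0" using v yH unfolding N_def by blast
      then have "ip x v = (phi x / phi v) * ip v v" unfolding y_def using x v
        by (simp add: ip_diffL ip_scaleL)
      then show "phi x = ip x z" unfolding z_def using x v pv vv
        by (simp add: ip_scaleR field_simps)
    qed
  qed
qed

end


locale bnd =
  X: hs "UNIV::'x set" ipx + B: hs H ipH
  for ipx :: "'x::cvec \<Rightarrow> 'x \<Rightarrow> complex" and H :: "'h::cvec set" and ipH :: "'h \<Rightarrow> 'h \<Rightarrow> complex" +
  fixes D0 :: "'x set" and T0 :: "'x \<Rightarrow> 'x" and DS :: "'x set" and TS :: "'x \<Rightarrow> 'x"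
    and u w :: "'x \<Rightarrow> 'h"
  assumes D0_dense: "dense_in ipx D0 UNIV"
    and T0_lin: "linear_on D0 T0"
    and D0_DS: "D0 \<subseteq> DS"
    and TS_T0: "\<And>f. f \<in> D0 \<Longrightarrow> TS f = T0 f"
    and adj_char: "\<And>g. g \<in> DS \<longleftrightarrow> (\<exists>h. \<forall>f\<in>D0. ipx (T0 f) g = ipx f h)"
    and adj_val: "\<And>f g. g \<in> DS \<Longrightarrow> f \<in> D0 \<Longrightarrow> ipx (T0 f) g = ipx f (TS g)"
    and TS_lin: "linear_on DS TS"
    and u_lin: "linear_on DS u" and w_lin: "linear_on DS w"
    and u_in: "\<And>f. f \<in> DS \<Longrightarrow> u f \<in> H" and w_in: "\<And>f. f \<in> DS \<Longrightarrow> w f \<in> H"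
    and green: "\<And>f g. f \<in> DS \<Longrightarrow> g \<in> DS \<Longrightarrow>
        ipx (TS f) g - ipx f (TS g) = (- \<i> / 2) * (ipH (u f) (u g) - ipH (w f) (w g))"
    and surj: "\<And>x y. x \<in> H \<Longrightarrow> y \<in> H \<Longrightarrow> \<exists>f\<in>DS. u f = x \<and> w f = y"
begin

abbreviation "xn \<equiv> nrm ipx"
abbreviation "hn \<equiv> nrm ipH"

definition bcd :: "('h \<Rightarrow> 'h) \<Rightarrow> 'x set" where
  "bcd K = {\<psi>\<in>DS. K (u \<psi>) + w \<psi> = 0}"

lemma bcd_mem: "x \<in> bcd K \<longleftrightarrow> x \<in> DS \<and> K (u x) + w x = 0"
  unfolding bcd_def by simp

lemma DS_sub: "subspaceC DS" using TS_lin linear_on_sub by blast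

lemma green_sym: "f \<in> DS \<Longrightarrow> g \<in> DS \<Longrightarrow>
    ipx (TS f) g = ipx f (TS g) \<longleftrightarrow> ipH (u f) (u g) = ipH (w f) (w g)"
  using green[of f g] by auto

lemma dissip_formula: "f \<in> DS \<Longrightarrow> Im (ipx (TS f) f) = ((hn (w f))^2 - (hn (u f))^2) / 4"
proof -
  assume f: "f \<in> DS"
  have g: "ipx (TS f) f - cnj (ipx (TS f) f) =
      (- \<i> / 2) * (complex_of_real ((hn (u f))^2) - complex_of_real ((hn (w f))^2))"
    using green[OF f f] X.ip_sym[of "TS f" f] B.ip_self[OF u_in[OF f]] B.ip_self[OF w_in[OF f]] by simp
  have "Im (ipx (TS f) f - cnj (ipx (TS f) f)) = Im ((- \<i> / 2) * (complex_of_real ((hn (u f))^2) - complex_of_real ((hn (w f))^2)))"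
    using g by simp
  then show ?thesis by (simp add: field_simps)
qed

lemma D0_uw: "f \<in> D0 \<Longrightarrow> u f = 0 \<and> w f = 0"
proof -
  assume f0: "f \<in> D0"
  have f: "f \<in> DS" using f0 D0_DS by blast
  have E: "ipH (u f) (u g) = ipH (w f) (w g)" if g: "g \<in> DS" for g
  proof -
    have "ipx (TS f) g = ipx f (TS g)" using adj_val[OF g f0] TS_T0[OF f0] by simp
    then show ?thesis using green_sym[OF f g] by simp
  qed
  obtain g1 where g1: "g1 \<in> DS" "u g1 = u f" "w g1 = 0" using surj[OF u_in[OF f] B.zero_in] by blast
  have "ipH (u f) (u f) = 0" using E[OF g1(1)] g1 w_in[OF f] by simp
  then have "u f = 0" using B.ip_self_zero u_in[OF f] by blast
  moreover obtain g2 where g2: "g2 \<in> DS" "u g2 = 0" "w g2 = w f" using surj[OF B.zero_in w_in[OF f]] by blast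
  have "ipH (w f) (w f) = 0" using E[OF g2(1)] g2 u_in[OF f] by simp
  then have "w f = 0" using B.ip_self_zero w_in[OF f] by blast
  ultimately show ?thesis by blast
qed

lemma TS_closed:
  assumes xs: "\<And>n. xs n \<in> DS" and cx: "conv ipx xs x" and cy: "conv ipx (\<lambda>n. TS (xs n)) y"
  shows "x \<in> DS \<and> TS x = y"
proof -
  have E: "ipx (T0 f) x = ipx f y" if f: "f \<in> D0" for f
  proof -
    have "(\<lambda>n. ipx (T0 f) (xs n)) \<longlonglongrightarrow> ipx (T0 f) x" by (rule X.conv_ipR) (use cx in auto)
    moreover have "(\<lambda>n. ipx f (TS (xs n))) \<longlonglongrightarrow> ipx f y" by (rule X.conv_ipR) (use cy in auto)
    moreover have "ipx (T0 f) (xs n) = ipx f (TS (xs n))" for n using adj_val[OF xs f] .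
    ultimately show ?thesis using LIMSEQ_unique by simp
  qed
  then have xD: "x \<in> DS" using adj_char by blast
  have "TS x = y"
  proof (rule X.dense_ext[OF D0_dense])
    fix d assume d: "d \<in> D0"
    show "ipx d (TS x) = ipx d y" using adj_val[OF xD d] E[OF d] by simp
  qed auto
  then show ?thesis using xD by blast
qed

lemma weak_uw:
  assumes xs: "\<And>n. xs n \<in> DS" and x: "x \<in> DS" and cx: "conv ipx xs x"
    and cy: "conv ipx (\<lambda>n. TS (xs n)) (TS x)" and h: "h \<in> H"
  shows "(\<lambda>n. ipH (u (xs n)) h) \<longlonglongrightarrow> ipH (u x) h" "(\<lambda>n. ipH (w (xs n)) h) \<longlonglongrightarrow> ipH (w x) h"
proof -
  have lim: "(\<lambda>n. ipx (TS (xs n)) g - ipx (xs n) (TS g)) \<longlonglongrightarrow> ipx (TS x) g - ipx x (TS g)" for g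
    by (intro tendsto_diff X.conv_ipL) (use cx cy in auto)
  obtain g1 where g1: "g1 \<in> DS" "u g1 = h" "w g1 = 0" using surj[OF h B.zero_in] by blast
  have e1: "ipx (TS z) g1 - ipx z (TS g1) = (- \<i> / 2) * ipH (u z) h" if "z \<in> DS" for z
    using green[OF that g1(1)] g1 w_in[OF that] by simp
  have "(\<lambda>n. (2 * \<i>) * (ipx (TS (xs n)) g1 - ipx (xs n) (TS g1))) \<longlonglongrightarrow> (2 * \<i>) * (ipx (TS x) g1 - ipx x (TS g1))"
    by (intro tendsto_mult tendsto_const lim)
  then show "(\<lambda>n. ipH (u (xs n)) h) \<longlonglongrightarrow> ipH (u x) h"
    using e1[OF x] e1[OF xs] by (simp add: field_simps)
  obtain g2 where g2: "g2 \<in> DS" "u g2 = 0" "w g2 = h" using surj[OF B.zero_in h] by blast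
  have e2: "ipx (TS z) g2 - ipx z (TS g2) = (\<i> / 2) * ipH (w z) h" if "z \<in> DS" for z
    using green[OF that g2(1)] g2 u_in[OF that] by simp
  have "(\<lambda>n. (- 2 * \<i>) * (ipx (TS (xs n)) g2 - ipx (xs n) (TS g2))) \<longlonglongrightarrow> (- 2 * \<i>) * (ipx (TS x) g2 - ipx x (TS g2))"
    by (intro tendsto_mult tendsto_const lim)
  then show "(\<lambda>n. ipH (w (xs n)) h) \<longlonglongrightarrow> ipH (w x) h"
    using e2[OF x] e2[OF xs] by (simp add: field_simps)
qed


lemma contr_lin: "contraction_on H ipH K \<Longrightarrow> linear_on H K"
  unfolding contraction_on_def by blast
lemma contr_in: "contraction_on H ipH K \<Longrightarrow> h \<in> H \<Longrightarrow> K h \<in> H"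
  unfolding contraction_on_def by blast
lemma contr_le: "contraction_on H ipH K \<Longrightarrow> h \<in> H \<Longrightarrow> hn (K h) \<le> hn h"
  unfolding contraction_on_def by blast

lemma bcd_DS: "bcd K \<subseteq> DS" unfolding bcd_def by blast

lemma bcd_sub: assumes K: "linear_on H K" shows "subspaceC (bcd K)"
  unfolding subspaceC_def
proof (intro conjI allI ballI)
  show "0 \<in> bcd K" unfolding bcd_def
    using DS_sub subspaceC_zero linear_on_zero[OF u_lin] linear_on_zero[OF w_lin] linear_on_zero[OF K] by simp
next
  fix x y assume x: "x \<in> bcd K" and y: "y \<in> bcd K"
  then have xD: "x \<in> DS" and yD: "y \<in> DS" and ex: "K (u x) + w x = 0" and ey: "K (u y) + w y = 0"
    unfolding bcd_def by auto
  have "K (u (x + y)) + w (x + y) = (K (u x) + w x) + (K (u y) + w y)"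
    using linear_on_add[OF u_lin xD yD] linear_on_add[OF w_lin xD yD]
      linear_on_add[OF K u_in[OF xD] u_in[OF yD]] by (simp add: algebra_simps)
  then show "x + y \<in> bcd K" unfolding bcd_def using ex ey subspaceC_add[OF DS_sub xD yD] by simp
next
  fix c x assume x: "x \<in> bcd K"
  then have xD: "x \<in> DS" and ex: "K (u x) + w x = 0" unfolding bcd_def by auto
  have "K (u (c *\<^sub>C x)) + w (c *\<^sub>C x) = c *\<^sub>C (K (u x) + w x)"
    using linear_on_scale[OF u_lin xD] linear_on_scale[OF w_lin xD]
      linear_on_scale[OF K u_in[OF xD]] by (simp add: scaleC_add_right)
  then show "c *\<^sub>C x \<in> bcd K" unfolding bcd_def using ex subspaceC_scale[OF DS_sub xD] by simp
qed

lemma D0_bcd: assumes K: "linear_on H K" shows "D0 \<subseteq> bcd K"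
proof
  fix f assume f: "f \<in> D0"
  then show "f \<in> bcd K" using D0_uw[OF f] D0_DS linear_on_zero[OF K] unfolding bcd_def by auto
qed

lemma bcd_dissip: assumes K: "contraction_on H ipH K" and f: "f \<in> bcd K"
  shows "Im (ipx (TS f) f) \<le> 0"
proof -
  have fD: "f \<in> DS" and e: "w f = - K (u f)" using f unfolding bcd_def by (auto simp: eq_neg_iff_add_eq_0 add.commute)
  have "hn (w f) = hn (K (u f))" using e B.nrm_minus contr_in[OF K u_in[OF fD]] by simp
  also have "\<dots> \<le> hn (u f)" using contr_le[OF K u_in[OF fD]] .
  finally have "(hn (w f))^2 \<le> (hn (u f))^2"
    by (rule power_mono) (use w_in[OF fD] in simp)
  then show ?thesis using dissip_formula[OF fD] by simp
qed

lemma est: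
  assumes d: "Im (ipx v f) \<le> 0" and l: "Im l > 0"
  shows "Im l * xn f \<le> xn (v - l *\<^sub>C f)"
proof -
  have "ipx (v - l *\<^sub>C f) f = ipx v f - l * complex_of_real ((xn f)^2)"
    using X.ip_self[of f] by (simp add: X.ip_diffL X.ip_scaleL)
  then have "Im (ipx (v - l *\<^sub>C f) f) = Im (ipx v f) - Im l * (xn f)^2" by simp
  then have "Im l * (xn f)^2 \<le> - Im (ipx (v - l *\<^sub>C f) f)" using d by simp
  also have "\<dots> \<le> cmod (ipx (v - l *\<^sub>C f) f)" by (metis abs_Im_le_cmod abs_le_D2)
  also have "\<dots> \<le> xn (v - l *\<^sub>C f) * xn f" by (rule X.cauchy_schwarz) auto
  finally have A: "(Im l * xn f) * xn f \<le> xn (v - l *\<^sub>C f) * xn f" by (simp add: power2_eq_square mult.assoc)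
  show ?thesis
  proof (cases "xn f = 0")
    case True then show ?thesis by simp
  next
    case False
    then have "xn f > 0" using X.nrm_ge0[OF UNIV_I, of f] by (simp add: less_le)
    then show ?thesis using A by simp
  qed
qed

lemma mdiss_intro:
  assumes op: "operator D T" and dis: "\<And>f. f \<in> D \<Longrightarrow> Im (ipx (T f) f) \<le> 0"
    and sj: "\<And>l. Im l > 0 \<Longrightarrow> (\<lambda>x. T x - l *\<^sub>C x) ` D = UNIV"
  shows "m_dissipative ipx D T"
  unfolding m_dissipative_def
proof (intro conjI allI impI ballI)
  show "operator D T" by (rule op)
  have lin: "linear_on D T" using op unfolding operator_def .
  have Ds: "subspaceC D" using lin linear_on_sub by blast
  fix l :: complex assume l: "Im l > 0"
  have bnd: "xn x \<le> xn (T x - l *\<^sub>C x) / Im l" if x: "x \<in> D" for x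
    using est[OF dis[OF x] l] l by (simp add: field_simps)
  show "xn x \<le> xn (T x - l *\<^sub>C x) / Im l" if "x \<in> D" for x using bnd that .
  show "in_resolvent ipx D T l"
    unfolding in_resolvent_def
  proof (intro conjI)
    show "\<exists>C. \<forall>x\<in>D. xn x \<le> C * xn (T x - l *\<^sub>C x)"
      by (intro exI[of _ "1 / Im l"]) (use bnd in simp)
    show "bij_betw (\<lambda>x. T x - l *\<^sub>C x) D UNIV"
      unfolding bij_betw_def
    proof
      show "inj_on (\<lambda>x. T x - l *\<^sub>C x) D"
      proof (rule inj_onI)
        fix x y assume x: "x \<in> D" and y: "y \<in> D" and e: "T x - l *\<^sub>C x = T y - l *\<^sub>C y"
        have xy: "x - y \<in> D" using Ds x y subspaceC_diff by blast
        have "T (x - y) - l *\<^sub>C (x - y) = (T x - l *\<^sub>C x) - (T y - l *\<^sub>C y)"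
          using linear_on_diff[OF lin x y] by (simp add: scaleC_diff_right algebra_simps)
        then have "T (x - y) - l *\<^sub>C (x - y) = 0" using e by simp
        then have "xn (x - y) \<le> 0" using bnd[OF xy] by simp
        then have "xn (x - y) = 0" using X.nrm_ge0[OF UNIV_I, of "x - y"] by simp
        then show "x = y" using X.nrm_eq0[of "x - y"] by simp
      qed
      show "(\<lambda>x. T x - l *\<^sub>C x) ` D = UNIV" by (rule sj[OF l])
    qed
  qed
qed

lemma mdiss_dissip:
  assumes m: "m_dissipative ipx D T" and f: "f \<in> D"
  shows "Im (ipx (T f) f) \<le> 0"
proof (rule ccontr)
  define z where "z = ipx (T f) f"
  assume "\<not> Im (ipx (T f) f) \<le> 0"
  then have z0: "Im z > 0" unfolding z_def by simp
  define t where "t = ((xn (T f))^2 + 1) / Im z"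
  have "0 \<le> (xn (T f))^2" by simp
  then have "(xn (T f))^2 + 1 > 0" by linarith
  then have t0: "t > 0" unfolding t_def using z0 by simp
  have "Im (\<i> * complex_of_real t) > 0" using t0 by simp
  then have "xn f \<le> xn (T f - (\<i> * complex_of_real t) *\<^sub>C f) / t"
    using m f unfolding m_dissipative_def by fastforce
  then have A: "t * xn f \<le> xn (T f - (\<i> * complex_of_real t) *\<^sub>C f)" using t0 by (simp add: field_simps)
  have B: "(t * xn f)^2 \<le> (xn (T f - (\<i> * complex_of_real t) *\<^sub>C f))^2"
    by (rule power_mono[OF A]) (use t0 in simp)
  have "(xn (T f - (\<i> * complex_of_real t) *\<^sub>C f))^2
      = (xn (T f))^2 + (xn ((\<i> * complex_of_real t) *\<^sub>C f))^2 - 2 * Re (ipx (T f) ((\<i> * complex_of_real t) *\<^sub>C f))"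
    by (rule X.nrm_diff_sq) auto
  also have "xn ((\<i> * complex_of_real t) *\<^sub>C f) = t * xn f"
    using X.nrm_scale[of f "\<i> * complex_of_real t"] t0 by (simp add: norm_mult)
  also have "Re (ipx (T f) ((\<i> * complex_of_real t) *\<^sub>C f)) = t * Im z"
    unfolding z_def by (simp add: X.ip_scaleR)
  finally have "2 * t * Im z \<le> (xn (T f))^2" using B by (simp add: power_mult_distrib)
  moreover have "2 * t * Im z = 2 * ((xn (T f))^2 + 1)" unfolding t_def using z0 by simp
  ultimately have "(xn (T f))^2 + 2 \<le> 0" by simp
  moreover have "0 \<le> (xn (T f))^2" by simp
  ultimately show False by linarith
qed

lemma mdiss_surj:
  assumes m: "m_dissipative ipx D T" and l: "Im l > 0"
  shows "\<exists>x\<in>D. T x - l *\<^sub>C x = y"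
proof -
  have "bij_betw (\<lambda>x. T x - l *\<^sub>C x) D UNIV"
    using m l unfolding m_dissipative_def in_resolvent_def by blast
  then have "y \<in> (\<lambda>x. T x - l *\<^sub>C x) ` D" unfolding bij_betw_def by simp
  then show ?thesis by blast
qed

lemma Kadj:
  assumes K: "contraction_on H ipH K" and k: "k \<in> H"
  shows "\<exists>z\<in>H. \<forall>h\<in>H. ipH (K h) k = ipH h z"
proof (rule B.riesz)
  fix x y assume x: "x \<in> H" and y: "y \<in> H"
  show "ipH (K (x + y)) k = ipH (K x) k + ipH (K y) k"
    using linear_on_add[OF contr_lin[OF K] x y] B.ip_addL contr_in[OF K] x y k by simp
next
  fix c x assume x: "x \<in> H"
  show "ipH (K (c *\<^sub>C x)) k = c * ipH (K x) k"
    using linear_on_scale[OF contr_lin[OF K] x] B.ip_scaleL contr_in[OF K] x k by simp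
next
  fix x assume x: "x \<in> H"
  have "cmod (ipH (K x) k) \<le> hn (K x) * hn k" by (rule B.cauchy_schwarz) (use contr_in[OF K] x k in auto)
  also have "\<dots> \<le> hn x * hn k" by (rule mult_right_mono[OF contr_le[OF K x]]) (use k in simp)
  finally show "cmod (ipH (K x) k) \<le> hn k * hn x" by (simp add: mult.commute)
qed


lemma bcd_range:
  assumes K: "contraction_on H ipH K" and l: "Im l > 0"
  shows "(\<lambda>x. TS x - l *\<^sub>C x) ` bcd K = UNIV"
proof -
  define F where "F = (\<lambda>x. TS x - l *\<^sub>C x)"
  define W where "W = F ` bcd K"
  have KL: "linear_on H K" using contr_lin[OF K] .
  have bs: "subspaceC (bcd K)" using bcd_sub[OF KL] .
  have bD: "\<And>x. x \<in> bcd K \<Longrightarrow> x \<in> DS" using bcd_DS by blast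
  have Fadd: "F (x + y) = F x + F y" if "x \<in> bcd K" "y \<in> bcd K" for x y
    unfolding F_def using linear_on_add[OF TS_lin bD[OF that(1)] bD[OF that(2)]]
    by (simp add: scaleC_add_right algebra_simps)
  have Fscale: "F (c *\<^sub>C x) = c *\<^sub>C F x" if "x \<in> bcd K" for c x
    unfolding F_def using linear_on_scale[OF TS_lin bD[OF that]]
    by (simp add: scaleC_diff_right scaleC_scaleC mult.commute)
  have Fdiff: "F (x - y) = F x - F y" if "x \<in> bcd K" "y \<in> bcd K" for x y
    unfolding F_def using linear_on_diff[OF TS_lin bD[OF that(1)] bD[OF that(2)]]
    by (simp add: scaleC_diff_right algebra_simps)
  have F0: "F 0 = 0" unfolding F_def using linear_on_zero[OF TS_lin] by simp
  have estF: "Im l * xn x \<le> xn (F x)" if "x \<in> bcd K" for x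
    unfolding F_def by (rule est[OF bcd_dissip[OF K that] l])
  have csW: "X.csub W"
    unfolding X.csub_def
  proof (intro conjI allI impI)
    show "W \<subseteq> UNIV" by simp
    show "subspaceC W" unfolding subspaceC_def W_def
    proof (intro conjI allI ballI)
      show "0 \<in> F ` bcd K" using F0 subspaceC_zero[OF bs] by (metis image_eqI)
    next
      fix a b assume "a \<in> F ` bcd K" "b \<in> F ` bcd K"
      then obtain x y where "x \<in> bcd K" "y \<in> bcd K" "a = F x" "b = F y" by blast
      then show "a + b \<in> F ` bcd K" using Fadd subspaceC_add[OF bs] by (metis image_eqI)
    next
      fix c a assume "a \<in> F ` bcd K"
      then obtain x where "x \<in> bcd K" "a = F x" by blast
      then show "c *\<^sub>C a \<in> F ` bcd K" using Fscale subspaceC_scale[OF bs] by (metis image_eqI)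
    qed
    fix ys y assume a: "(\<forall>n. ys n \<in> W) \<and> y \<in> UNIV \<and> conv ipx ys y"
    have "\<exists>f. f \<in> bcd K \<and> F f = ys n" for n
    proof -
      have "ys n \<in> F ` bcd K" using a unfolding W_def by blast
      then obtain f where "f \<in> bcd K" "ys n = F f" by (rule imageE)
      then show ?thesis by auto
    qed
    then obtain fs where fs: "\<And>n. fs n \<in> bcd K" "\<And>n. F (fs n) = ys n" by metis
    have fsD: "\<And>n. fs n \<in> DS" using fs bD by blast
    have ysc: "cauchy ipx ys" by (rule X.conv_cauchy[of ys y]) (use a in auto)
    have fsc: "cauchy ipx fs"
      unfolding cauchy_def
    proof (intro allI impI)
      fix e :: real assume e: "e > 0"
      then have "e * Im l > 0" using l by simp
      then obtain N where N: "\<forall>m\<ge>N. \<forall>n\<ge>N. xn (ys m - ys n) < e * Im l"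
        using ysc unfolding cauchy_def by blast
      show "\<exists>N. \<forall>m\<ge>N. \<forall>n\<ge>N. xn (fs m - fs n) < e"
      proof (intro exI allI impI)
        fix m n assume mn: "m \<ge> N" "n \<ge> N"
        have d: "fs m - fs n \<in> bcd K" using subspaceC_diff[OF bs fs(1) fs(1)] .
        have "Im l * xn (fs m - fs n) \<le> xn (F (fs m - fs n))" by (rule estF[OF d])
        also have "F (fs m - fs n) = ys m - ys n" using Fdiff[OF fs(1) fs(1)] fs(2) by simp
        finally have "Im l * xn (fs m - fs n) < e * Im l" using N mn by fastforce
        then show "xn (fs m - fs n) < e" using l by (simp add: mult.commute)
      qed
    qed
    obtain f where cf: "conv ipx fs f" using X.complete[of fs] fsc by blast
    have TSfs: "TS (fs n) = ys n + l *\<^sub>C fs n" for n using fs(2)[of n] unfolding F_def by (simp add: algebra_simps)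
    have cT: "conv ipx (\<lambda>n. TS (fs n)) (y + l *\<^sub>C f)"
      unfolding TSfs by (rule X.conv_add) (use a cf X.conv_scale in auto)
    have fD: "f \<in> DS" and TSf: "TS f = y + l *\<^sub>C f" using TS_closed[OF fsD cf cT] by auto
    have cT': "conv ipx (\<lambda>n. TS (fs n)) (TS f)" using cT TSf by simp
    have "K (u f) + w f = 0"
    proof (rule B.ip_eq_zero_all')
      show "K (u f) + w f \<in> H" using contr_in[OF K u_in[OF fD]] w_in[OF fD] by simp
      fix h assume h: "h \<in> H"
      obtain z where z: "z \<in> H" "\<And>h'. h' \<in> H \<Longrightarrow> ipH (K h') h = ipH h' z" using Kadj[OF K h] by blast
      have l1: "(\<lambda>n. ipH (u (fs n)) z) \<longlonglongrightarrow> ipH (u f) z" by (rule weak_uw(1)[OF fsD fD cf cT' z(1)])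
      have l2: "(\<lambda>n. ipH (w (fs n)) h) \<longlonglongrightarrow> ipH (w f) h" by (rule weak_uw(2)[OF fsD fD cf cT' h])
      have "(\<lambda>n. ipH (u (fs n)) z + ipH (w (fs n)) h) \<longlonglongrightarrow> ipH (u f) z + ipH (w f) h"
        using l1 l2 by (rule tendsto_add)
      moreover have "ipH (u (fs n)) z + ipH (w (fs n)) h = 0" for n
      proof -
        have e0: "K (u (fs n)) + w (fs n) = 0" using fs(1)[of n] unfolding bcd_def by simp
        have "ipH (u (fs n)) z + ipH (w (fs n)) h = ipH (K (u (fs n))) h + ipH (w (fs n)) h"
          using z(2)[OF u_in[OF fsD]] by simp
        also have "\<dots> = ipH (K (u (fs n)) + w (fs n)) h"
          using B.ip_addL contr_in[OF K u_in[OF fsD]] w_in[OF fsD] h by simp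
        finally show ?thesis using e0 h by simp
      qed
      ultimately have "(\<lambda>n. 0::complex) \<longlonglongrightarrow> ipH (u f) z + ipH (w f) h" by simp
      then have "ipH (u f) z + ipH (w f) h = 0" by (simp add: LIMSEQ_const_iff)
      then have "ipH (K (u f)) h + ipH (w f) h = 0" using z(2)[OF u_in[OF fD]] by simp
      then show "ipH (K (u f) + w f) h = 0"
        using B.ip_addL contr_in[OF K u_in[OF fD]] w_in[OF fD] h by simp
    qed
    then have fb: "f \<in> bcd K" unfolding bcd_def using fD by simp
    have "F f = y" unfolding F_def using TSf by simp
    then show "y \<in> W" unfolding W_def using fb by blast
  qed
  have perp: "v = 0" if v0: "\<forall>y\<in>W. ipx y v = 0" for v
  proof -
    have A: "ipx (TS f) v = ipx f (cnj l *\<^sub>C v)" if f: "f \<in> bcd K" for f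
    proof -
      have "ipx (F f) v = 0" using v0 f unfolding W_def by blast
      then have "ipx (TS f) v - l * ipx f v = 0" unfolding F_def by (simp add: X.ip_diffL X.ip_scaleL)
      then show ?thesis by (simp add: X.ip_scaleR)
    qed
    have D0b: "D0 \<subseteq> bcd K" using D0_bcd[OF KL] .
    have vD: "v \<in> DS"
      unfolding adj_char
    proof (intro exI[of _ "cnj l *\<^sub>C v"] ballI)
      fix f assume f: "f \<in> D0"
      then have fb: "f \<in> bcd K" using D0b by blast
      show "ipx (T0 f) v = ipx f (cnj l *\<^sub>C v)" using A[OF fb] TS_T0[OF f] by simp
    qed
    have TSv: "TS v = cnj l *\<^sub>C v"
    proof (rule X.dense_ext[OF D0_dense])
      fix d assume d: "d \<in> D0"
      show "ipx d (TS v) = ipx d (cnj l *\<^sub>C v)"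
        using adj_val[OF vD d] A[of d] d D0b TS_T0[OF d] by (auto simp: subset_iff)
    qed auto
    have E: "ipH h (u v) = - ipH (K h) (w v)" if h: "h \<in> H" for h
    proof -
      have Kh: "- K h \<in> H" using contr_in[OF K h] by simp
      obtain f where f: "f \<in> DS" "u f = h" "w f = - K h" using surj[OF h Kh] by blast
      have fb: "f \<in> bcd K" unfolding bcd_def using f by simp
      have "ipx (TS f) v = ipx f (TS v)" using A[OF fb] TSv by simp
      then have "ipH (u f) (u v) = ipH (w f) (w v)" using green_sym[OF f(1) vD] by simp
      then show ?thesis using f B.ip_minusL contr_in[OF K h] w_in[OF vD] by simp
    qed
    have uv: "u v \<in> H" and wv: "w v \<in> H" using u_in[OF vD] w_in[OF vD] by auto
    have "(hn (u v))^2 = cmod (ipH (u v) (u v))" using B.ip_self[OF uv] by (simp add: norm_power)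
    also have "\<dots> = cmod (ipH (K (u v)) (w v))" using E[OF uv] by simp
    also have "\<dots> \<le> hn (K (u v)) * hn (w v)" by (rule B.cauchy_schwarz) (use contr_in[OF K uv] wv in auto)
    also have "\<dots> \<le> hn (u v) * hn (w v)" by (rule mult_right_mono[OF contr_le[OF K uv]]) (use wv in simp)
    finally have uw: "hn (u v) * hn (u v) \<le> hn (u v) * hn (w v)" by (simp add: power2_eq_square)
    have "hn (u v) \<le> hn (w v)"
    proof (cases "hn (u v) = 0")
      case True then show ?thesis using wv by simp
    next
      case False then have "hn (u v) > 0" using B.nrm_ge0[OF uv] by (simp add: less_le)
      then show ?thesis using uw by simp
    qed
    then have "(hn (u v))^2 \<le> (hn (w v))^2" by (rule power_mono) (use uv in simp)
    then have I1: "Im (ipx (TS v) v) \<ge> 0" using dissip_formula[OF vD] by simp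
    have "ipx (TS v) v = cnj l * complex_of_real ((xn v)^2)"
      unfolding TSv using X.ip_self[of v] by (simp add: X.ip_scaleL)
    then have "Im (ipx (TS v) v) = - Im l * (xn v)^2" by simp
    then have "Im l * (xn v)^2 \<le> 0" using I1 by simp
    then have "(xn v)^2 \<le> 0" using l by (simp add: mult_le_0_iff)
    then have "xn v = 0" by simp
    then show ?thesis using X.nrm_eq0[of v] by simp
  qed
  have "W = UNIV" by (rule X.full[OF csW]) (use perp in auto)
  then show ?thesis unfolding W_def F_def .
qed

lemma T1:
  assumes K: "contraction_on H ipH K"
  shows "extends_op D0 T0 (bcd K) TS \<and> m_dissipative ipx (bcd K) TS"
proof -
  have KL: "linear_on H K" using contr_lin[OF K] .
  have op: "operator (bcd K) TS"
    unfolding operator_def linear_on_def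
    using bcd_sub[OF KL] bcd_DS linear_on_add[OF TS_lin] linear_on_scale[OF TS_lin] by blast
  show ?thesis
  proof
    show "extends_op D0 T0 (bcd K) TS" unfolding extends_op_def using op D0_bcd[OF KL] TS_T0 by blast
    show "m_dissipative ipx (bcd K) TS"
      by (rule mdiss_intro[OF op]) (use bcd_dissip[OF K] bcd_range[OF K] in auto)
  qed
qed


lemma mdiss_cong:
  assumes m: "m_dissipative ipx D T" and op: "operator D T'" and e: "\<And>x. x \<in> D \<Longrightarrow> T' x = T x"
  shows "m_dissipative ipx D T'"
proof -
  have "bij_betw (\<lambda>x. T' x - l *\<^sub>C x) D UNIV = bij_betw (\<lambda>x. T x - l *\<^sub>C x) D UNIV" for l
    by (rule bij_betw_cong) (simp add: e)
  then show ?thesis using m op e unfolding m_dissipative_def in_resolvent_def by simp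
qed

lemma phillips:
  assumes ext: "extends_op D0 T0 D T" and dis: "\<And>f. f \<in> D \<Longrightarrow> Im (ipx (T f) f) \<le> 0"
    and f: "f \<in> D"
  shows "f \<in> DS \<and> T f = TS f"
proof -
  have lin: "linear_on D T" and D0D: "D0 \<subseteq> D" and TT0: "\<And>x. x \<in> D0 \<Longrightarrow> T x = T0 x"
    using ext unfolding extends_op_def operator_def by auto
  have Ds: "subspaceC D" using lin linear_on_sub by blast
  have key: "ipx (T f) g = ipx f (T0 g)" if g0: "g \<in> D0" for g
  proof (rule ccontr)
    define c where "c = ipx (T f) g - ipx f (T0 g)"
    assume "ipx (T f) g \<noteq> ipx f (T0 g)"
    then have c0: "c \<noteq> 0" unfolding c_def by simp
    have gD: "g \<in> D" using g0 D0D by blast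
    have gS: "g \<in> DS" using g0 D0_DS by blast
    define M where "M = - Im (ipx (T f) f)"
    define s where "s = (M + 1) / (cmod c)^2"
    define z where "z = - \<i> * complex_of_real s * c"
    have x: "f + z *\<^sub>C g \<in> D" using Ds f gD subspaceC_add subspaceC_scale by blast
    have Tx: "T (f + z *\<^sub>C g) = T f + z *\<^sub>C T0 g"
      using linear_on_add[OF lin f] linear_on_scale[OF lin gD] subspaceC_scale[OF Ds gD] TT0[OF g0] by simp
    have r: "Im (ipx (T0 g) g) = 0"
    proof -
      have "ipx (T0 g) g = ipx g (T0 g)" using adj_val[OF gS g0] TS_T0[OF g0] by simp
      also have "\<dots> = cnj (ipx (T0 g) g)" using X.ip_sym[of "T0 g" g] by simp
      finally show ?thesis by (metis cnj.simps(2) neg_equal_zero)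
    qed
    have exp: "ipx (T f + z *\<^sub>C T0 g) (f + z *\<^sub>C g) =
        ipx (T f) f + (cnj z * ipx (T f) g + z * ipx (T0 g) f) + (z * cnj z) * ipx (T0 g) g"
      by (simp add: X.ip_addL X.ip_addR X.ip_scaleL X.ip_scaleR algebra_simps)
    have sym2: "ipx (T0 g) f = cnj (ipx f (T0 g))" using X.ip_sym[of f "T0 g"] by simp
    have mid: "cnj z * ipx (T f) g + z * ipx (T0 g) f = cnj z * c + (cnj z * ipx f (T0 g) + cnj (cnj z * ipx f (T0 g)))"
      unfolding c_def sym2 by (simp add: algebra_simps)
    have "Im (cnj z * ipx f (T0 g) + cnj (cnj z * ipx f (T0 g))) = 0" by simp
    moreover have "Im ((z * cnj z) * ipx (T0 g) g) = 0"
    proof -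
      have "z * cnj z = complex_of_real ((cmod z)^2)" using complex_norm_square[of z] by simp
      then show ?thesis using r by simp
    qed
    moreover have "Im (cnj z * c) = s * (cmod c)^2"
    proof -
      have "cnj z * c = \<i> * complex_of_real s * (c * cnj c)" unfolding z_def by (simp add: algebra_simps)
      also have "c * cnj c = complex_of_real ((cmod c)^2)" using complex_norm_square[of c] by simp
      finally show ?thesis by simp
    qed
    moreover have "s * (cmod c)^2 = M + 1" unfolding s_def using c0 by simp
    ultimately have "Im (ipx (T (f + z *\<^sub>C g)) (f + z *\<^sub>C g)) = 1"
      unfolding Tx exp mid M_def by simp
    then show False using dis[OF x] by simp
  qed
  have fS: "f \<in> DS" unfolding adj_char
  proof (intro exI[of _ "T f"] ballI)
    fix g assume g0: "g \<in> D0"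
    show "ipx (T0 g) f = ipx g (T f)"
      using key[OF g0] X.ip_sym[of "T f" g] X.ip_sym[of "T0 g" f] by simp
  qed
  have "TS f = T f"
  proof (rule X.dense_ext[OF D0_dense])
    fix d assume d: "d \<in> D0"
    show "ipx d (TS f) = ipx d (T f)"
      using adj_val[OF fS d] key[OF d] X.ip_sym[of "T f" d] X.ip_sym[of "T0 d" f] by simp
  qed auto
  then show ?thesis using fS by simp
qed

lemma maximal:
  assumes m: "m_dissipative ipx D T" and DDS: "D \<subseteq> DS" and TT: "\<And>f. f \<in> D \<Longrightarrow> T f = TS f"
    and D's: "subspaceC D'" and DD': "D \<subseteq> D'" and D'DS: "D' \<subseteq> DS"
    and dis: "\<And>x. x \<in> D' \<Longrightarrow> Im (ipx (TS x) x) \<le> 0"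
  shows "D' \<subseteq> D"
proof
  fix x assume x: "x \<in> D'"
  have "Im \<i> > 0" by simp
  then obtain d where d: "d \<in> D" "T d - \<i> *\<^sub>C d = TS x - \<i> *\<^sub>C x" using mdiss_surj[OF m] by blast
  define y where "y = x - d"
  have yD': "y \<in> D'" unfolding y_def using x d DD' D's subspaceC_diff by blast
  have xS: "x \<in> DS" and dS: "d \<in> DS" using x d D'DS DDS by auto
  have "TS y = TS x - TS d" unfolding y_def using linear_on_diff[OF TS_lin xS dS] .
  moreover have e: "TS d - \<i> *\<^sub>C d = TS x - \<i> *\<^sub>C x" using d TT[OF d(1)] by simp
  have "TS x - TS d = \<i> *\<^sub>C x - \<i> *\<^sub>C d"
  proof -
    have "TS x - TS d = (TS x - \<i> *\<^sub>C x) + \<i> *\<^sub>C x - TS d" by simp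
    also have "\<dots> = (TS d - \<i> *\<^sub>C d) + \<i> *\<^sub>C x - TS d" using e by simp
    also have "\<dots> = \<i> *\<^sub>C x - \<i> *\<^sub>C d" by simp
    finally show ?thesis .
  qed
  ultimately have "TS y = \<i> *\<^sub>C y" unfolding y_def by (simp add: scaleC_diff_right)
  then have "Im (ipx (TS y) y) = (xn y)^2" using X.ip_self[of y] by (simp add: X.ip_scaleL)
  then have "(xn y)^2 \<le> 0" using dis[OF yD'] by simp
  then have "y = 0" using X.nrm_eq0[of y] by simp
  then show "x \<in> D" using d unfolding y_def by simp
qed

lemma dis_uw: "f \<in> DS \<Longrightarrow> Im (ipx (TS f) f) \<le> 0 \<longleftrightarrow> hn (w f) \<le> hn (u f)"
proof -
  assume f: "f \<in> DS"
  have e: "Im (ipx (TS f) f) = ((hn (w f))^2 - (hn (u f))^2) / 4" by (rule dissip_formula[OF f])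
  have "Im (ipx (TS f) f) \<le> 0 \<longleftrightarrow> (hn (w f))^2 \<le> (hn (u f))^2"
  proof
    assume "Im (ipx (TS f) f) \<le> 0" then show "(hn (w f))^2 \<le> (hn (u f))^2" using e by (simp add: divide_le_0_iff)
  next
    assume "(hn (w f))^2 \<le> (hn (u f))^2" then show "Im (ipx (TS f) f) \<le> 0" using e by (simp add: divide_le_0_iff)
  qed
  also have "\<dots> \<longleftrightarrow> hn (w f) \<le> hn (u f)"
    using B.nrm_ge0[OF w_in[OF f]] B.nrm_ge0[OF u_in[OF f]] by (simp add: power2_le_iff_abs_le)
  finally show ?thesis .
qed

lemma augment:
  assumes m: "m_dissipative ipx D T" and DDS: "D \<subseteq> DS" and TT: "\<And>f. f \<in> D \<Longrightarrow> T f = TS f"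
    and p: "p \<in> DS" and cond: "\<And>f c. f \<in> D \<Longrightarrow> hn (w f + c *\<^sub>C w p) \<le> hn (u f + c *\<^sub>C u p)"
  shows "p \<in> D"
proof -
  have lin: "linear_on D T" using m unfolding m_dissipative_def operator_def by blast
  have Ds: "subspaceC D" using lin linear_on_sub by blast
  define D' where "D' = {f + c *\<^sub>C p | f c. f \<in> D}"
  have D's: "subspaceC D'" unfolding subspaceC_def
  proof (intro conjI allI ballI)
    show "0 \<in> D'" unfolding D'_def using subspaceC_zero[OF Ds]
      by (intro CollectI exI[of _ 0] exI[of _ "0::complex"]) simp
  next
    fix a b assume "a \<in> D'" "b \<in> D'"
    then obtain f1 c1 f2 c2 where "f1 \<in> D" "f2 \<in> D" "a = f1 + c1 *\<^sub>C p" "b = f2 + c2 *\<^sub>C p"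
      unfolding D'_def by blast
    then show "a + b \<in> D'" unfolding D'_def using subspaceC_add[OF Ds]
      by (intro CollectI exI[of _ "f1 + f2"] exI[of _ "c1 + c2"]) (simp add: scaleC_add_left algebra_simps)
  next
    fix c a assume "a \<in> D'"
    then obtain f1 c1 where "f1 \<in> D" "a = f1 + c1 *\<^sub>C p" unfolding D'_def by blast
    then show "c *\<^sub>C a \<in> D'" unfolding D'_def using subspaceC_scale[OF Ds]
      by (intro CollectI exI[of _ "c *\<^sub>C f1"] exI[of _ "c * c1"]) (simp add: scaleC_add_right scaleC_scaleC)
  qed
  have DD': "D \<subseteq> D'" unfolding D'_def by (force intro: exI[of _ "0::complex"])
  have D'DS: "D' \<subseteq> DS" unfolding D'_def using DDS p DS_sub subspaceC_add subspaceC_scale by blast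
  have "D' \<subseteq> D"
  proof (rule maximal[OF m DDS TT D's DD' D'DS])
    fix x assume "x \<in> D'"
    then obtain f c where fc: "f \<in> D" "x = f + c *\<^sub>C p" unfolding D'_def by blast
    have fS: "f \<in> DS" using fc DDS by blast
    have xS: "x \<in> DS" using fc(2) fS p DS_sub subspaceC_add subspaceC_scale by metis
    have "u x = u f + c *\<^sub>C u p" "w x = w f + c *\<^sub>C w p"
      unfolding fc(2) using linear_on_add[OF u_lin fS] linear_on_add[OF w_lin fS] linear_on_scale[OF u_lin p]
        linear_on_scale[OF w_lin p] subspaceC_scale[OF DS_sub p] by auto
    then have "hn (w x) \<le> hn (u x)" using cond[OF fc(1)] by simp
    then show "Im (ipx (TS x) x) \<le> 0" using dis_uw[OF xS] by simp
  qed
  moreover have "p \<in> D'" unfolding D'_def using subspaceC_zero[OF Ds]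
    by (intro CollectI exI[of _ 0] exI[of _ "1::complex"]) (simp add: scaleC_one)
  ultimately show ?thesis by blast
qed


lemma T2:
  assumes ext: "extends_op D0 T0 D T" and m: "m_dissipative ipx D T"
  shows "\<exists>K. contraction_on H ipH K \<and> D = bcd K \<and> (\<forall>\<psi>\<in>D. T \<psi> = TS \<psi>)"
proof -
  have dis: "\<And>f. f \<in> D \<Longrightarrow> Im (ipx (T f) f) \<le> 0" using mdiss_dissip[OF m] by blast
  have DDS: "D \<subseteq> DS" and TT: "\<And>f. f \<in> D \<Longrightarrow> T f = TS f" using phillips[OF ext dis] by auto
  have lin: "linear_on D T" using m unfolding m_dissipative_def operator_def by blast
  have Ds: "subspaceC D" using lin linear_on_sub by blast
  have fS: "\<And>f. f \<in> D \<Longrightarrow> f \<in> DS" using DDS by blast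
  have duw: "hn (w f) \<le> hn (u f)" if f: "f \<in> D" for f
    using dis[OF f] TT[OF f] dis_uw[OF fS[OF f]] by simp
  define U where "U = u ` D"
  have UH: "U = H"
  proof (rule B.full)
    show "B.csub U" unfolding B.csub_def
    proof (intro conjI allI impI)
      show "U \<subseteq> H" unfolding U_def using u_in fS by blast
      show "subspaceC U" unfolding subspaceC_def U_def
      proof (intro conjI allI ballI)
        show "0 \<in> u ` D" using subspaceC_zero[OF Ds] linear_on_zero[OF u_lin] by (metis image_eqI)
      next
        fix a b assume "a \<in> u ` D" "b \<in> u ` D"
        then obtain x y where xy: "x \<in> D" "y \<in> D" "a = u x" "b = u y" by blast
        then have "a + b = u (x + y)" using linear_on_add[OF u_lin fS[OF xy(1)] fS[OF xy(2)]] by simp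
        then show "a + b \<in> u ` D" using subspaceC_add[OF Ds xy(1) xy(2)] by blast
      next
        fix c a assume "a \<in> u ` D"
        then obtain x where x: "x \<in> D" "a = u x" by blast
        then have "c *\<^sub>C a = u (c *\<^sub>C x)" using linear_on_scale[OF u_lin fS[OF x(1)]] by simp
        then show "c *\<^sub>C a \<in> u ` D" using subspaceC_scale[OF Ds x(1)] by blast
      qed
      fix ys h assume a: "(\<forall>n. ys n \<in> U) \<and> h \<in> H \<and> conv ipH ys h"
      have "\<exists>f. f \<in> D \<and> u f = ys n" for n
      proof -
        have "ys n \<in> u ` D" using a unfolding U_def by blast
        then obtain f where "f \<in> D" "ys n = u f" by (rule imageE)
        then show ?thesis by auto
      qed
      then obtain fs where fs: "\<And>n. fs n \<in> D" "\<And>n. u (fs n) = ys n" by metis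
      have ysH: "\<And>n. ys n \<in> H" using fs u_in fS by metis
      have ysc: "cauchy ipH ys" by (rule B.conv_cauchy[of ys h]) (use a ysH in auto)
      have wfs: "\<And>n. w (fs n) \<in> H" using fs w_in fS by blast
      have wc: "cauchy ipH (\<lambda>n. w (fs n))"
        unfolding cauchy_def
      proof (intro allI impI)
        fix e :: real assume e: "e > 0"
        then obtain N where N: "\<forall>m\<ge>N. \<forall>n\<ge>N. hn (ys m - ys n) < e"
          using ysc unfolding cauchy_def by blast
        show "\<exists>N. \<forall>m\<ge>N. \<forall>n\<ge>N. hn (w (fs m) - w (fs n)) < e"
        proof (intro exI allI impI)
          fix m n assume mn: "m \<ge> N" "n \<ge> N"
          have d: "fs m - fs n \<in> D" using subspaceC_diff[OF Ds fs(1) fs(1)] .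
          have "hn (w (fs m) - w (fs n)) = hn (w (fs m - fs n))"
            using linear_on_diff[OF w_lin fS[OF fs(1)] fS[OF fs(1)]] by simp
          also have "\<dots> \<le> hn (u (fs m - fs n))" by (rule duw[OF d])
          also have "\<dots> = hn (ys m - ys n)"
            using linear_on_diff[OF u_lin fS[OF fs(1)] fS[OF fs(1)]] fs(2) by simp
          finally show "hn (w (fs m) - w (fs n)) < e" using N mn by fastforce
        qed
      qed
      obtain k where k: "k \<in> H" "conv ipH (\<lambda>n. w (fs n)) k" using B.complete[OF wfs wc] by blast
      obtain p where p: "p \<in> DS" "u p = h" "w p = k" using surj[of h k] a k by blast
      have "p \<in> D"
      proof (rule augment[OF m DDS TT p(1)])
        fix f c assume f: "f \<in> D"
        have fsf: "f + c *\<^sub>C fs n \<in> D" for n using Ds f fs(1) subspaceC_add subspaceC_scale by blast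
        have b: "hn (w f + c *\<^sub>C w (fs n)) \<le> hn (u f + c *\<^sub>C ys n)" for n
        proof -
          have "hn (w (f + c *\<^sub>C fs n)) \<le> hn (u (f + c *\<^sub>C fs n))" by (rule duw[OF fsf])
          moreover have "w (f + c *\<^sub>C fs n) = w f + c *\<^sub>C w (fs n)" "u (f + c *\<^sub>C fs n) = u f + c *\<^sub>C ys n"
            using linear_on_add[OF w_lin fS[OF f]] linear_on_add[OF u_lin fS[OF f]]
              linear_on_scale[OF w_lin fS[OF fs(1)]] linear_on_scale[OF u_lin fS[OF fs(1)]]
              subspaceC_scale[OF DS_sub fS[OF fs(1)]] fs(2) by auto
          ultimately show ?thesis by simp
        qed
        have wfH: "w f \<in> H" and ufH: "u f \<in> H" using w_in u_in fS[OF f] by auto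
        have l1: "(\<lambda>n. hn (w f + c *\<^sub>C w (fs n))) \<longlonglongrightarrow> hn (w f + c *\<^sub>C k)"
          by (rule B.conv_nrm) (use wfH wfs k B.conv_add[OF _ _ _ _ B.conv_const B.conv_scale[OF wfs k(1) k(2)]] in auto)
        have l2: "(\<lambda>n. hn (u f + c *\<^sub>C ys n)) \<longlonglongrightarrow> hn (u f + c *\<^sub>C h)"
          by (rule B.conv_nrm) (use ufH ysH a B.conv_add[OF _ _ _ _ B.conv_const B.conv_scale[OF ysH, of h]] in auto)
        have "hn (w f + c *\<^sub>C k) \<le> hn (u f + c *\<^sub>C h)"
          by (rule LIMSEQ_le[OF l1 l2]) (use b in auto)
        then show "hn (w f + c *\<^sub>C w p) \<le> hn (u f + c *\<^sub>C u p)" using p by simp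
      qed
      then show "h \<in> U" unfolding U_def using p by blast
    qed
  next
    fix v assume v: "v \<in> H" and perp: "\<forall>y\<in>U. ipH y v = 0"
    obtain p where p: "p \<in> DS" "u p = v" "w p = 0" using surj[OF v B.zero_in] by blast
    have "p \<in> D"
    proof (rule augment[OF m DDS TT p(1)])
      fix f c assume f: "f \<in> D"
      have ufH: "u f \<in> H" using u_in fS[OF f] by blast
      have o: "ipH (u f) v = 0" using perp f unfolding U_def by blast
      have "(hn (u f + c *\<^sub>C v))^2 = (hn (u f))^2 + (hn (c *\<^sub>C v))^2 + 2 * Re (ipH (u f) (c *\<^sub>C v))"
        by (rule B.nrm_add_sq) (use ufH v in auto)
      also have "ipH (u f) (c *\<^sub>C v) = 0" using o B.ip_scaleR[OF ufH v] by simp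
      finally have "(hn (u f))^2 \<le> (hn (u f + c *\<^sub>C v))^2" by simp
      then have "hn (u f) \<le> hn (u f + c *\<^sub>C v)"
        by (rule power2_le_imp_le) (use ufH v in simp)
      then show "hn (w f + c *\<^sub>C w p) \<le> hn (u f + c *\<^sub>C u p)" using duw[OF f] p by simp
    qed
    then have "v \<in> U" unfolding U_def using p by blast
    then have "ipH v v = 0" using perp by blast
    then show "v = 0" using B.ip_self_zero v by blast
  qed
  have wd: "w f = w g" if f: "f \<in> D" and g: "g \<in> D" and e: "u f = u g" for f g
  proof -
    have d: "f - g \<in> D" using subspaceC_diff[OF Ds f g] .
    have "u (f - g) = 0" using linear_on_diff[OF u_lin fS[OF f] fS[OF g]] e by simp
    then have "hn (w (f - g)) \<le> 0" using duw[OF d] by simp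
    then have "w (f - g) = 0" using B.nrm_eq0[OF w_in[OF fS[OF d]]] B.nrm_ge0[OF w_in[OF fS[OF d]]] by simp
    then show ?thesis using linear_on_diff[OF w_lin fS[OF f] fS[OF g]] by simp
  qed
  define K where "K h = - w (SOME f. f \<in> D \<and> u f = h)" for h
  have Ku: "K (u f) = - w f" if f: "f \<in> D" for f
  proof -
    have "\<exists>g. g \<in> D \<and> u g = u f" using f by blast
    then have "(SOME g. g \<in> D \<and> u g = u f) \<in> D \<and> u (SOME g. g \<in> D \<and> u g = u f) = u f" by (rule someI_ex)
    then show ?thesis unfolding K_def using wd f by metis
  qed
  have ex: "\<exists>f\<in>D. u f = h" if "h \<in> H" for h using that UH unfolding U_def by blast
  have Kc: "contraction_on H ipH K"
    unfolding contraction_on_def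
  proof (intro conjI ballI subsetI)
    show "linear_on H K" unfolding linear_on_def
    proof (intro conjI allI ballI)
      show "subspaceC H" by (rule B.sub)
    next
      fix x y assume "x \<in> H" "y \<in> H"
      then obtain f g where fg: "f \<in> D" "g \<in> D" "u f = x" "u g = y" using ex by metis
      have "x + y = u (f + g)" using fg linear_on_add[OF u_lin fS[OF fg(1)] fS[OF fg(2)]] by simp
      then have "K (x + y) = - w (f + g)" using Ku subspaceC_add[OF Ds fg(1) fg(2)] by simp
      also have "\<dots> = K x + K y" using fg Ku linear_on_add[OF w_lin fS[OF fg(1)] fS[OF fg(2)]] by auto
      finally show "K (x + y) = K x + K y" .
    next
      fix c x assume "x \<in> H"
      then obtain f where f: "f \<in> D" "u f = x" using ex by metis
      have "c *\<^sub>C x = u (c *\<^sub>C f)" using f linear_on_scale[OF u_lin fS[OF f(1)]] by simp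
      then have "K (c *\<^sub>C x) = - w (c *\<^sub>C f)" using Ku subspaceC_scale[OF Ds f(1)] by simp
      also have "\<dots> = c *\<^sub>C K x" using f Ku[OF f(1)] linear_on_scale[OF w_lin fS[OF f(1)]] by (simp add: scaleC_minus_right)
      finally show "K (c *\<^sub>C x) = c *\<^sub>C K x" .
    qed
  next
    fix y assume "y \<in> K ` H"
    then obtain x where "x \<in> H" "y = K x" by blast
    then obtain f where f: "f \<in> D" "u f = x" using ex by metis
    then show "y \<in> H" using \<open>y = K x\<close> Ku w_in fS by auto
  next
    fix x assume "x \<in> H"
    then obtain f where f: "f \<in> D" "u f = x" using ex by metis
    then show "hn (K x) \<le> hn x" using Ku[OF f(1)] duw[OF f(1)] B.nrm_minus w_in fS by auto
  qed
  have Db: "D \<subseteq> bcd K" unfolding bcd_def using fS Ku by fastforce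
  have "bcd K \<subseteq> D"
    by (rule maximal[OF m DDS TT bcd_sub[OF contr_lin[OF Kc]] Db bcd_DS]) (auto intro: bcd_dissip[OF Kc])
  then have "D = bcd K" using Db by blast
  then show ?thesis using Kc TT by blast
qed

lemma uniq:
  assumes K1: "contraction_on H ipH K1" and K2: "contraction_on H ipH K2" and e: "bcd K1 = bcd K2"
    and h: "h \<in> H"
  shows "K1 h = K2 h"
proof -
  have "- K1 h \<in> H" using contr_in[OF K1 h] by simp
  then obtain p where p: "p \<in> DS" "u p = h" "w p = - K1 h" using surj[OF h] by blast
  then have "p \<in> bcd K1" unfolding bcd_def by simp
  then have "p \<in> bcd K2" using e by simp
  then have "K2 h + - K1 h = 0" using p unfolding bcd_def by simp
  then show ?thesis by (simp add: eq_neg_iff_add_eq_0[symmetric])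
qed


lemma bcd_par: "contraction_on H ipH K \<Longrightarrow> h \<in> H \<Longrightarrow> \<exists>f\<in>bcd K. u f = h"
proof -
  assume K: "contraction_on H ipH K" and h: "h \<in> H"
  have "- K h \<in> H" using contr_in[OF K h] by simp
  then obtain p where p: "p \<in> DS" "u p = h" "w p = - K h" using surj[OF h] by blast
  then have "p \<in> bcd K" unfolding bcd_def by simp
  then show ?thesis using p by blast
qed

lemma bcd_w: "f \<in> bcd K \<Longrightarrow> w f = - K (u f)"
  unfolding bcd_def by (auto simp: eq_neg_iff_add_eq_0 add.commute)

lemma bcd_dense: "linear_on H K \<Longrightarrow> dense_in ipx (bcd K) UNIV"
  using D0_bcd[of K] D0_dense unfolding dense_in_def by blast

lemma T4:
  assumes K: "contraction_on H ipH K"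
  shows "selfadjoint_op ipx (bcd K) TS \<longleftrightarrow> unitary_on H ipH K"
proof
  have KL: "linear_on H K" using contr_lin[OF K] .
  have bS: "\<And>f. f \<in> bcd K \<Longrightarrow> f \<in> DS" using bcd_DS by blast
  assume sa: "selfadjoint_op ipx (bcd K) TS"
  have sym: "\<And>f g. f \<in> bcd K \<Longrightarrow> g \<in> bcd K \<Longrightarrow> ipx (TS f) g = ipx f (TS g)"
    and adjD: "adj_dom ipx (bcd K) TS = bcd K"
    using sa unfolding selfadjoint_op_def symmetric_op_def by auto
  have iso: "ipH (K h1) (K h2) = ipH h1 h2" if h1: "h1 \<in> H" and h2: "h2 \<in> H" for h1 h2
  proof -
    obtain f where f: "f \<in> bcd K" "u f = h1" using bcd_par[OF K h1] by blast
    obtain g where g: "g \<in> bcd K" "u g = h2" using bcd_par[OF K h2] by blast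
    have "ipH (u f) (u g) = ipH (w f) (w g)" using sym[OF f(1) g(1)] green_sym[OF bS[OF f(1)] bS[OF g(1)]] by simp
    then show ?thesis using f g bcd_w[OF f(1)] bcd_w[OF g(1)] B.ip_minusL B.ip_minusR contr_in[OF K] h1 h2 by simp
  qed
  have inj: "inj_on K H"
  proof (rule inj_onI)
    fix x y assume x: "x \<in> H" and y: "y \<in> H" and e: "K x = K y"
    have "K (x - y) = 0" using linear_on_diff[OF KL x y] e by simp
    then have "ipH (x - y) (x - y) = 0" using iso[of "x - y" "x - y"] x y by simp
    then show "x = y" using B.ip_self_zero[of "x - y"] x y by simp
  qed
  have onto: "K ` H = H"
  proof
    show "K ` H \<subseteq> H" using contr_in[OF K] by blast
    show "H \<subseteq> K ` H"
    proof
      fix k assume k: "k \<in> H"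
      obtain z where z: "z \<in> H" "\<And>h. h \<in> H \<Longrightarrow> ipH (K h) k = ipH h z" using Kadj[OF K k] by blast
      have mk: "- k \<in> H" using k by simp
      obtain p where p: "p \<in> DS" "u p = z" "w p = - k" using surj[OF z(1) mk] by blast
      have "p \<in> adj_dom ipx (bcd K) TS"
        unfolding adj_dom_def
      proof (intro CollectI exI[of _ "TS p"] ballI)
        fix f assume f: "f \<in> bcd K"
        have uf: "u f \<in> H" using u_in bS[OF f] by blast
        have "ipH (u f) (u p) = ipH (w f) (w p)"
          using p bcd_w[OF f] z(2)[OF uf] B.ip_minusL B.ip_minusR contr_in[OF K uf] k by simp
        then show "ipx (TS f) p = ipx f (TS p)" using green_sym[OF bS[OF f] p(1)] by simp
      qed
      then have "p \<in> bcd K" using adjD by simp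
      then have "K z = k" using bcd_w p by (metis minus_equation_iff)
      then show "k \<in> K ` H" using z(1) by blast
    qed
  qed
  show "unitary_on H ipH K" unfolding unitary_on_def bij_betw_def using KL inj onto iso by blast
next
  have KL: "linear_on H K" using contr_lin[OF K] .
  have bS: "\<And>f. f \<in> bcd K \<Longrightarrow> f \<in> DS" using bcd_DS by blast
  assume un: "unitary_on H ipH K"
  have iso: "\<And>h1 h2. h1 \<in> H \<Longrightarrow> h2 \<in> H \<Longrightarrow> ipH (K h1) (K h2) = ipH h1 h2"
    and onto: "K ` H = H" using un unfolding unitary_on_def bij_betw_def by auto
  have sym: "ipx (TS f) g = ipx f (TS g)" if f: "f \<in> bcd K" and g: "g \<in> bcd K" for f g
  proof -
    have uf: "u f \<in> H" and ug: "u g \<in> H" using u_in bS f g by auto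
    have "ipH (u f) (u g) = ipH (w f) (w g)"
      using bcd_w[OF f] bcd_w[OF g] iso[OF uf ug] B.ip_minusL B.ip_minusR contr_in[OF K] uf ug by simp
    then show ?thesis using green_sym[OF bS[OF f] bS[OF g]] by simp
  qed
  have adjD: "adj_dom ipx (bcd K) TS = bcd K"
  proof
    show "bcd K \<subseteq> adj_dom ipx (bcd K) TS" unfolding adj_dom_def using sym by blast
    show "adj_dom ipx (bcd K) TS \<subseteq> bcd K"
    proof
      fix g assume "g \<in> adj_dom ipx (bcd K) TS"
      then obtain h where h: "\<And>f. f \<in> bcd K \<Longrightarrow> ipx (TS f) g = ipx f h" unfolding adj_dom_def by blast
      have D0b: "D0 \<subseteq> bcd K" using D0_bcd[OF KL] .
      have gS: "g \<in> DS" unfolding adj_char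
      proof (intro exI[of _ h] ballI)
        fix f assume f: "f \<in> D0"
        then have fb: "f \<in> bcd K" using D0b by blast
        show "ipx (T0 f) g = ipx f h" using h[OF fb] TS_T0[OF f] by simp
      qed
      have TSg: "TS g = h"
      proof (rule X.dense_ext[OF D0_dense])
        fix d assume d: "d \<in> D0"
        then have db: "d \<in> bcd K" using D0b by blast
        show "ipx d (TS g) = ipx d h" using adj_val[OF gS d] h[OF db] TS_T0[OF d] by simp
      qed auto
      have ug: "u g \<in> H" and wg: "w g \<in> H" using u_in w_in gS by auto
      have E: "ipH (K x) (K (u g) + w g) = 0" if x: "x \<in> H" for x
      proof -
        obtain f where f: "f \<in> bcd K" "u f = x" using bcd_par[OF K x] by blast
        have "ipx (TS f) g = ipx f (TS g)" using h[OF f(1)] TSg by simp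
        then have "ipH (u f) (u g) = ipH (w f) (w g)" using green_sym[OF bS[OF f(1)] gS] by simp
        then have "ipH x (u g) = - ipH (K x) (w g)"
          using f bcd_w[OF f(1)] B.ip_minusL contr_in[OF K x] wg by simp
        then have "ipH (K x) (K (u g)) + ipH (K x) (w g) = 0" using iso[OF x ug] by simp
        then show ?thesis using B.ip_addR contr_in[OF K] x ug wg by simp
      qed
      have kH: "K (u g) + w g \<in> H" using contr_in[OF K ug] wg by simp
      then obtain x where x: "x \<in> H" "K x = K (u g) + w g" using onto by (metis imageE)
      have "ipH (K (u g) + w g) (K (u g) + w g) = 0" using E[OF x(1)] x(2) by simp
      then have "K (u g) + w g = 0" using B.ip_self_zero kH by blast
      then show "g \<in> bcd K" unfolding bcd_def using gS by simp
    qed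
  qed
  show "selfadjoint_op ipx (bcd K) TS"
    unfolding selfadjoint_op_def symmetric_op_def using bcd_dense[OF KL] sym adjD by blast
qed

theorem main:
  "(\<forall>D T. extends_op D0 T0 D T \<longrightarrow>
        (m_dissipative ipx D T \<longleftrightarrow>
          (\<exists>K. contraction_on H ipH K \<and> D = bcd K \<and> (\<forall>\<psi>\<in>D. T \<psi> = TS \<psi>))))
     \<and> (\<forall>K. contraction_on H ipH K \<longrightarrow> extends_op D0 T0 (bcd K) TS \<and> m_dissipative ipx (bcd K) TS)
     \<and> (\<forall>K1 K2. contraction_on H ipH K1 \<and> contraction_on H ipH K2 \<and> bcd K1 = bcd K2
          \<longrightarrow> (\<forall>h\<in>H. K1 h = K2 h))
     \<and> (\<forall>K. contraction_on H ipH K \<longrightarrow> (selfadjoint_op ipx (bcd K) TS \<longleftrightarrow> unitary_on H ipH K))"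
proof (intro conjI allI impI)
  fix D T assume ext: "extends_op D0 T0 D T"
  show "m_dissipative ipx D T \<longleftrightarrow> (\<exists>K. contraction_on H ipH K \<and> D = bcd K \<and> (\<forall>\<psi>\<in>D. T \<psi> = TS \<psi>))"
  proof
    assume "m_dissipative ipx D T"
    then show "\<exists>K. contraction_on H ipH K \<and> D = bcd K \<and> (\<forall>\<psi>\<in>D. T \<psi> = TS \<psi>)" using T2[OF ext] by blast
  next
    assume "\<exists>K. contraction_on H ipH K \<and> D = bcd K \<and> (\<forall>\<psi>\<in>D. T \<psi> = TS \<psi>)"
    then obtain K where K: "contraction_on H ipH K" "D = bcd K" "\<forall>\<psi>\<in>D. T \<psi> = TS \<psi>" by blast
    have op: "operator D T" using ext unfolding extends_op_def by blast
    show "m_dissipative ipx D T"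
      using mdiss_cong[of "bcd K" TS T] T1[OF K(1)] op K by simp
  qed
next
  fix K assume K: "contraction_on H ipH K"
  show "extends_op D0 T0 (bcd K) TS" "m_dissipative ipx (bcd K) TS" using T1[OF K] by auto
  show "selfadjoint_op ipx (bcd K) TS \<longleftrightarrow> unitary_on H ipH K" by (rule T4[OF K])
next
  fix K1 K2 assume "contraction_on H ipH K1 \<and> contraction_on H ipH K2 \<and> bcd K1 = bcd K2"
  then show "\<forall>h\<in>H. K1 h = K2 h" using uniq by blast
qed

end


lemma fst_scaleC[simp]: "fst (c *\<^sub>C p) = c *\<^sub>C fst p" by (simp add: scaleC_prod_def)
lemma snd_scaleC[simp]: "snd (c *\<^sub>C p) = c *\<^sub>C snd p" by (simp add: scaleC_prod_def)
lemma pair_scaleC: "c *\<^sub>C (a, b) = (c *\<^sub>C a, c *\<^sub>C b)" by (simp add: scaleC_prod_def)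

lemma ip2_ips: "inner_product_on (UNIV::'x::cvec set) ip \<Longrightarrow> inner_product_on (UNIV::('x \<times> 'x) set) (ip2 ip)"
proof -
  assume a: "inner_product_on (UNIV::'x set) ip"
  interpret I: ips "UNIV::'x set" ip by (unfold_locales) (rule a)
  show ?thesis unfolding inner_product_on_def
  proof (intro conjI ballI allI impI)
    show "subspaceC (UNIV::('x \<times> 'x) set)" by (rule subspaceC_UNIV)
    fix x y z :: "'x \<times> 'x"
    show "ip2 ip (x + y) z = ip2 ip x z + ip2 ip y z" unfolding ip2_def by (simp add: I.ip_addL)
    show "ip2 ip y x = cnj (ip2 ip x y)" unfolding ip2_def
      using I.ip_sym[of "fst x" "fst y"] I.ip_sym[of "snd x" "snd y"] by simp
    fix c :: complex
    show "ip2 ip (c *\<^sub>C x) y = c * ip2 ip x y" unfolding ip2_def by (simp add: I.ip_scaleL algebra_simps)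
  next
    fix x :: "'x \<times> 'x"
    show "0 \<le> Re (ip2 ip x x)" unfolding ip2_def using I.ip_self_Re by simp
    show "Im (ip2 ip x x) = 0" unfolding ip2_def using I.ip_self_Im by simp
    assume z: "ip2 ip x x = 0"
    have r1: "Re (ip (fst x) (fst x)) \<ge> 0" "Re (ip (snd x) (snd x)) \<ge> 0" using I.ip_self_Re by auto
    have "Re (ip (fst x) (fst x)) + Re (ip (snd x) (snd x)) = 0" using arg_cong[OF z, of Re] unfolding ip2_def by simp
    then have "Re (ip (fst x) (fst x)) = 0" "Re (ip (snd x) (snd x)) = 0" using r1 by linarith+
    then have "ip (fst x) (fst x) = 0" "ip (snd x) (snd x) = 0" using I.ip_self_Im by (auto simp: complex_eq_iff)
    then have "fst x = 0" "snd x = 0" using I.ip_self_zero by auto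
    then show "x = 0" by (simp add: prod_eq_iff)
  qed
qed

lemma nrm2_sq: "inner_product_on (UNIV::'x::cvec set) ip \<Longrightarrow>
  (nrm (ip2 ip) x)^2 = (nrm ip (fst x))^2 + (nrm ip (snd x))^2"
proof -
  assume a: "inner_product_on (UNIV::'x set) ip"
  interpret I: ips "UNIV::'x set" ip by (unfold_locales) (rule a)
  interpret I2: ips "UNIV::('x \<times> 'x) set" "ip2 ip" by (unfold_locales) (rule ip2_ips[OF a])
  show ?thesis using I2.nrm_sq[of x] I.nrm_sq[of "fst x"] I.nrm_sq[of "snd x"] unfolding ip2_def by simp
qed

lemma ip2_hs: "hilbert_on (UNIV::'x::cvec set) ip \<Longrightarrow> hs (UNIV::('x \<times> 'x) set) (ip2 ip)"
proof -
  assume a: "hilbert_on (UNIV::'x set) ip"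
  interpret I: hs "UNIV::'x set" ip by (rule hilbert_hs[OF a])
  have ipo: "inner_product_on (UNIV::'x set) ip" using a unfolding hilbert_on_def by blast
  interpret I2: ips "UNIV::('x \<times> 'x) set" "ip2 ip" by (unfold_locales) (rule ip2_ips[OF ipo])
  have c1: "nrm ip (fst x) \<le> nrm (ip2 ip) x" and c2: "nrm ip (snd x) \<le> nrm (ip2 ip) x" for x :: "'x \<times> 'x"
  proof -
    have "(nrm ip (fst x))^2 \<le> (nrm (ip2 ip) x)^2" "(nrm ip (snd x))^2 \<le> (nrm (ip2 ip) x)^2"
      using nrm2_sq[OF ipo, of x] by auto
    then show "nrm ip (fst x) \<le> nrm (ip2 ip) x" "nrm ip (snd x) \<le> nrm (ip2 ip) x"
      by (auto intro: power2_le_imp_le)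
  qed
  have c3: "nrm (ip2 ip) x \<le> nrm ip (fst x) + nrm ip (snd x)" for x :: "'x \<times> 'x"
  proof -
    have "(nrm (ip2 ip) x)^2 \<le> (nrm ip (fst x) + nrm ip (snd x))^2"
      using nrm2_sq[OF ipo, of x] I.nrm_ge0[of "fst x"] I.nrm_ge0[of "snd x"] by (simp add: power2_sum)
    then show ?thesis by (rule power2_le_imp_le) (simp add: add_nonneg_nonneg)
  qed
  show ?thesis
  proof (unfold_locales)
    fix xs :: "nat \<Rightarrow> 'x \<times> 'x" assume cs: "cauchy (ip2 ip) xs"
    have cf: "cauchy ip (\<lambda>n. fst (xs n))" unfolding cauchy_def
    proof (intro allI impI)
      fix e :: real assume "e > 0"
      then obtain N where N: "\<forall>m\<ge>N. \<forall>n\<ge>N. nrm (ip2 ip) (xs m - xs n) < e" using cs unfolding cauchy_def by blast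
      show "\<exists>N. \<forall>m\<ge>N. \<forall>n\<ge>N. nrm ip (fst (xs m) - fst (xs n)) < e"
      proof (intro exI[of _ N] allI impI)
        fix m n assume "m \<ge> N" "n \<ge> N"
        then show "nrm ip (fst (xs m) - fst (xs n)) < e" using N c1[of "xs m - xs n"] by fastforce
      qed
    qed
    have cs2: "cauchy ip (\<lambda>n. snd (xs n))" unfolding cauchy_def
    proof (intro allI impI)
      fix e :: real assume "e > 0"
      then obtain N where N: "\<forall>m\<ge>N. \<forall>n\<ge>N. nrm (ip2 ip) (xs m - xs n) < e" using cs unfolding cauchy_def by blast
      show "\<exists>N. \<forall>m\<ge>N. \<forall>n\<ge>N. nrm ip (snd (xs m) - snd (xs n)) < e"
      proof (intro exI[of _ N] allI impI)
        fix m n assume "m \<ge> N" "n \<ge> N"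
        then show "nrm ip (snd (xs m) - snd (xs n)) < e" using N c2[of "xs m - xs n"] by fastforce
      qed
    qed
    obtain p where p: "conv ip (\<lambda>n. fst (xs n)) p" using I.complete[OF _ cf] by blast
    obtain q where q: "conv ip (\<lambda>n. snd (xs n)) q" using I.complete[OF _ cs2] by blast
    have "conv (ip2 ip) xs (p, q)"
      unfolding conv_def
    proof (rule null_cmp)
      show "\<bar>nrm (ip2 ip) (xs n - (p, q))\<bar> \<le> nrm ip (fst (xs n) - p) + nrm ip (snd (xs n) - q)" for n
        using c3[of "xs n - (p, q)"] I2.nrm_ge0[of "xs n - (p, q)"] by simp
      show "(\<lambda>n. nrm ip (fst (xs n) - p) + nrm ip (snd (xs n) - q)) \<longlonglongrightarrow> 0"
        using tendsto_add[OF p[unfolded conv_def] q[unfolded conv_def]] by simp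
    qed
    then show "\<exists>x\<in>UNIV. conv (ip2 ip) xs x" by blast
  qed
qed

locale Sloc =
  fixes ipX :: "'x::cvec \<Rightarrow> 'x \<Rightarrow> complex" and S :: "'x \<times> 'x \<Rightarrow> 'x \<times> 'x"
  assumes X: "hilbert_on UNIV ipX" and S: "bounded_unif_pos_sa ipX S"
begin

sublocale X1: hs "UNIV::'x set" ipX by (rule hilbert_hs[OF X])
sublocale X2: hs "UNIV::('x \<times> 'x) set" "ip2 ipX" by (rule ip2_hs[OF X])

abbreviation "n2 \<equiv> nrm (ip2 ipX)"

lemma S_lin: "linear_on UNIV S" using S unfolding bounded_unif_pos_sa_def by blast
lemma S_add: "S (x + y) = S x + S y" using linear_on_add[OF S_lin] by simp
lemma S_scale: "S (c *\<^sub>C x) = c *\<^sub>C S x" using linear_on_scale[OF S_lin] by simp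
lemma S_diff: "S (x - y) = S x - S y" using linear_on_diff[OF S_lin] by simp
lemma S_zero: "S 0 = 0" using linear_on_zero[OF S_lin] .
lemma S_sym: "ip2 ipX (S f) g = ip2 ipX f (S g)" using S unfolding bounded_unif_pos_sa_def by blast

definition cS where "cS = (SOME c. c > 0 \<and> (\<forall>f. Re (ip2 ipX (S f) f) \<ge> c * (n2 f)^2))"
lemma cS: "cS > 0" "Re (ip2 ipX (S f) f) \<ge> cS * (n2 f)^2"
proof -
  have "\<exists>c. c > 0 \<and> (\<forall>f. Re (ip2 ipX (S f) f) \<ge> c * (n2 f)^2)" using S unfolding bounded_unif_pos_sa_def by blast
  then have "cS > 0 \<and> (\<forall>f. Re (ip2 ipX (S f) f) \<ge> cS * (n2 f)^2)" unfolding cS_def by (rule someI_ex)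
  then show "cS > 0" "Re (ip2 ipX (S f) f) \<ge> cS * (n2 f)^2" by blast+
qed

lemma n2_ge0[simp]: "0 \<le> n2 x" using X2.nrm_ge0[OF UNIV_I] .
lemma n2_eq0[simp]: "n2 x = 0 \<longleftrightarrow> x = 0" using X2.nrm_eq0[OF UNIV_I] .

definition CS where "CS = max 0 (SOME C. \<forall>x. n2 (S x) \<le> C * n2 x)"
lemma CS: "CS \<ge> 0" "n2 (S x) \<le> CS * n2 x"
proof -
  have "\<exists>C. \<forall>x. n2 (S x) \<le> C * n2 x" using S unfolding bounded_unif_pos_sa_def bounded_on_def by blast
  then have "\<forall>x. n2 (S x) \<le> (SOME C. \<forall>x. n2 (S x) \<le> C * n2 x) * n2 x" by (rule someI_ex)
  then have "n2 (S x) \<le> (SOME C. \<forall>x. n2 (S x) \<le> C * n2 x) * n2 x" by blast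
  also have "\<dots> \<le> CS * n2 x" unfolding CS_def by (rule mult_right_mono) auto
  finally show "n2 (S x) \<le> CS * n2 x" .
  show "CS \<ge> 0" unfolding CS_def by simp
qed

lemma S_below: "cS * n2 f \<le> n2 (S f)"
proof -
  have "cS * (n2 f)^2 \<le> Re (ip2 ipX (S f) f)" by (rule cS)
  also have "\<dots> \<le> n2 (S f) * n2 f" by (rule X2.Re_ip_le) auto
  finally have A: "(cS * n2 f) * n2 f \<le> n2 (S f) * n2 f" by (simp add: power2_eq_square mult.assoc)
  show ?thesis
  proof (cases "n2 f = 0")
    case True then show ?thesis by simp
  next
    case False then have "n2 f > 0" using X2.nrm_ge0[of f] by (simp add: less_le)
    then show ?thesis using A by simp
  qed
qed

lemma S_inj: "S x = S y \<Longrightarrow> x = y"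
proof -
  assume "S x = S y"
  then have "S (x - y) = 0" by (simp add: S_diff)
  then have "cS * n2 (x - y) \<le> 0" using S_below[of "x - y"] by simp
  then have "n2 (x - y) \<le> 0" using cS(1) by (simp add: mult_le_0_iff)
  then have "n2 (x - y) = 0" using n2_ge0[of "x - y"] by linarith
  then show "x = y" using X2.nrm_eq0[of "x - y"] by simp
qed

lemma S_surj: "range S = UNIV"
proof (rule X2.full)
  show "X2.csub (range S)" unfolding X2.csub_def
  proof (intro conjI allI impI)
    show "range S \<subseteq> UNIV" by simp
    show "subspaceC (range S)" unfolding subspaceC_def
    proof (intro conjI ballI allI)
      show "0 \<in> range S" using S_zero by (metis rangeI)
      fix a b assume "a \<in> range S" "b \<in> range S"
      then obtain x y where "a = S x" "b = S y" by blast
      then show "a + b \<in> range S" using S_add[of x y] by (metis rangeI)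
    next
      fix c a assume "a \<in> range S"
      then obtain x where "a = S x" by blast
      then show "c *\<^sub>C a \<in> range S" using S_scale[of c x] by (metis rangeI)
    qed
    fix ys y assume a: "(\<forall>n. ys n \<in> range S) \<and> y \<in> UNIV \<and> conv (ip2 ipX) ys y"
    have "\<exists>f. S f = ys n" for n using a by (metis rangeE)
    then obtain fs where fs: "\<And>n. S (fs n) = ys n" by metis
    have ysc: "cauchy (ip2 ipX) ys" by (rule X2.conv_cauchy[of ys y]) (use a in auto)
    have fsc: "cauchy (ip2 ipX) fs" unfolding cauchy_def
    proof (intro allI impI)
      fix e :: real assume e: "e > 0"
      then have "e * cS > 0" using cS(1) by simp
      then obtain N where N: "\<forall>m\<ge>N. \<forall>n\<ge>N. n2 (ys m - ys n) < e * cS" using ysc unfolding cauchy_def by blast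
      show "\<exists>N. \<forall>m\<ge>N. \<forall>n\<ge>N. n2 (fs m - fs n) < e"
      proof (intro exI[of _ N] allI impI)
        fix m n assume "m \<ge> N" "n \<ge> N"
        then have "cS * n2 (fs m - fs n) < e * cS" using S_below[of "fs m - fs n"] N fs S_diff by fastforce
        then show "n2 (fs m - fs n) < e" using cS(1) by (simp add: mult.commute)
      qed
    qed
    obtain f where f: "conv (ip2 ipX) fs f" using X2.complete[of fs] fsc by blast
    have "conv (ip2 ipX) ys (S f)" unfolding conv_def
    proof (rule null_cmp)
      show "\<bar>n2 (ys n - S f)\<bar> \<le> CS * n2 (fs n - f)" for n
        using CS(2)[of "fs n - f"] fs[of n] X2.nrm_ge0[of "ys n - S f"] by (simp add: S_diff)
      show "(\<lambda>n. CS * n2 (fs n - f)) \<longlonglongrightarrow> 0"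
        using tendsto_mult[OF tendsto_const f[unfolded conv_def], of CS] by simp
    qed
    then have "y = S f" using X2.conv_unique[of ys y "S f"] a by simp
    then show "y \<in> range S" by simp
  qed
next
  fix v assume "\<forall>w\<in>range S. ip2 ipX w v = 0"
  then have "ip2 ipX (S v) v = 0" by blast
  then have "cS * (n2 v)^2 \<le> 0" using cS(2)[of v] by simp
  then have "n2 v = 0" using cS(1) by (simp add: mult_le_0_iff)
  then show "v = 0" using X2.nrm_eq0[of v] by simp
qed

lemma S_inv1[simp]: "S (inv S y) = y" using S_surj by (simp add: f_inv_into_f)
lemma S_inv2[simp]: "inv S (S x) = x" using S_inj by (meson inv_f_f injI)

lemma ipS_ipo: "inner_product_on UNIV (ipS ipX S)"
  unfolding inner_product_on_def ipS_def
proof (intro conjI ballI allI impI)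
  show "subspaceC (UNIV::('x\<times>'x) set)" by (rule subspaceC_UNIV)
  fix x y z :: "'x \<times> 'x"
  show "ip2 ipX (S (x + y)) z = ip2 ipX (S x) z + ip2 ipX (S y) z" by (simp add: S_add X2.ip_addL)
  show "ip2 ipX (S y) x = cnj (ip2 ipX (S x) y)"
    using S_sym[of y x] S_sym[of x y] X2.ip_sym[of x "S y"] by simp
  fix c :: complex
  show "ip2 ipX (S (c *\<^sub>C x)) y = c * ip2 ipX (S x) y" by (simp add: S_scale X2.ip_scaleL)
next
  fix x :: "'x \<times> 'x"
  have "cS * (n2 x)^2 \<ge> 0" using cS(1) by simp
  then show "0 \<le> Re (ip2 ipX (S x) x)" using cS(2)[of x] by linarith
  have "ip2 ipX (S x) x = cnj (ip2 ipX (S x) x)"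
    using S_sym[of x x] X2.ip_sym[of x "S x"] by simp
  then show "Im (ip2 ipX (S x) x) = 0" by (metis cnj.simps(2) neg_equal_zero)
  assume "ip2 ipX (S x) x = 0"
  then have "cS * (n2 x)^2 \<le> 0" using cS(2)[of x] by simp
  then have "n2 x = 0" using cS(1) by (simp add: mult_le_0_iff)
  then show "x = 0" using X2.nrm_eq0[of x] by simp
qed

abbreviation "nS \<equiv> nrm (ipS ipX S)"

lemma nS_sq: "(nS x)^2 = Re (ip2 ipX (S x) x)"
proof -
  interpret I: ips UNIV "ipS ipX S" by unfold_locales (rule ipS_ipo)
  show ?thesis using I.nrm_sq[of x] unfolding ipS_def by simp
qed

lemma nS_upper: "nS x \<le> sqrt CS * n2 x"
proof -
  have "(nS x)^2 \<le> n2 (S x) * n2 x" unfolding nS_sq by (rule X2.Re_ip_le) auto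
  also have "\<dots> \<le> CS * n2 x * n2 x" by (rule mult_right_mono[OF CS(2)]) simp
  also have "\<dots> = (sqrt CS * n2 x)^2" using CS(1) by (simp add: power_mult_distrib power2_eq_square)
  finally show ?thesis by (rule power2_le_imp_le) (use CS(1) in simp)
qed

lemma nS_lower: "sqrt cS * n2 x \<le> nS x"
proof -
  have "(sqrt cS * n2 x)^2 = cS * (n2 x)^2" using cS(1) by (simp add: power_mult_distrib)
  also have "\<dots> \<le> (nS x)^2" unfolding nS_sq by (rule cS(2))
  finally show ?thesis
  proof (rule power2_le_imp_le)
    interpret I: ips UNIV "ipS ipX S" by unfold_locales (rule ipS_ipo)
    show "0 \<le> nS x" by simp
  qed
qed

sublocale XS: hs "UNIV::('x \<times> 'x) set" "ipS ipX S"
proof -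
  interpret I: ips UNIV "ipS ipX S" by unfold_locales (rule ipS_ipo)
  show "hs UNIV (ipS ipX S)"
  proof (unfold_locales)
    fix xs :: "nat \<Rightarrow> 'x \<times> 'x" assume cs: "cauchy (ipS ipX S) xs"
    have sc: "sqrt cS > 0" using cS(1) by simp
    have c2: "cauchy (ip2 ipX) xs" unfolding cauchy_def
    proof (intro allI impI)
      fix e :: real assume e: "e > 0"
      then have "sqrt cS * e > 0" using sc by simp
      then obtain N where N: "\<forall>m\<ge>N. \<forall>n\<ge>N. nS (xs m - xs n) < sqrt cS * e" using cs unfolding cauchy_def by blast
      show "\<exists>N. \<forall>m\<ge>N. \<forall>n\<ge>N. n2 (xs m - xs n) < e"
      proof (intro exI[of _ N] allI impI)
        fix m n assume "m \<ge> N" "n \<ge> N"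
        then have "sqrt cS * n2 (xs m - xs n) < sqrt cS * e" using N nS_lower[of "xs m - xs n"] by fastforce
        then show "n2 (xs m - xs n) < e" using sc by simp
      qed
    qed
    obtain x where x: "conv (ip2 ipX) xs x" using X2.complete[of xs] c2 by blast
    have "conv (ipS ipX S) xs x" unfolding conv_def
    proof (rule null_cmp)
      show "\<bar>nS (xs n - x)\<bar> \<le> sqrt CS * n2 (xs n - x)" for n
        using nS_upper[of "xs n - x"] I.nrm_ge0[of "xs n - x"] by simp
      show "(\<lambda>n. sqrt CS * n2 (xs n - x)) \<longlonglongrightarrow> 0"
        using tendsto_mult[OF tendsto_const x[unfolded conv_def], of "sqrt CS"] by simp
    qed
    then show "\<exists>x\<in>UNIV. conv (ipS ipX S) xs x" by blast
  qed
qed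

end

context Sloc begin

lemma invS_add: "inv S (x + y) = inv S x + inv S y"
  using S_inj[of "inv S (x + y)" "inv S x + inv S y"] by (simp add: S_add)
lemma invS_scale: "inv S (c *\<^sub>C x) = c *\<^sub>C inv S x"
  using S_inj[of "inv S (c *\<^sub>C x)" "c *\<^sub>C inv S x"] by (simp add: S_scale)

lemma M_op_lin: "linear_on D B \<Longrightarrow> linear_on (D \<times> D) (M_op S B)"
proof -
  assume B: "linear_on D B"
  have Ds: "subspaceC D" using B linear_on_sub by blast
  show ?thesis unfolding linear_on_def
  proof (intro conjI ballI allI)
    show "subspaceC (D \<times> D)" using Ds unfolding subspaceC_def by (auto simp: zero_prod_def pair_scaleC)
  next
    fix x y assume x: "x \<in> D \<times> D" and y: "y \<in> D \<times> D"
    then have "B (fst (x + y)) = B (fst x) + B (fst y)" "B (snd (x + y)) = B (snd x) + B (snd y)"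
      using linear_on_add[OF B] by (auto simp: mem_Times_iff)
    then show "M_op S B (x + y) = M_op S B x + M_op S B y"
      unfolding M_op_def by (simp add: invS_add[symmetric] scaleC_add_right)
  next
    fix c x assume x: "x \<in> D \<times> D"
    then have "B (fst (c *\<^sub>C x)) = c *\<^sub>C B (fst x)" "B (snd (c *\<^sub>C x)) = c *\<^sub>C B (snd x)"
      using linear_on_scale[OF B] by (auto simp: mem_Times_iff)
    then show "M_op S B (c *\<^sub>C x) = c *\<^sub>C M_op S B x"
      unfolding M_op_def by (simp add: invS_scale[symmetric] pair_scaleC scaleC_scaleC scaleC_minus_right mult.commute)
  qed
qed

lemma M_op_formula1: "ipS ipX S (M_op S B f) g = \<i> * ipX (B (snd f)) (fst g) - \<i> * ipX (B (fst f)) (snd g)"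
  unfolding ipS_def M_op_def ip2_def by (simp add: X1.ip_scaleL X1.ip_minusL)

lemma M_op_formula2: "ipS ipX S f (M_op S B g) = - \<i> * ipX (fst f) (B (snd g)) + \<i> * ipX (snd f) (B (fst g))"
  unfolding ipS_def S_sym[of f] by (simp add: M_op_def ip2_def X1.ip_scaleR X1.ip_minusR)

end

lemma i_solve1: "- (\<i> * a) = (b::complex) \<Longrightarrow> a = \<i> * b"
proof -
  assume e: "- (\<i> * a) = b"
  have "\<i> * b = \<i> * (- (\<i> * a))" using e by simp
  also have "\<dots> = a" by simp
  finally show ?thesis by simp
qed

lemma i_solve2: "\<i> * a = (b::complex) \<Longrightarrow> a = - \<i> * b"
proof -
  assume e: "\<i> * a = b"
  have "- \<i> * b = - \<i> * (\<i> * a)" using e by simp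
  also have "\<dots> = a" by simp
  finally show ?thesis by simp
qed

locale Mloc = Sloc ipX S for ipX :: "'x::cvec \<Rightarrow> 'x \<Rightarrow> complex" and S +
  fixes DA :: "'x set" and A :: "'x \<Rightarrow> 'x"
  assumes Aop: "operator DA A" and Asym: "symmetric_op ipX DA A"
begin

abbreviation "AD \<equiv> adj_dom ipX DA A"
abbreviation "Ad \<equiv> adj ipX DA A"

lemma A_lin: "linear_on DA A" using Aop unfolding operator_def .
lemma DA_sub: "subspaceC DA" using A_lin linear_on_sub by blast
lemma DA_dense: "dense_in ipX DA UNIV" using Asym unfolding symmetric_op_def by blast
lemma A_sym: "f \<in> DA \<Longrightarrow> g \<in> DA \<Longrightarrow> ipX (A f) g = ipX f (A g)" using Asym unfolding symmetric_op_def by blast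

lemma adjA: "g \<in> AD \<Longrightarrow> f \<in> DA \<Longrightarrow> ipX (A f) g = ipX f (Ad g)"
proof -
  assume g: "g \<in> AD" and f: "f \<in> DA"
  have "\<exists>h. \<forall>f\<in>DA. ipX (A f) g = ipX f h" using g unfolding adj_dom_def by blast
  then have "\<forall>f\<in>DA. ipX (A f) g = ipX f (Ad g)" unfolding adj_def by (rule someI_ex)
  then show ?thesis using f by blast
qed

lemma adjA_unique: "(\<And>f. f \<in> DA \<Longrightarrow> ipX (A f) g = ipX f h) \<Longrightarrow> g \<in> AD \<and> Ad g = h"
proof -
  assume a: "\<And>f. f \<in> DA \<Longrightarrow> ipX (A f) g = ipX f h"
  then have g: "g \<in> AD" unfolding adj_dom_def by blast
  have "Ad g = h" by (rule X1.dense_ext[OF DA_dense]) (use adjA[OF g] a in auto)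
  then show ?thesis using g by blast
qed

lemma DA_AD: "g \<in> DA \<Longrightarrow> g \<in> AD \<and> Ad g = A g"
  by (rule adjA_unique) (rule A_sym)

lemma Ad_lin: "linear_on AD Ad"
  unfolding linear_on_def subspaceC_def
proof (intro conjI ballI allI)
  show "0 \<in> AD" using DA_AD[of 0] DA_sub subspaceC_zero by blast
next
  fix x y assume x: "x \<in> AD" and y: "y \<in> AD"
  have "\<And>f. f \<in> DA \<Longrightarrow> ipX (A f) (x + y) = ipX f (Ad x + Ad y)"
    using adjA[OF x] adjA[OF y] by (simp add: X1.ip_addR)
  then have "x + y \<in> AD \<and> Ad (x + y) = Ad x + Ad y" by (rule adjA_unique)
  then show "x + y \<in> AD" "Ad (x + y) = Ad x + Ad y" by auto
next
  fix c x assume x: "x \<in> AD"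
  have "\<And>f. f \<in> DA \<Longrightarrow> ipX (A f) (c *\<^sub>C x) = ipX f (c *\<^sub>C Ad x)"
    using adjA[OF x] by (simp add: X1.ip_scaleR)
  then have "c *\<^sub>C x \<in> AD \<and> Ad (c *\<^sub>C x) = c *\<^sub>C Ad x" by (rule adjA_unique)
  then show "c *\<^sub>C x \<in> AD" "Ad (c *\<^sub>C x) = c *\<^sub>C Ad x" by auto
qed

lemma M_lin: "linear_on (M_dom DA) (M_op S A)"
  unfolding M_dom_def by (rule M_op_lin[OF A_lin])

lemma Mstar_lin: "linear_on (Mstar_dom ipX DA A) (Mstar_op ipX S DA A)"
  unfolding Mstar_dom_def Mstar_op_def by (rule M_op_lin[OF Ad_lin])

lemma M_sub_Mstar: "M_dom DA \<subseteq> Mstar_dom ipX DA A"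
  unfolding M_dom_def Mstar_dom_def using DA_AD by auto

lemma Mstar_M: "f \<in> M_dom DA \<Longrightarrow> Mstar_op ipX S DA A f = M_op S A f"
  unfolding M_dom_def Mstar_op_def M_op_def using DA_AD by (auto simp: mem_Times_iff)

lemma M_adj_val: "g \<in> Mstar_dom ipX DA A \<Longrightarrow> f \<in> M_dom DA \<Longrightarrow>
    ipS ipX S (M_op S A f) g = ipS ipX S f (Mstar_op ipX S DA A g)"
  unfolding Mstar_op_def M_op_formula1 M_op_formula2 Mstar_dom_def M_dom_def
  using adjA by (auto simp: mem_Times_iff)

lemma M_adj_char: "g \<in> Mstar_dom ipX DA A \<longleftrightarrow> (\<exists>h. \<forall>f\<in>M_dom DA. ipS ipX S (M_op S A f) g = ipS ipX S f h)"
proof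
  assume "g \<in> Mstar_dom ipX DA A"
  then show "\<exists>h. \<forall>f\<in>M_dom DA. ipS ipX S (M_op S A f) g = ipS ipX S f h" using M_adj_val by blast
next
  assume "\<exists>h. \<forall>f\<in>M_dom DA. ipS ipX S (M_op S A f) g = ipS ipX S f h"
  then obtain h where h: "\<And>f. f \<in> M_dom DA \<Longrightarrow> ipS ipX S (M_op S A f) g = ipS ipX S f h" by blast
  have eq: "ipS ipX S f h = ipX (fst f) (fst (S h)) + ipX (snd f) (snd (S h))" for f
  proof -
    have "ipS ipX S f h = ip2 ipX f (S h)" unfolding ipS_def by (rule S_sym)
    then show ?thesis by (simp add: ip2_def)
  qed
  have A0: "A 0 = 0" using linear_on_zero[OF A_lin] .
  have 0: "0 \<in> DA" using DA_sub subspaceC_zero by blast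
  have "snd g \<in> AD"
  proof -
    have "ipX (A f) (snd g) = ipX f ((- \<i>) *\<^sub>C fst (S h))" if f: "f \<in> DA" for f
    proof -
      have "(f, 0) \<in> M_dom DA" unfolding M_dom_def using f 0 by simp
      from h[OF this] have "- (\<i> * ipX (A f) (snd g)) = ipX f (fst (S h))"
        unfolding M_op_formula1 eq using A0 by simp
      then have "ipX (A f) (snd g) = \<i> * ipX f (fst (S h))" by (rule i_solve1)
      then show ?thesis by (simp add: X1.ip_scaleR)
    qed
    then show ?thesis unfolding adj_dom_def by blast
  qed
  moreover have "fst g \<in> AD"
  proof -
    have "ipX (A f) (fst g) = ipX f (\<i> *\<^sub>C snd (S h))" if f: "f \<in> DA" for f
    proof -
      have "(0, f) \<in> M_dom DA" unfolding M_dom_def using f 0 by simp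
      from h[OF this] have "\<i> * ipX (A f) (fst g) = ipX f (snd (S h))"
        unfolding M_op_formula1 eq using A0 by simp
      then have "ipX (A f) (fst g) = - \<i> * ipX f (snd (S h))" by (rule i_solve2)
      then show ?thesis by (simp add: X1.ip_scaleR)
    qed
    then show ?thesis unfolding adj_dom_def by blast
  qed
  ultimately show "g \<in> Mstar_dom ipX DA A" unfolding Mstar_dom_def by (simp add: mem_Times_iff)
qed

lemma M_dense: "dense_in (ipS ipX S) (M_dom DA) UNIV"
  unfolding dense_in_def
proof (intro conjI ballI allI impI)
  show "M_dom DA \<subseteq> UNIV" by simp
  fix x :: "'x \<times> 'x" and e :: real assume e: "e > 0"
  define L where "L = sqrt CS"
  have L0: "L \<ge> 0" unfolding L_def using CS(1) by simp
  define d where "d = e / (2 * (L + 1))"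
  have d0: "d > 0" unfolding d_def using e L0 by simp
  obtain a where a: "a \<in> DA" "nrm ipX (fst x - a) < d" using DA_dense d0 unfolding dense_in_def by blast
  obtain b where b: "b \<in> DA" "nrm ipX (snd x - b) < d" using DA_dense d0 unfolding dense_in_def by blast
  have "nS (x - (a, b)) \<le> L * n2 (x - (a, b))" unfolding L_def by (rule nS_upper)
  also have "n2 (x - (a, b)) \<le> nrm ipX (fst x - a) + nrm ipX (snd x - b)"
  proof -
    have "(n2 (x - (a, b)))^2 \<le> (nrm ipX (fst x - a) + nrm ipX (snd x - b))^2"
      using nrm2_sq[OF X1.ipo, of "x - (a, b)"] X1.nrm_ge0[of "fst x - a"] X1.nrm_ge0[of "snd x - b"]
      by (simp add: power2_sum)
    then show ?thesis by (rule power2_le_imp_le) (use X1.nrm_ge0 in \<open>simp add: add_nonneg_nonneg\<close>)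
  qed
  then have "L * n2 (x - (a, b)) \<le> L * (nrm ipX (fst x - a) + nrm ipX (snd x - b))"
    by (rule mult_left_mono) (rule L0)
  also have "\<dots> \<le> L * (2 * d)" using a b L0 by (intro mult_left_mono) auto
  also have "\<dots> < e" unfolding d_def using e L0 by (simp add: field_simps)
  finally show "\<exists>d\<in>M_dom DA. nS (x - d) < e" unfolding M_dom_def using a b by blast
qed

end

lemma le_eps2: "(K::real) \<ge> 0 \<Longrightarrow> (\<And>e. e > 0 \<Longrightarrow> a \<le> b + K * e) \<Longrightarrow> a \<le> b"
proof -
  assume K: "K \<ge> 0" and h: "\<And>e. e > 0 \<Longrightarrow> a \<le> b + K * e"
  show ?thesis
  proof (rule le_eps)
    fix e :: real assume e: "e > 0"
    have "a \<le> b + K * (e / (K + 1))" using h[of "e / (K + 1)"] e K by simp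
    also have "K * (e / (K + 1)) \<le> e" using K e by (simp add: field_simps)
    finally show "a \<le> b + e" by simp
  qed
qed

locale Ploc =
  fixes H Hm Hp :: "'h::cvec set" and ipH ipm ipp pair :: "'h \<Rightarrow> 'h \<Rightarrow> complex" and V Vs :: "'h \<Rightarrow> 'h"
  assumes dm: "dual_m_order H ipH Hm ipm Hp ipp"
    and pr: "is_pairing H ipH Hm ipm Hp ipp pair"
    and V: "lin_homeo H ipH Hm ipm V"
    and Vs: "pairing_adjoint H ipH Hp pair V Vs"
begin

lemma mo1: "m_order_space H ipH Hm ipm" and mo2: "m_order_space H ipH Hp ipp"
  using dm unfolding dual_m_order_def by auto

sublocale B: hs H ipH using mo1 hilbert_hs unfolding m_order_space_def by blast
sublocale M: hs Hm ipm using mo1 hilbert_hs unfolding m_order_space_def by blast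
sublocale P: hs Hp ipp using mo2 hilbert_hs unfolding m_order_space_def by blast

abbreviation "hn \<equiv> nrm ipH"
abbreviation "mn \<equiv> nrm ipm"
abbreviation "pn \<equiv> nrm ipp"

lemma dense_m: "dense_in ipm (H \<inter> Hm) Hm" using mo1 unfolding m_order_space_def by blast
lemma dense_p: "dense_in ipp (H \<inter> Hp) Hp" using mo2 unfolding m_order_space_def by blast

lemma dnf1: "h \<in> H \<inter> Hp \<Longrightarrow> c \<ge> 0 \<Longrightarrow> (\<And>g. g \<in> H \<inter> Hm \<Longrightarrow> cmod (ipH g h) \<le> c * mn g) \<Longrightarrow> pn h \<le> c"
  using dm unfolding dual_m_order_def dual_norm_formula_def by blast
lemma dnf2: "h \<in> H \<inter> Hm \<Longrightarrow> c \<ge> 0 \<Longrightarrow> (\<And>g. g \<in> H \<inter> Hp \<Longrightarrow> cmod (ipH g h) \<le> c * pn g) \<Longrightarrow> mn h \<le> c"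
  using dm unfolding dual_m_order_def dual_norm_formula_def by blast

lemma pair_addL: "a \<in> Hm \<Longrightarrow> a' \<in> Hm \<Longrightarrow> b \<in> Hp \<Longrightarrow> pair (a + a') b = pair a b + pair a' b"
  using pr unfolding is_pairing_def by blast
lemma pair_scaleL: "a \<in> Hm \<Longrightarrow> b \<in> Hp \<Longrightarrow> pair (c *\<^sub>C a) b = c * pair a b"
  using pr unfolding is_pairing_def by blast
lemma pair_addR: "a \<in> Hm \<Longrightarrow> b \<in> Hp \<Longrightarrow> b' \<in> Hp \<Longrightarrow> pair a (b + b') = pair a b + pair a b'"
  using pr unfolding is_pairing_def by blast
lemma pair_scaleR: "a \<in> Hm \<Longrightarrow> b \<in> Hp \<Longrightarrow> pair a (c *\<^sub>C b) = cnj c * pair a b"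
  using pr unfolding is_pairing_def by blast
lemma pair_H: "a \<in> H \<inter> Hm \<Longrightarrow> b \<in> H \<inter> Hp \<Longrightarrow> pair a b = ipH a b"
  using pr unfolding is_pairing_def by blast
lemma pair_diffL: "a \<in> Hm \<Longrightarrow> a' \<in> Hm \<Longrightarrow> b \<in> Hp \<Longrightarrow> pair (a - a') b = pair a b - pair a' b"
  using pair_addL[of a "- a'" b] pair_scaleL[of a' b "-1"] by (simp add: scaleC_minus1)
lemma pair_diffR: "a \<in> Hm \<Longrightarrow> b \<in> Hp \<Longrightarrow> b' \<in> Hp \<Longrightarrow> pair a (b - b') = pair a b - pair a b'"
  using pair_addR[of a b "- b'"] pair_scaleR[of a b' "-1"] by (simp add: scaleC_minus1)

definition Cp where "Cp = max 0 (SOME C. \<forall>a\<in>Hm. \<forall>b\<in>Hp. cmod (pair a b) \<le> C * mn a * pn b)"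
lemma Cp: "Cp \<ge> 0" "a \<in> Hm \<Longrightarrow> b \<in> Hp \<Longrightarrow> cmod (pair a b) \<le> Cp * mn a * pn b"
proof -
  show "Cp \<ge> 0" unfolding Cp_def by simp
  assume a: "a \<in> Hm" and b: "b \<in> Hp"
  have "\<exists>C. \<forall>a\<in>Hm. \<forall>b\<in>Hp. cmod (pair a b) \<le> C * mn a * pn b" using pr unfolding is_pairing_def by blast
  then have "\<forall>a\<in>Hm. \<forall>b\<in>Hp. cmod (pair a b) \<le> (SOME C. \<forall>a\<in>Hm. \<forall>b\<in>Hp. cmod (pair a b) \<le> C * mn a * pn b) * mn a * pn b"
    by (rule someI_ex)
  then have "cmod (pair a b) \<le> (SOME C. \<forall>a\<in>Hm. \<forall>b\<in>Hp. cmod (pair a b) \<le> C * mn a * pn b) * (mn a * pn b)"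
    using a b by (simp add: mult.assoc)
  also have "\<dots> \<le> Cp * (mn a * pn b)" unfolding Cp_def
    by (rule mult_right_mono) (use a b M.nrm_ge0 P.nrm_ge0 in auto)
  finally show "cmod (pair a b) \<le> Cp * mn a * pn b" by (simp add: mult.assoc)
qed

lemma V_lin: "linear_on H V" using V unfolding lin_homeo_def by blast
lemma V_bij: "bij_betw V H Hm" using V unfolding lin_homeo_def by blast
lemma V_in: "h \<in> H \<Longrightarrow> V h \<in> Hm" using V_bij bij_betwE by blast
lemma Vi_in: "x \<in> Hm \<Longrightarrow> inv_into H V x \<in> H" using V_bij by (metis bij_betw_def inv_into_into)
lemma V_Vi: "x \<in> Hm \<Longrightarrow> V (inv_into H V x) = x" using V_bij by (metis bij_betw_def f_inv_into_f)
lemma Vi_V: "h \<in> H \<Longrightarrow> inv_into H V (V h) = h" using V_bij by (metis bij_betw_def inv_into_f_f)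

definition CV where "CV = max 0 (SOME C. \<forall>x\<in>Hm. hn (inv_into H V x) \<le> C * mn x)"
lemma CV: "CV \<ge> 0" "x \<in> Hm \<Longrightarrow> hn (inv_into H V x) \<le> CV * mn x"
proof -
  show "CV \<ge> 0" unfolding CV_def by simp
  assume x: "x \<in> Hm"
  have "\<exists>C. \<forall>x\<in>Hm. hn (inv_into H V x) \<le> C * mn x" using V unfolding lin_homeo_def bounded_on_def by blast
  then have "\<forall>x\<in>Hm. hn (inv_into H V x) \<le> (SOME C. \<forall>x\<in>Hm. hn (inv_into H V x) \<le> C * mn x) * mn x"
    by (rule someI_ex)
  then have "hn (inv_into H V x) \<le> (SOME C. \<forall>x\<in>Hm. hn (inv_into H V x) \<le> C * mn x) * mn x" using x by blast
  also have "\<dots> \<le> CV * mn x" unfolding CV_def by (rule mult_right_mono) (use x M.nrm_ge0 in auto)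
  finally show "hn (inv_into H V x) \<le> CV * mn x" .
qed

lemma Vi_add: "x \<in> Hm \<Longrightarrow> y \<in> Hm \<Longrightarrow> inv_into H V (x + y) = inv_into H V x + inv_into H V y"
proof -
  assume x: "x \<in> Hm" and y: "y \<in> Hm"
  have "V (inv_into H V x + inv_into H V y) = x + y"
    using linear_on_add[OF V_lin Vi_in[OF x] Vi_in[OF y]] V_Vi x y by simp
  then show ?thesis using Vi_V[of "inv_into H V x + inv_into H V y"] Vi_in x y by simp
qed
lemma Vi_scale: "x \<in> Hm \<Longrightarrow> inv_into H V (c *\<^sub>C x) = c *\<^sub>C inv_into H V x"
proof -
  assume x: "x \<in> Hm"
  have "V (c *\<^sub>C inv_into H V x) = c *\<^sub>C x"
    using linear_on_scale[OF V_lin Vi_in[OF x]] V_Vi x by simp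
  then show ?thesis using Vi_V[of "c *\<^sub>C inv_into H V x"] Vi_in x by simp
qed

lemma Vs_in: "g \<in> Hp \<Longrightarrow> Vs g \<in> H" using Vs unfolding pairing_adjoint_def by blast
lemma Vs_eq: "f \<in> H \<Longrightarrow> g \<in> Hp \<Longrightarrow> pair (V f) g = ipH f (Vs g)" using Vs unfolding pairing_adjoint_def by blast

lemma Vs_add: "x \<in> Hp \<Longrightarrow> y \<in> Hp \<Longrightarrow> Vs (x + y) = Vs x + Vs y"
proof -
  assume x: "x \<in> Hp" and y: "y \<in> Hp"
  show ?thesis
  proof (rule B.ip_ext)
    show "Vs (x + y) \<in> H" "Vs x + Vs y \<in> H" using Vs_in x y by auto
    fix f assume f: "f \<in> H"
    show "ipH f (Vs (x + y)) = ipH f (Vs x + Vs y)"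
      using Vs_eq[OF f] pair_addR[OF V_in[OF f] x y] B.ip_addR[OF Vs_in[OF x] Vs_in[OF y] f] x y by simp
  qed
qed
lemma Vs_scale: "x \<in> Hp \<Longrightarrow> Vs (c *\<^sub>C x) = c *\<^sub>C Vs x"
proof -
  assume x: "x \<in> Hp"
  show ?thesis
  proof (rule B.ip_ext)
    show "Vs (c *\<^sub>C x) \<in> H" "c *\<^sub>C Vs x \<in> H" using Vs_in x by auto
    fix f assume f: "f \<in> H"
    show "ipH f (Vs (c *\<^sub>C x)) = ipH f (c *\<^sub>C Vs x)"
      using Vs_eq[OF f] pair_scaleR[OF V_in[OF f] x] B.ip_scaleR[OF f Vs_in[OF x]] x by simp
  qed
qed
lemma Vs_diff: "x \<in> Hp \<Longrightarrow> y \<in> Hp \<Longrightarrow> Vs (x - y) = Vs x - Vs y"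
  using Vs_add[of x "- y"] Vs_scale[of y "-1"] by (simp add: scaleC_minus1)

lemma Vs_lower: assumes g: "g \<in> Hp" shows "pn g \<le> CV * hn (Vs g)"
proof (rule le_eps2[of "Cp + 1"])
  show "Cp + 1 \<ge> 0" using Cp(1) by simp
  fix e :: real assume e: "e > 0"
  obtain g' where g': "g' \<in> H \<inter> Hp" "pn (g - g') < e" using dense_p g e unfolding dense_in_def by blast
  have c0: "CV * hn (Vs g) + Cp * e \<ge> 0" using CV(1) Cp(1) e B.nrm_ge0[OF Vs_in[OF g]] by simp
  have "pn g' \<le> CV * hn (Vs g) + Cp * e"
  proof (rule dnf1[OF g'(1) c0])
    fix a assume a: "a \<in> H \<inter> Hm"
    have aM: "a \<in> Hm" and gp: "g' \<in> Hp" using a g' by auto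
    have "ipH a g' = pair a g'" using pair_H[OF a g'(1)] by simp
    also have "\<dots> = pair a g + pair a (g' - g)" using pair_diffR[OF aM gp g] by simp
    finally have "cmod (ipH a g') \<le> cmod (pair a g) + cmod (pair a (g' - g))" by (simp add: norm_triangle_ineq)
    also have "cmod (pair a g) \<le> CV * hn (Vs g) * mn a"
    proof -
      have "pair a g = ipH (inv_into H V a) (Vs g)" using Vs_eq[OF Vi_in[OF aM] g] V_Vi[OF aM] by simp
      then have "cmod (pair a g) \<le> hn (inv_into H V a) * hn (Vs g)"
        using B.cauchy_schwarz[OF Vi_in[OF aM] Vs_in[OF g]] by simp
      also have "\<dots> \<le> CV * mn a * hn (Vs g)"
        by (rule mult_right_mono[OF CV(2)[OF aM]]) (use B.nrm_ge0[OF Vs_in[OF g]] in simp)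
      finally show ?thesis by (simp add: mult_ac)
    qed
    also have "cmod (pair a (g' - g)) \<le> Cp * mn a * pn (g' - g)" using Cp(2)[OF aM] gp g by simp
    also have "Cp * mn a * pn (g' - g) \<le> Cp * mn a * e"
    proof -
      have "pn (g' - g) = pn (g - g')" using P.nrm_commute gp g by simp
      then show ?thesis using g'(2) Cp(1) M.nrm_ge0[OF aM] by (intro mult_left_mono) auto
    qed
    finally show "cmod (ipH a g') \<le> (CV * hn (Vs g) + Cp * e) * mn a" by (simp add: algebra_simps)
  qed
  moreover have "pn g \<le> pn g' + pn (g - g')" using P.nrm_triangle[of g' "g - g'"] g g' by simp
  ultimately show "pn g \<le> CV * hn (Vs g) + (Cp + 1) * e" using g'(2) by (simp add: algebra_simps)
qed

lemma nondeg: assumes a: "a \<in> Hm" and z: "\<And>g. g \<in> Hp \<Longrightarrow> pair a g = 0" shows "a = 0"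
proof -
  have "mn a \<le> 0"
  proof (rule le_eps2[of "Cp + 1"])
    show "Cp + 1 \<ge> 0" using Cp(1) by simp
    fix e :: real assume e: "e > 0"
    obtain a' where a': "a' \<in> H \<inter> Hm" "mn (a - a') < e" using dense_m a e unfolding dense_in_def by blast
    have c0: "Cp * e \<ge> 0" using Cp(1) e by simp
    have "mn a' \<le> Cp * e"
    proof (rule dnf2[OF a'(1) c0])
      fix g assume g: "g \<in> H \<inter> Hp"
      have gp: "g \<in> Hp" and aM: "a' \<in> Hm" using g a' by auto
      have "ipH g a' = cnj (ipH a' g)" using B.ip_sym[of a' g] g a' by simp
      also have "ipH a' g = pair a' g" using pair_H[OF a'(1) g] by simp
      also have "\<dots> = pair (a' - a) g" using pair_diffL[OF aM a gp] z[OF gp] by simp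
      finally have "cmod (ipH g a') = cmod (pair (a' - a) g)" by simp
      also have "\<dots> \<le> Cp * mn (a' - a) * pn g" using Cp(2) aM a gp by simp
      also have "mn (a' - a) = mn (a - a')" using M.nrm_commute aM a by simp
      also have "Cp * mn (a - a') * pn g \<le> Cp * e * pn g"
        using a'(2) Cp(1) P.nrm_ge0[OF gp] by (intro mult_right_mono mult_left_mono) auto
      finally show "cmod (ipH g a') \<le> Cp * e * pn g" .
    qed
    moreover have "mn a \<le> mn a' + mn (a - a')" using M.nrm_triangle[of a' "a - a'"] a a' by simp
    ultimately show "mn a \<le> 0 + (Cp + 1) * e" using a'(2) by (simp add: algebra_simps)
  qed
  then have "mn a = 0" using M.nrm_ge0[OF a] by simp
  then show ?thesis using M.nrm_eq0[OF a] by simp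
qed

lemma Vs_onto: "Vs ` Hp = H"
proof (rule B.full)
  show "B.csub (Vs ` Hp)" unfolding B.csub_def
  proof (intro conjI allI impI)
    show "Vs ` Hp \<subseteq> H" using Vs_in by blast
    show "subspaceC (Vs ` Hp)" unfolding subspaceC_def
    proof (intro conjI ballI allI)
      show "0 \<in> Vs ` Hp" using Vs_scale[of 0 0] P.zero_in by (metis image_eqI scaleC_zero_left)
      fix a b assume "a \<in> Vs ` Hp" "b \<in> Vs ` Hp"
      then obtain x y where "x \<in> Hp" "y \<in> Hp" "a = Vs x" "b = Vs y" by blast
      then show "a + b \<in> Vs ` Hp" using Vs_add[of x y] P.add_in by (metis image_eqI)
    next
      fix c a assume "a \<in> Vs ` Hp"
      then obtain x where "x \<in> Hp" "a = Vs x" by blast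
      then show "c *\<^sub>C a \<in> Vs ` Hp" using Vs_scale[of x c] P.scale_in by (metis image_eqI)
    qed
    fix ys h assume a: "(\<forall>n. ys n \<in> Vs ` Hp) \<and> h \<in> H \<and> conv ipH ys h"
    have "\<exists>g. g \<in> Hp \<and> Vs g = ys n" for n
    proof -
      have "ys n \<in> Vs ` Hp" using a by blast
      then obtain g where "g \<in> Hp" "ys n = Vs g" by (rule imageE)
      then show ?thesis by auto
    qed
    then obtain gs where gs: "\<And>n. gs n \<in> Hp" "\<And>n. Vs (gs n) = ys n" by metis
    have ysH: "\<And>n. ys n \<in> H" using gs Vs_in by metis
    have ysc: "cauchy ipH ys" by (rule B.conv_cauchy[of ys h]) (use a ysH in auto)
    have gsc: "cauchy ipp gs" unfolding cauchy_def
    proof (intro allI impI)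
      fix e :: real assume e: "e > 0"
      then have "e / (CV + 1) > 0" using CV(1) by simp
      then obtain N where N: "\<forall>m\<ge>N. \<forall>n\<ge>N. hn (ys m - ys n) < e / (CV + 1)" using ysc unfolding cauchy_def by blast
      show "\<exists>N. \<forall>m\<ge>N. \<forall>n\<ge>N. pn (gs m - gs n) < e"
      proof (intro exI[of _ N] allI impI)
        fix m n assume mn: "m \<ge> N" "n \<ge> N"
        have "pn (gs m - gs n) \<le> CV * hn (Vs (gs m - gs n))" by (rule Vs_lower) (use gs in simp)
        also have "Vs (gs m - gs n) = ys m - ys n" using Vs_diff gs by simp
        also have "CV * hn (ys m - ys n) \<le> CV * (e / (CV + 1))"
          using N mn CV(1) by (intro mult_left_mono) (auto simp: less_imp_le)
        also have "\<dots> < e" using CV(1) e by (simp add: field_simps)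
        finally show "pn (gs m - gs n) < e" .
      qed
    qed
    obtain g where g: "g \<in> Hp" "conv ipp gs g" using P.complete[OF gs(1) gsc] by blast
    have "h = Vs g"
    proof (rule B.ip_ext)
      show "h \<in> H" "Vs g \<in> H" using a Vs_in[OF g(1)] by auto
      fix f assume f: "f \<in> H"
      have l1: "(\<lambda>n. ipH f (ys n)) \<longlonglongrightarrow> ipH f h" by (rule B.conv_ipR) (use a ysH f in auto)
      have "(\<lambda>n. pair (V f) (gs n) - pair (V f) g) \<longlonglongrightarrow> 0"
      proof (rule null_cmpC)
        show "cmod (pair (V f) (gs n) - pair (V f) g) \<le> Cp * mn (V f) * pn (gs n - g)" for n
          using Cp(2)[OF V_in[OF f], of "gs n - g"] pair_diffR[OF V_in[OF f] gs(1) g(1)] gs g by simp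
        show "(\<lambda>n. Cp * mn (V f) * pn (gs n - g)) \<longlonglongrightarrow> 0"
          using tendsto_mult[OF tendsto_const g(2)[unfolded conv_def], of "Cp * mn (V f)"] by simp
      qed
      then have "(\<lambda>n. pair (V f) (gs n)) \<longlonglongrightarrow> pair (V f) g" by (simp add: LIM_zero_iff)
      moreover have "pair (V f) (gs n) = ipH f (ys n)" for n using Vs_eq[OF f gs(1)] gs(2) by simp
      ultimately have "(\<lambda>n. ipH f (ys n)) \<longlonglongrightarrow> ipH f (Vs g)" using Vs_eq[OF f g(1)] by simp
      then show "ipH f h = ipH f (Vs g)" using l1 LIMSEQ_unique by blast
    qed
    then show "h \<in> Vs ` Hp" using g(1) by blast
  qed
next
  fix v assume v: "v \<in> H" and p: "\<forall>w\<in>Vs ` Hp. ipH w v = 0"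
  have "pair (V v) g = 0" if g: "g \<in> Hp" for g
  proof -
    have "ipH (Vs g) v = 0" using p g by blast
    then have "ipH v (Vs g) = 0" using B.ip_sym[of "Vs g" v] Vs_in[OF g] v by simp
    then show ?thesis using Vs_eq[OF v g] by simp
  qed
  then have "V v = 0" using nondeg V_in[OF v] by blast
  then have "V v = V 0" using linear_on_zero[OF V_lin] by simp
  then show "v = 0" using V_bij v B.zero_in unfolding bij_betw_def inj_on_def by blast
qed

end

lemma half_sum: "(1/2::complex) *\<^sub>C (p + q) + (1/2::complex) *\<^sub>C (p - q) = (p::'a::cvec)"
proof -
  have "(1/2::complex) *\<^sub>C (p + q) + (1/2::complex) *\<^sub>C (p - q) = (1/2::complex) *\<^sub>C ((p + q) + (p - q))"
    by (rule scaleC_add_right[symmetric])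
  also have "(p + q) + (p - q) = (2::complex) *\<^sub>C p" by (simp add: two_scaleC)
  also have "(1/2::complex) *\<^sub>C ((2::complex) *\<^sub>C p) = p" by (simp add: scaleC_scaleC scaleC_one)
  finally show ?thesis .
qed

lemma half_diff: "(1/2::complex) *\<^sub>C (p + q) - (1/2::complex) *\<^sub>C (p - q) = (q::'a::cvec)"
proof -
  have "(1/2::complex) *\<^sub>C (p + q) - (1/2::complex) *\<^sub>C (p - q) = (1/2::complex) *\<^sub>C ((p + q) - (p - q))"
    by (rule scaleC_diff_right[symmetric])
  also have "(p + q) - (p - q) = (2::complex) *\<^sub>C q" by (simp add: two_scaleC)
  also have "(1/2::complex) *\<^sub>C ((2::complex) *\<^sub>C q) = q" by (simp add: scaleC_scaleC scaleC_one)
  finally show ?thesis .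
qed

lemma i_cancel: "(- \<i> / 2) * (2 * \<i> * z) = (z::complex)"
  by (simp add: field_simps)

locale Full = Mloc ipX S DA A + Ploc H Hm Hp ipH ipm ipp pair V Vs
  for ipX :: "'x::cvec \<Rightarrow> 'x \<Rightarrow> complex" and S DA A and H :: "'h::cvec set" and Hm Hp ipH ipm ipp pair V Vs +
  fixes G0 G1 :: "'x \<times> 'x \<Rightarrow> 'h"
  assumes bt: "m_boundary_tuple (ipS ipX S) (Mstar_dom ipX DA A) (Mstar_op ipX S DA A)
               H ipH Hm ipm Hp ipp pair G0 G1"
begin

abbreviation "DS \<equiv> Mstar_dom ipX DA A"
abbreviation "TS \<equiv> Mstar_op ipX S DA A"

lemma G0_lin: "linear_on DS G0" and G1_lin: "linear_on DS G1"
  using bt unfolding m_boundary_tuple_def by auto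
lemma G_img: "(\<lambda>f. (G0 f, G1 f)) ` DS = Hm \<times> Hp" using bt unfolding m_boundary_tuple_def by blast
lemma G0_in: "f \<in> DS \<Longrightarrow> G0 f \<in> Hm" using G_img by blast
lemma G1_in: "f \<in> DS \<Longrightarrow> G1 f \<in> Hp" using G_img by blast
lemma G_surj: "x \<in> Hm \<Longrightarrow> y \<in> Hp \<Longrightarrow> \<exists>f\<in>DS. G0 f = x \<and> G1 f = y"
proof -
  assume "x \<in> Hm" "y \<in> Hp"
  then have "(x, y) \<in> (\<lambda>f. (G0 f, G1 f)) ` DS" using G_img by simp
  then show ?thesis by force
qed
lemma bt_green: "f \<in> DS \<Longrightarrow> g \<in> DS \<Longrightarrow>
   ipS ipX S (TS f) g - ipS ipX S f (TS g) = cnj (pair (G0 g) (G1 f)) - pair (G0 f) (G1 g)"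
  using bt unfolding m_boundary_tuple_def by blast

definition "ba f = inv_into H V (G0 f)"
definition "bb f = Vs (G1 f)"
definition "bu f = ba f + \<i> *\<^sub>C bb f"
definition "bw f = ba f - \<i> *\<^sub>C bb f"

lemma ba_in: "f \<in> DS \<Longrightarrow> ba f \<in> H" unfolding ba_def using Vi_in G0_in by blast
lemma bb_in: "f \<in> DS \<Longrightarrow> bb f \<in> H" unfolding bb_def using Vs_in G1_in by blast
lemma bu_in: "f \<in> DS \<Longrightarrow> bu f \<in> H" unfolding bu_def using ba_in bb_in by simp
lemma bw_in: "f \<in> DS \<Longrightarrow> bw f \<in> H" unfolding bw_def using ba_in bb_in by simp

lemma DS_sub': "subspaceC DS" using G0_lin linear_on_sub by blast

lemma ba_lin: "linear_on DS ba"
  unfolding linear_on_def ba_def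
  using DS_sub' linear_on_add[OF G0_lin] linear_on_scale[OF G0_lin] Vi_add Vi_scale G0_in by simp
lemma bb_lin: "linear_on DS bb"
  unfolding linear_on_def bb_def
  using DS_sub' linear_on_add[OF G1_lin] linear_on_scale[OF G1_lin] Vs_add Vs_scale G1_in by simp
lemma bu_lin: "linear_on DS bu"
  unfolding linear_on_def bu_def
  using DS_sub' linear_on_add[OF ba_lin] linear_on_scale[OF ba_lin] linear_on_add[OF bb_lin] linear_on_scale[OF bb_lin]
  by (simp add: scaleC_add_right scaleC_scaleC mult.commute algebra_simps)
lemma bw_lin: "linear_on DS bw"
  unfolding linear_on_def bw_def
  using DS_sub' linear_on_add[OF ba_lin] linear_on_scale[OF ba_lin] linear_on_add[OF bb_lin] linear_on_scale[OF bb_lin]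
  by (simp add: scaleC_add_right scaleC_diff_right scaleC_scaleC mult.commute algebra_simps)

lemma green_ab: "f \<in> DS \<Longrightarrow> g \<in> DS \<Longrightarrow>
   ipS ipX S (TS f) g - ipS ipX S f (TS g) = ipH (bb f) (ba g) - ipH (ba f) (bb g)"
proof -
  assume f: "f \<in> DS" and g: "g \<in> DS"
  have p1: "pair (G0 g) (G1 f) = ipH (ba g) (bb f)"
    unfolding ba_def bb_def using Vs_eq[OF Vi_in[OF G0_in[OF g]] G1_in[OF f]] V_Vi[OF G0_in[OF g]] by simp
  have p2: "pair (G0 f) (G1 g) = ipH (ba f) (bb g)"
    unfolding ba_def bb_def using Vs_eq[OF Vi_in[OF G0_in[OF f]] G1_in[OF g]] V_Vi[OF G0_in[OF f]] by simp
  have "cnj (ipH (ba g) (bb f)) = ipH (bb f) (ba g)" using B.ip_sym[OF ba_in[OF g] bb_in[OF f]] by simp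
  then show ?thesis using bt_green[OF f g] p1 p2 by simp
qed

lemma green_uw: "f \<in> DS \<Longrightarrow> g \<in> DS \<Longrightarrow>
   ipS ipX S (TS f) g - ipS ipX S f (TS g) = (- \<i> / 2) * (ipH (bu f) (bu g) - ipH (bw f) (bw g))"
proof -
  assume f: "f \<in> DS" and g: "g \<in> DS"
  have a: "ba f \<in> H" "ba g \<in> H" and b: "bb f \<in> H" "bb g \<in> H" using ba_in bb_in f g by auto
  have "ipH (bu f) (bu g) - ipH (bw f) (bw g) = 2 * \<i> * (ipH (bb f) (ba g) - ipH (ba f) (bb g))"
    unfolding bu_def bw_def using a b
    by (simp add: B.ip_addL B.ip_addR B.ip_diffL B.ip_diffR B.ip_scaleL B.ip_scaleR algebra_simps)
  then have "(- \<i> / 2) * (ipH (bu f) (bu g) - ipH (bw f) (bw g)) = ipH (bb f) (ba g) - ipH (ba f) (bb g)"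
    using i_cancel by simp
  then show ?thesis using green_ab[OF f g] by simp
qed

lemma surj_uw: "p \<in> H \<Longrightarrow> q \<in> H \<Longrightarrow> \<exists>f\<in>DS. bu f = p \<and> bw f = q"
proof -
  assume p: "p \<in> H" and q: "q \<in> H"
  define x where "x = (1/2::complex) *\<^sub>C (p + q)"
  define y where "y = (- \<i> / 2) *\<^sub>C (p - q)"
  have xH: "x \<in> H" and yH: "y \<in> H" unfolding x_def y_def using p q by auto
  obtain y' where y': "y' \<in> Hp" "Vs y' = y" using yH Vs_onto by (metis imageE)
  obtain f where f: "f \<in> DS" "G0 f = V x" "G1 f = y'" using G_surj[OF V_in[OF xH] y'(1)] by blast
  have "ba f = x" unfolding ba_def using f Vi_V[OF xH] by simp
  moreover have "bb f = y" unfolding bb_def using f y' by simp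
  moreover have "\<i> *\<^sub>C y = (1/2::complex) *\<^sub>C (p - q)" unfolding y_def by (simp add: scaleC_scaleC)
  ultimately have "bu f = p" "bw f = q" unfolding bu_def bw_def x_def using half_sum half_diff by simp_all
  then show ?thesis using f by blast
qed

lemma bnd_inst: "bnd (ipS ipX S) H ipH (M_dom DA) (M_op S A) DS TS bu bw"
proof (unfold_locales)
  show "dense_in (ipS ipX S) (M_dom DA) UNIV" by (rule M_dense)
  show "linear_on (M_dom DA) (M_op S A)" by (rule M_lin)
  show "M_dom DA \<subseteq> DS" by (rule M_sub_Mstar)
  show "\<And>f. f \<in> M_dom DA \<Longrightarrow> TS f = M_op S A f" by (rule Mstar_M)
  show "\<And>g. g \<in> DS \<longleftrightarrow> (\<exists>h. \<forall>f\<in>M_dom DA. ipS ipX S (M_op S A f) g = ipS ipX S f h)" by (rule M_adj_char)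
  show "\<And>f g. g \<in> DS \<Longrightarrow> f \<in> M_dom DA \<Longrightarrow> ipS ipX S (M_op S A f) g = ipS ipX S f (TS g)" by (rule M_adj_val)
  show "linear_on DS TS" by (rule Mstar_lin)
  show "linear_on DS bu" by (rule bu_lin)
  show "linear_on DS bw" by (rule bw_lin)
  show "\<And>f. f \<in> DS \<Longrightarrow> bu f \<in> H" by (rule bu_in)
  show "\<And>f. f \<in> DS \<Longrightarrow> bw f \<in> H" by (rule bw_in)
  show "\<And>f g. f \<in> DS \<Longrightarrow> g \<in> DS \<Longrightarrow> ipS ipX S (TS f) g - ipS ipX S f (TS g) =
        (- \<i> / 2) * (ipH (bu f) (bu g) - ipH (bw f) (bw g))" by (rule green_uw)
  show "\<And>x y. x \<in> H \<Longrightarrow> y \<in> H \<Longrightarrow> \<exists>f\<in>DS. bu f = x \<and> bw f = y" by (rule surj_uw)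
qed

lemma bc_eq: "linear_on H K \<Longrightarrow> bc_dom DS H V Vs G0 G1 K = bnd.bcd DS bu bw K"
proof -
  assume K: "linear_on H K"
  have "K (ba f) + ba f + \<i> *\<^sub>C (K (bb f) - bb f) = K (bu f) + bw f" if f: "f \<in> DS" for f
    unfolding bu_def bw_def
    using linear_on_add[OF K ba_in[OF f] B.scale_in[OF bb_in[OF f], of \<i>]] linear_on_scale[OF K bb_in[OF f]] ba_in[OF f] bb_in[OF f]
    by (simp add: scaleC_diff_right algebra_simps)
  moreover have "x \<in> bnd.bcd DS bu bw K \<longleftrightarrow> x \<in> DS \<and> K (bu x) + bw x = 0" for x
    by (rule bnd.bcd_mem[OF bnd_inst])
  ultimately show ?thesis unfolding bc_dom_def Let_def ba_def[symmetric] bb_def[symmetric] by auto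
qed

end

theorem theorem6p13:
  fixes ipX :: "'x::cvec \<Rightarrow> 'x \<Rightarrow> complex"
    and DA :: "'x set" and A :: "'x \<Rightarrow> 'x"
    and S :: "'x \<times> 'x \<Rightarrow> 'x \<times> 'x"
    and H Hm Hp :: "'h::cvec set"
    and ipH ipm ipp pair :: "'h \<Rightarrow> 'h \<Rightarrow> complex"
    and G0 G1 :: "'x \<times> 'x \<Rightarrow> 'h"
    and V Vs :: "'h \<Rightarrow> 'h"
  assumes X: "hilbert_on UNIV ipX"
    and A: "operator DA A" "closed_op ipX DA A" "symmetric_op ipX DA A"
    and S: "bounded_unif_pos_sa ipX S"
    and bt: "m_boundary_tuple (ipS ipX S) (Mstar_dom ipX DA A) (Mstar_op ipX S DA A)
               H ipH Hm ipm Hp ipp pair G0 G1"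
    and V: "lin_homeo H ipH Hm ipm V"
    and Vs: "pairing_adjoint H ipH Hp pair V Vs"
  shows
    \<comment> \<open>(i)\<close>
    "(\<forall>D T. extends_op (M_dom DA) (M_op S A) D T \<longrightarrow>
        (m_dissipative (ipS ipX S) D T \<longleftrightarrow>
          (\<exists>K. contraction_on H ipH K \<and>
               D = bc_dom (Mstar_dom ipX DA A) H V Vs G0 G1 K \<and>
               (\<forall>\<psi>\<in>D. T \<psi> = Mstar_op ipX S DA A \<psi>))))
     \<comment> \<open>(ii) one-to-one correspondence\<close>
     \<and> (\<forall>K. contraction_on H ipH K \<longrightarrow>
          extends_op (M_dom DA) (M_op S A) (bc_dom (Mstar_dom ipX DA A) H V Vs G0 G1 K) (Mstar_op ipX S DA A)
          \<and> m_dissipative (ipS ipX S) (bc_dom (Mstar_dom ipX DA A) H V Vs G0 G1 K) (Mstar_op ipX S DA A))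
     \<and> (\<forall>K1 K2. contraction_on H ipH K1 \<and> contraction_on H ipH K2 \<and>
          bc_dom (Mstar_dom ipX DA A) H V Vs G0 G1 K1 = bc_dom (Mstar_dom ipX DA A) H V Vs G0 G1 K2
          \<longrightarrow> (\<forall>h\<in>H. K1 h = K2 h))
     \<and> (\<forall>K. contraction_on H ipH K \<longrightarrow>
          (selfadjoint_op (ipS ipX S) (bc_dom (Mstar_dom ipX DA A) H V Vs G0 G1 K) (Mstar_op ipX S DA A)
           \<longleftrightarrow> unitary_on H ipH K))"
proof -
  have dm: "dual_m_order H ipH Hm ipm Hp ipp" and pr: "is_pairing H ipH Hm ipm Hp ipp pair"
    using bt unfolding m_boundary_tuple_def by auto
  interpret F: Full ipX S DA A H Hm Hp ipH ipm ipp pair V Vs G0 G1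
    unfolding Full_def Full_axioms_def Mloc_def Mloc_axioms_def Sloc_def Ploc_def
    using X S A(1) A(3) dm pr V Vs bt by blast
  interpret G: bnd "ipS ipX S" H ipH "M_dom DA" "M_op S A" "Mstar_dom ipX DA A" "Mstar_op ipX S DA A" F.bu F.bw
    by (rule F.bnd_inst)
  have eq: "\<And>K. contraction_on H ipH K \<Longrightarrow> bc_dom (Mstar_dom ipX DA A) H V Vs G0 G1 K = G.bcd K"
    using F.bc_eq G.contr_lin by blast
  note M = G.main
  note M2 = conjunct1[OF conjunct2[OF G.main]]
  note M4 = conjunct2[OF conjunct2[OF conjunct2[OF G.main]]]
  show ?thesis
  proof (intro conjI allI impI)
    fix D T assume ext: "extends_op (M_dom DA) (M_op S A) D T"
    have i: "m_dissipative (ipS ipX S) D T \<longleftrightarrow>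
          (\<exists>K. contraction_on H ipH K \<and> D = G.bcd K \<and> (\<forall>\<psi>\<in>D. T \<psi> = Mstar_op ipX S DA A \<psi>))"
      using M ext by blast
    show "m_dissipative (ipS ipX S) D T \<longleftrightarrow>
          (\<exists>K. contraction_on H ipH K \<and> D = bc_dom (Mstar_dom ipX DA A) H V Vs G0 G1 K \<and>
               (\<forall>\<psi>\<in>D. T \<psi> = Mstar_op ipX S DA A \<psi>))"
      unfolding i using eq by metis
  next
    fix K assume K: "contraction_on H ipH K"
    show "extends_op (M_dom DA) (M_op S A) (bc_dom (Mstar_dom ipX DA A) H V Vs G0 G1 K) (Mstar_op ipX S DA A)"
      using M2 K eq[OF K] by simp
    show "m_dissipative (ipS ipX S) (bc_dom (Mstar_dom ipX DA A) H V Vs G0 G1 K) (Mstar_op ipX S DA A)"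
      using M2 K eq[OF K] by simp
    show "selfadjoint_op (ipS ipX S) (bc_dom (Mstar_dom ipX DA A) H V Vs G0 G1 K) (Mstar_op ipX S DA A) \<longleftrightarrow>
          unitary_on H ipH K"
      using M4 K eq[OF K] by simp
  next
    fix K1 K2 assume a: "contraction_on H ipH K1 \<and> contraction_on H ipH K2 \<and>
          bc_dom (Mstar_dom ipX DA A) H V Vs G0 G1 K1 = bc_dom (Mstar_dom ipX DA A) H V Vs G0 G1 K2"
    then have "G.bcd K1 = G.bcd K2" using eq by metis
    then show "\<forall>h\<in>H. K1 h = K2 h" using M a by blast
  qed
qed

end
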